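(* For $M,N\in\Lambda$, if $M=_{\mathsf v}N$ then $\mathrm{NF}(\mathcal T(M))=\mathrm{NF}(\mathcal T(N))$.
   Context: Call-by-value $\lambda$-calculus with permutations: $\lambda$-terms and values are $M,N::=V\mid MN$, $V::=x\mid\lambda x.M$, up to $\alpha$-conversion. Rules: $(\beta_v)$ $(\lambda x.M)V\to M\{x:=V\}$ if $V$ is a value; $(\sigma_1)$ $(\lambda x.M)NP\to(\lambda x.MP)N$ if $x\notin\mathrm{FV}(P)$; $(\sigma_3)$ $V((\lambda x.M)N)\to(\lambda x.VM)N$ if $V$ is a value and $x\notin\mathrm{FV}(V)$. $\to_{\mathsf v}$ is their contextual closure and $=_{\mathsf v}$ its reflexive-symmetric-transitive closure. Resource calculus: resource values $v::=x\mid\lambda x.t$; simple terms $s,t::=st\mid[v_1,\dots,v_k]$ (bags are finite multisets); $[x^n]$ is $n$ copies of $x$. Linear substitution $e\langle x:=v_1,\dots,v_n\rangle$ is the set of terms obtained by replacing the $n$ free occurrences of $x$ in $e$ bijectively by $v_1,\dots,v_n$ (over all permutations), or $\emptyset$ if $x$ does not occur exactly $n$ times free. Constructors extend multilinearly to sets. Rules: $(\beta_r)$ $[\lambda x.t][v_1,\dots,v_n]\to t\langle x:=v_1,\dots,v_n\rangle$; $(0)$ $[v_1,\dots,v_n]t\to\emptyset$ if $n\ne1$; $(\sigma_1)$ $[\lambda x.t]s_1s_2\to[\lambda x.ts_2]s_1$ if $x\notin\mathrm{FV}(s_1)$; $(\sigma_3)$ $[v]([\lambda x.t]s)\to[\lambda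 x.[v]t]s$ if $x\notin\mathrm{FV}(v)$. $\to_{\mathsf r}$ is the closure of these rules under abstraction, both sides of application, elements of bags, and on finite sets ($e\to\mathcal E_1$, $e\notin\mathcal E_2$ imply $\{e\}\cup\mathcal E_2\to\mathcal E_1\cup\mathcal E_2$); it is confluent and strongly normalizing, $\mathrm{nf}(e)$ is the normal form and $\mathrm{NF}(\mathcal E)=\bigcup_{e\in\mathcal E}\mathrm{nf}(e)$. Taylor expansion: $\mathcal T(x)=\{[x^n]\mid n\ge0\}$, $\mathcal T(\lambda x.N)=\{[\lambda x.t_1,\dots,\lambda x.t_n]\mid n\ge0,\ t_i\in\mathcal T(N)\}$, $\mathcal T(PQ)=\{st\mid s\in\mathcal T(P),t\in\mathcal T(Q)\}$. *)

theory Defs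
  imports Main "HOL-Library.Multiset"
begin

datatype lterm = Var nat | Lam lterm | App lterm lterm

fun is_val :: "lterm \<Rightarrow> bool" where
  "is_val (Var _) = True"
| "is_val (Lam _) = True"
| "is_val (App _ _) = False"

primrec lift :: "nat \<Rightarrow> lterm \<Rightarrow> lterm" where
  "lift k (Var i) = (if i < k then Var i else Var (Suc i))"
| "lift k (Lam t) = Lam (lift (Suc k) t)"
| "lift k (App s t) = App (lift k s) (lift k t)"

primrec subst :: "lterm \<Rightarrow> nat \<Rightarrow> lterm \<Rightarrow> lterm" where
  "subst (Var i) k s = (if i < k then Var i else if i = k then s else Var (i - 1))"
| "subst (Lam t) k s = Lam (subst t (Suc k) (lift 0 s))"
| "subst (App t u) k s = App (subst t k s) (subst u k s)"

inductive step_v :: "lterm \<Rightarrow> lterm \<Rightarrow> bool" where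
  beta_v: "is_val V \<Longrightarrow> step_v (App (Lam M) V) (subst M 0 V)"
| sigma1: "step_v (App (App (Lam M) N) P) (App (Lam (App M (lift 0 P))) N)"
| sigma3: "is_val V \<Longrightarrow> step_v (App V (App (Lam M) N)) (App (Lam (App (lift 0 V) M)) N)"
| ctx_lam: "step_v M M' \<Longrightarrow> step_v (Lam M) (Lam M')"
| ctx_appL: "step_v M M' \<Longrightarrow> step_v (App M N) (App M' N)"
| ctx_appR: "step_v N N' \<Longrightarrow> step_v (App M N) (App M N')"

abbreviation eq_v :: "lterm \<Rightarrow> lterm \<Rightarrow> bool" where
  "eq_v \<equiv> equivclp step_v"

datatype rterm = RApp rterm rterm | Bag "rval multiset"
     and rval = RVar nat | RLam rterm

primrec rlift :: "nat \<Rightarrow> rterm \<Rightarrow> rterm"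
    and rlift_v :: "nat \<Rightarrow> rval \<Rightarrow> rval" where
  "rlift k (RApp s t) = RApp (rlift k s) (rlift k t)"
| "rlift k (Bag m) = Bag (image_mset (rlift_v k) m)"
| "rlift_v k (RVar i) = (if i < k then RVar i else RVar (Suc i))"
| "rlift_v k (RLam t) = RLam (rlift (Suc k) t)"

text \<open>Linear substitution: \<open>lsub x VS t t'\<close> holds iff \<open>t'\<close> is obtained from \<open>t\<close> by
  replacing the free occurrences of index \<open>x\<close> bijectively by the values of the multiset
  \<open>VS\<close> (values lifted when passing under binders, the index \<open>x\<close> being removed).\<close>
inductive lsub :: "nat \<Rightarrow> rval multiset \<Rightarrow> rterm \<Rightarrow> rterm \<Rightarrow> bool"
      and lsub_v :: "nat \<Rightarrow> rval multiset \<Rightarrow> rval \<Rightarrow> rval \<Rightarrow> bool" where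
  ls_app: "lsub x A s s' \<Longrightarrow> lsub x B t t' \<Longrightarrow> lsub x (A + B) (RApp s t) (RApp s' t')"
| ls_nil: "lsub x {#} (Bag {#}) (Bag {#})"
| ls_bag: "lsub_v x A u u' \<Longrightarrow> lsub x B (Bag m) (Bag m') \<Longrightarrow>
             lsub x (A + B) (Bag (add_mset u m)) (Bag (add_mset u' m'))"
| ls_hit: "lsub_v x {#v#} (RVar x) v"
| ls_var: "y \<noteq> x \<Longrightarrow> lsub_v x {#} (RVar y) (RVar (if y < x then y else y - 1))"
| ls_lam: "lsub (Suc x) (image_mset (rlift_v 0) A) t t' \<Longrightarrow> lsub_v x A (RLam t) (RLam t')"

definition lin_subst :: "rterm \<Rightarrow> nat \<Rightarrow> rval multiset \<Rightarrow> rterm set" where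
  "lin_subst t x VS = {t'. lsub x VS t t'}"

inductive rstep :: "rterm \<Rightarrow> rterm set \<Rightarrow> bool"
      and rstep_v :: "rval \<Rightarrow> rval set \<Rightarrow> bool" where
  beta_r: "rstep (RApp (Bag {#RLam t#}) (Bag vs)) (lin_subst t 0 vs)"
| zero_r: "size m \<noteq> 1 \<Longrightarrow> rstep (RApp (Bag m) t) {}"
| sigma1_r: "rstep (RApp (RApp (Bag {#RLam t#}) s1) s2)
               {RApp (Bag {#RLam (RApp t (rlift 0 s2))#}) s1}"
| sigma3_r: "rstep (RApp (Bag {#v#}) (RApp (Bag {#RLam t#}) s))
               {RApp (Bag {#RLam (RApp (Bag {#rlift_v 0 v#}) t)#}) s}"
| ctx_appL_r: "rstep s S \<Longrightarrow> rstep (RApp s t) ((\<lambda>s'. RApp s' t) ` S)"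
| ctx_appR_r: "rstep t T \<Longrightarrow> rstep (RApp s t) ((\<lambda>t'. RApp s t') ` T)"
| ctx_bag_r: "rstep_v u U \<Longrightarrow> rstep (Bag (add_mset u m)) ((\<lambda>u'. Bag (add_mset u' m)) ` U)"
| ctx_lam_r: "rstep t T \<Longrightarrow> rstep_v (RLam t) (RLam ` T)"

inductive rstep_set :: "rterm set \<Rightarrow> rterm set \<Rightarrow> bool" where
  "rstep e E1 \<Longrightarrow> e \<notin> E2 \<Longrightarrow> finite E2 \<Longrightarrow> rstep_set (insert e E2) (E1 \<union> E2)"

definition r_normal :: "rterm set \<Rightarrow> bool" where
  "r_normal E \<longleftrightarrow> \<not> (\<exists>E'. rstep_set E E')"

text \<open>The (unique, by confluence and strong normalization) normal form of a simple term.\<close>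
definition nf :: "rterm \<Rightarrow> rterm set" where
  "nf e = (THE E. rstep_set\<^sup>*\<^sup>* {e} E \<and> r_normal E)"

definition NF :: "rterm set \<Rightarrow> rterm set" where
  "NF E = (\<Union>e\<in>E. nf e)"

primrec taylor :: "lterm \<Rightarrow> rterm set" where
  "taylor (Var x) = {Bag (replicate_mset n (RVar x)) | n. True}"
| "taylor (Lam N) = {Bag m | m. \<forall>u\<in>#m. \<exists>t\<in>taylor N. u = RLam t}"
| "taylor (App P Q) = {RApp s t | s t. s \<in> taylor P \<and> t \<in> taylor Q}"

end

theory Submission
  imports Defs
begin

lemma rlift_rlift:
  "\<And>i k. i \<le> k \<Longrightarrow> rlift (Suc k) (rlift i s) = rlift i (rlift k s)"
  "\<And>i k. i \<le> k \<Longrightarrow> rlift_v (Suc k) (rlift_v i v) = rlift_v i (rlift_v k v)"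
  by (induction s and v rule: rterm.induct rval.induct) (auto simp: multiset.map_comp comp_def intro!: image_mset_cong)

lemma image_mset_inj_left:
  "(\<forall>a\<in>#x. \<forall>b. f a = f b \<longrightarrow> a = b) \<Longrightarrow> image_mset f x = image_mset f m \<Longrightarrow> x = m"
proof (induction x arbitrary: m)
  case empty then show ?case by simp
next
  case (add a x)
  from add.prems(2) have "f a \<in># image_mset f m" by (metis image_mset_add_mset union_single_eq_member)
  then obtain b where b: "b \<in># m" "f a = f b" by auto
  then have "a = b" using add.prems(1) by auto
  then obtain m' where m': "m = add_mset a m'" using b by (metis multi_member_split)
  have "x = m'" using add.IH[of m'] add.prems m' by auto
  then show ?case using m' by simp
qed

lemma rlift_inj:
  "\<And>k s'. rlift k s = rlift k s' \<Longrightarrow> s = s'"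
  "\<And>k v'. rlift_v k v = rlift_v k v' \<Longrightarrow> v = v'"
proof (induction s and v rule: rterm.induct rval.induct)
  case (RApp x1 x2) then show ?case by (cases s') auto
next
  case (Bag x)
  then obtain m where s': "s' = Bag m" and eq: "image_mset (rlift_v k) x = image_mset (rlift_v k) m"
    by (cases s') auto
  have "x = m" using eq Bag.IH by (intro image_mset_inj_left[of x "rlift_v k"]) auto
  then show ?case using s' by simp
next
  case (RVar x) then show ?case by (cases v') (auto split: if_splits)
next
  case (RLam x) then show ?case by (cases v') (auto split: if_splits)
qed

primrec rsz :: "rterm \<Rightarrow> nat" and rsz_v :: "rval \<Rightarrow> nat" where
  "rsz (RApp s t) = Suc (rsz s + rsz t)"
| "rsz (Bag m) = Suc (sum_mset (image_mset rsz_v m))"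
| "rsz_v (RVar x) = 1"
| "rsz_v (RLam t) = Suc (rsz t)"

primrec rI :: "rterm \<Rightarrow> nat" and rI_v :: "rval \<Rightarrow> nat" where
  "rI (RApp s t) = rI s * (rI t + 1)"
| "rI (Bag m) = 2 + sum_mset (image_mset rI_v m)"
| "rI_v (RVar x) = 1"
| "rI_v (RLam t) = rI t"

lemma rsz_rlift: "\<And>k. rsz (rlift k s) = rsz s" "\<And>k. rsz_v (rlift_v k v) = rsz_v v"
  by (induction s and v rule: rterm.induct rval.induct) (auto simp: multiset.map_comp comp_def intro!: arg_cong[where f=sum_mset] image_mset_cong)

lemma rI_rlift: "\<And>k. rI (rlift k s) = rI s" "\<And>k. rI_v (rlift_v k v) = rI_v v"
  by (induction s and v rule: rterm.induct rval.induct) (auto simp: multiset.map_comp comp_def intro!: arg_cong[where f=sum_mset] image_mset_cong)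

lemma rI_pos: "rI s \<ge> 2" "rI_v v \<ge> 1"
proof (induction s and v rule: rterm.induct rval.induct)
  case (RApp x1 x2)
  have "rI x1 * 1 \<le> rI x1 * (rI x2 + 1)" by (intro mult_le_mono) auto
  then show ?case using RApp by simp
qed auto

lemma rsz_pos: "rsz s \<ge> 1" "rsz_v v \<ge> 1"
  by (cases s; simp) (cases v; simp)

lemma lsub_Bag_aux: "lsub x A T t' \<Longrightarrow> T = Bag m \<Longrightarrow> \<exists>m'. t' = Bag m' \<and> size m' = size m"
  "lsub_v x' A' v v' \<Longrightarrow> True"
proof (induction arbitrary: m rule: lsub_lsub_v.inducts)
  case (ls_bag x A u u' B m m' ma)
  then show ?case by force
qed auto

lemma lsub_Bag: "lsub x A (Bag m) t' \<Longrightarrow> \<exists>m'. t' = Bag m' \<and> size m' = size m"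
  using lsub_Bag_aux(1) by blast

lemma lsub_pick_aux: "lsub x A T t' \<Longrightarrow> T = Bag (add_mset u m) \<Longrightarrow>
   \<exists>A1 A2 u' m'. A = A1 + A2 \<and> lsub_v x A1 u u' \<and> lsub x A2 (Bag m) (Bag m') \<and> t' = Bag (add_mset u' m')"
  "lsub_v x' A' v v' \<Longrightarrow> True"
proof (induction arbitrary: u m rule: lsub_lsub_v.inducts)
  case (ls_bag x A w w' B m0 m0' u m)
  show ?case
  proof (cases "w = u")
    case True
    then show ?thesis using ls_bag by auto
  next
    case False
    then obtain m1 where m1: "m0 = add_mset u m1" and m: "m = add_mset w m1"
      using ls_bag.prems by (auto simp: add_eq_conv_ex)
    from ls_bag.IH(2)[OF m1[THEN arg_cong[where f=Bag]]] obtain A1 A2 u' m' where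
      h: "B = A1 + A2" "lsub_v x A1 u u'" "lsub x A2 (Bag m1) (Bag m')" "Bag m0' = Bag (add_mset u' m')"
      by blast
    have "lsub x (A + A2) (Bag m) (Bag (add_mset w' m'))"
      using m h(3) ls_bag.hyps(1) by (simp add: lsub_lsub_v.ls_bag)
    then show ?thesis using h by (intro exI[of _ A1] exI[of _ "A + A2"] exI[of _ u'] exI[of _ "add_mset w' m'"]) (auto simp: add_mset_commute)
  qed
qed auto

lemma lsub_pick: "lsub x A (Bag (add_mset u m)) t' \<Longrightarrow>
   \<exists>A1 A2 u' m'. A = A1 + A2 \<and> lsub_v x A1 u u' \<and> lsub x A2 (Bag m) (Bag m') \<and> t' = Bag (add_mset u' m')"
  using lsub_pick_aux(1) by blast

lemma lsub_pick_out_aux: "lsub x A T t' \<Longrightarrow> t' = Bag (add_mset u' m') \<Longrightarrow>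
   \<exists>A1 A2 u m. A = A1 + A2 \<and> lsub_v x A1 u u' \<and> lsub x A2 (Bag m) (Bag m') \<and> T = Bag (add_mset u m)"
  "lsub_v x' A' v v' \<Longrightarrow> True"
proof (induction arbitrary: u' m' rule: lsub_lsub_v.inducts)
  case (ls_bag x A w w' B m0 m0' u' m')
  show ?case
  proof (cases "w' = u'")
    case True
    then show ?thesis using ls_bag by auto
  next
    case False
    then obtain m1 where m1: "m0' = add_mset u' m1" and m: "m' = add_mset w' m1"
      using ls_bag.prems by (auto simp: add_eq_conv_ex)
    from ls_bag.IH(2)[OF m1[THEN arg_cong[where f=Bag]]] obtain A1 A2 u m where
      h: "B = A1 + A2" "lsub_v x A1 u u'" "lsub x A2 (Bag m) (Bag m1)" "Bag m0 = Bag (add_mset u m)"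
      by blast
    have "lsub x (A + A2) (Bag (add_mset w m)) (Bag m')"
      using m h(3) ls_bag.hyps(1) by (simp add: lsub_lsub_v.ls_bag)
    then show ?thesis using h by (intro exI[of _ A1] exI[of _ "A + A2"] exI[of _ u] exI[of _ "add_mset w m"]) (auto simp: add_mset_commute)
  qed
qed auto

lemma lsub_pick_out: "lsub x A T (Bag (add_mset u' m')) \<Longrightarrow>
   \<exists>A1 A2 u m. A = A1 + A2 \<and> lsub_v x A1 u u' \<and> lsub x A2 (Bag m) (Bag m') \<and> T = Bag (add_mset u m)"
  using lsub_pick_out_aux(1) by blast

lemma lsub_merge: "lsub x A1 (Bag m1) (Bag m1') \<Longrightarrow> lsub x A2 (Bag m2) (Bag m2') \<Longrightarrow>
  lsub x (A1 + A2) (Bag (m1 + m2)) (Bag (m1' + m2'))"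
proof (induction m1 arbitrary: A1 m1')
  case empty
  then show ?case using lsub_Bag[OF empty(1)] by (auto elim: lsub.cases)
next
  case (add u m1)
  obtain B1 B2 u' m'' where h: "A1 = B1 + B2" "lsub_v x B1 u u'" "lsub x B2 (Bag m1) (Bag m'')"
     "Bag m1' = Bag (add_mset u' m'')" using lsub_pick[OF add.prems(1)] by blast
  have "lsub x (B2 + A2) (Bag (m1 + m2)) (Bag (m'' + m2'))" using add.IH[OF h(3) add.prems(2)] .
  from lsub_lsub_v.ls_bag[OF h(2) this] show ?case using h by (simp add: add.assoc)
qed

lemma lsub_split: "lsub x A (Bag (m1 + m2)) t' \<Longrightarrow>
  \<exists>A1 A2 m1' m2'. A = A1 + A2 \<and> lsub x A1 (Bag m1) (Bag m1') \<and> lsub x A2 (Bag m2) (Bag m2') \<and> t' = Bag (m1' + m2')"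
proof (induction m1 arbitrary: A t')
  case empty
  then obtain m' where "t' = Bag m'" using lsub_Bag by blast
  then show ?case using empty lsub_lsub_v.ls_nil
    by (intro exI[of _ "{#}"] exI[of _ A] exI[of _ "{#}"] exI[of _ m']) auto
next
  case (add u m1)
  obtain B1 B2 u' m'' where h: "A = B1 + B2" "lsub_v x B1 u u'" "lsub x B2 (Bag (m1 + m2)) (Bag m'')"
     "t' = Bag (add_mset u' m'')" using lsub_pick[of x A u "m1 + m2" t'] add.prems by auto
  obtain C1 C2 m1' m2' where h2: "B2 = C1 + C2" "lsub x C1 (Bag m1) (Bag m1')" "lsub x C2 (Bag m2) (Bag m2')" "Bag m'' = Bag (m1' + m2')"
    using add.IH[OF h(3)] by blast
  show ?case using h h2 lsub_lsub_v.ls_bag[OF h(2) h2(2)]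
    by (intro exI[of _ "B1 + C1"] exI[of _ C2] exI[of _ "add_mset u' m1'"] exI[of _ m2']) (auto simp: add.assoc)
qed

lemma lsub_split_out: "lsub x A T (Bag (m1' + m2')) \<Longrightarrow>
  \<exists>A1 A2 m1 m2. A = A1 + A2 \<and> lsub x A1 (Bag m1) (Bag m1') \<and> lsub x A2 (Bag m2) (Bag m2') \<and> T = Bag (m1 + m2)"
proof (induction m1' arbitrary: A T)
  case empty
  then obtain m where "T = Bag m" using lsub.cases by blast 
  then show ?case using empty lsub_lsub_v.ls_nil
    by (intro exI[of _ "{#}"] exI[of _ A] exI[of _ "{#}"] exI[of _ m]) auto
next
  case (add u' m1')
  obtain B1 B2 u m'' where h: "A = B1 + B2" "lsub_v x B1 u u'" "lsub x B2 (Bag m'') (Bag (m1' + m2'))"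
     "T = Bag (add_mset u m'')" using lsub_pick_out[of x A T u' "m1' + m2'"] add.prems by auto
  obtain C1 C2 m1 m2 where h2: "B2 = C1 + C2" "lsub x C1 (Bag m1) (Bag m1')" "lsub x C2 (Bag m2) (Bag m2')" "Bag m'' = Bag (m1 + m2)"
    using add.IH[OF h(3)] by blast
  show ?case using h h2 lsub_lsub_v.ls_bag[OF h(2) h2(2)]
    by (intro exI[of _ "B1 + C1"] exI[of _ C2] exI[of _ "add_mset u m1"] exI[of _ m2]) (auto simp: add.assoc)
qed

lemma subset_mset_add_cases: "A \<subseteq># add_mset x M \<Longrightarrow> A \<subseteq># M \<or> (\<exists>A'. A = add_mset x A' \<and> A' \<subseteq># M)"
proof (cases "x \<in># A")
  case True
  then obtain A' where A': "A = add_mset x A'" by (metis multi_member_split)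
  assume "A \<subseteq># add_mset x M"
  then have "A' \<subseteq># M" using A' by simp
  then show ?thesis using A' by blast
next
  case False
  assume a: "A \<subseteq># add_mset x M"
  have "A \<subseteq># M" unfolding subseteq_mset_def
  proof
    fix y show "count A y \<le> count M y"
      using a False by (cases "y = x") (auto simp: subseteq_mset_def not_in_iff dest: spec[of _ y])
  qed
  then show ?thesis by blast
qed

lemma finite_submsets: "finite {A. A \<subseteq># (M::'a multiset)}"
proof (induction M)
  case empty then show ?case by simp
next
  case (add x M)
  have "{A. A \<subseteq># add_mset x M} \<subseteq> {A. A \<subseteq># M} \<union> add_mset x ` {A. A \<subseteq># M}"
  proof
    fix A assume "A \<in> {A. A \<subseteq># add_mset x M}"
    then have "A \<subseteq># M \<or> (\<exists>A'. A = add_mset x A' \<and> A' \<subseteq># M)" using subset_mset_add_cases by simp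
    then show "A \<in> {A. A \<subseteq># M} \<union> add_mset x ` {A. A \<subseteq># M}"
    proof
      assume "\<exists>A'. A = add_mset x A' \<and> A' \<subseteq># M"
      then obtain A' where "A = add_mset x A'" "A' \<subseteq># M" by blast
      then show ?thesis by blast
    qed simp
  qed
  moreover have "finite ({A. A \<subseteq># M} \<union> add_mset x ` {A. A \<subseteq># M})" using add by simp
  ultimately show ?case by (rule finite_subset)
qed

lemma finite_splits: "finite {p. fst p + snd p = (M::'a multiset)}"
proof -
  have "{p. fst p + snd p = M} \<subseteq> (\<lambda>A. (A, M - A)) ` {A. A \<subseteq># M}" by force
  moreover have "finite ((\<lambda>A. (A, M - A)) ` {A. A \<subseteq># M})" using finite_submsets[of M] by (rule finite_imageI)
  ultimately show ?thesis by (rule finite_subset)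
qed

fun addb :: "rval \<Rightarrow> rterm \<Rightarrow> rterm" where
  "addb u (Bag m) = Bag (add_mset u m)"
| "addb u t = t"

lemma finite_lsub_bag:
  assumes "\<forall>v\<in>#m. \<forall>x A. finite {v'. lsub_v x A v v'}"
  shows "finite {t'. lsub x A (Bag m) t'}"
  using assms
proof (induction m arbitrary: A)
  case empty
  have "{t'. lsub x A (Bag {#}) t'} \<subseteq> {Bag {#}}" using lsub_Bag by fastforce
  moreover have "finite {Bag {#}}" by simp
  ultimately show ?case by (rule finite_subset)
next
  case (add u m)
  let ?S = "\<Union>p\<in>{p. fst p + snd p = A}. (\<lambda>(u', t''). addb u' t'') ` ({u'. lsub_v x (fst p) u u'} \<times> {t''. lsub x (snd p) (Bag m) t''})"
  have "{t'. lsub x A (Bag (add_mset u m)) t'} \<subseteq> ?S"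
  proof
    fix t' assume "t' \<in> {t'. lsub x A (Bag (add_mset u m)) t'}"
    then obtain A1 A2 u' m' where "A = A1 + A2" "lsub_v x A1 u u'" "lsub x A2 (Bag m) (Bag m')" "t' = Bag (add_mset u' m')"
      using lsub_pick by blast
    then show "t' \<in> ?S" by (intro UN_I[of "(A1, A2)"]) (auto intro!: image_eqI[of _ _ "(u', Bag m')"])
  qed
  moreover have "finite ?S" using add finite_splits by (intro finite_UN_I) auto
  ultimately show ?case by (rule finite_subset)
qed

lemma finite_lsub: "\<And>x A. finite {t'. lsub x A t t'}" "\<And>x A. finite {v'. lsub_v x A v v'}"
proof (induction t and v rule: rterm.induct rval.induct)
  case (RApp s t)
  let ?S = "\<Union>p\<in>{p. fst p + snd p = A}. (\<lambda>(s', t'). RApp s' t') ` ({s'. lsub x (fst p) s s'} \<times> {t'. lsub x (snd p) t t'})"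
  have "{t'. lsub x A (RApp s t) t'} \<subseteq> ?S"
  proof
    fix t' assume "t' \<in> {t'. lsub x A (RApp s t) t'}"
    then obtain A1 A2 s' t'' where "A = A1 + A2" "lsub x A1 s s'" "lsub x A2 t t''" "t' = RApp s' t''"
      by (auto elim: lsub.cases)
    then show "t' \<in> ?S" by (intro UN_I[of "(A1, A2)"]) (auto intro!: image_eqI[of _ _ "(s', t'')"])
  qed
  moreover have "finite ?S" using RApp finite_splits by (intro finite_UN_I) auto
  ultimately show ?case by (rule finite_subset)
next
  case (Bag m)
  then show ?case using finite_lsub_bag by blast
next
  case (RVar y)
  have "{v'. lsub_v x A (RVar y) v'} \<subseteq> set_mset A \<union> {RVar (if y < x then y else y - 1)}"
    by (auto elim: lsub_v.cases)
  moreover have "finite (set_mset A \<union> {RVar (if y < x then y else y - 1)})" by simp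
  ultimately show ?case by (rule finite_subset)
next
  case (RLam t)
  have "{v'. lsub_v x A (RLam t) v'} \<subseteq> RLam ` {t'. lsub (Suc x) (image_mset (rlift_v 0) A) t t'}"
    by (auto elim: lsub_v.cases)
  moreover have "finite (RLam ` {t'. lsub (Suc x) (image_mset (rlift_v 0) A) t t'})" using RLam by simp
  ultimately show ?case by (rule finite_subset)
qed

lemma finite_lin_subst: "finite (lin_subst t x A)"
  unfolding lin_subst_def by (rule finite_lsub)

lemma rstep_finite: "rstep e E \<Longrightarrow> finite E" "rstep_v v V \<Longrightarrow> finite V"
  by (induction rule: rstep_rstep_v.inducts) (auto simp: finite_lin_subst)

definition lexless :: "nat \<times> nat \<Rightarrow> nat \<times> nat \<Rightarrow> bool" where
  "lexless a b \<longleftrightarrow> fst a < fst b \<or> (fst a = fst b \<and> snd a < snd b)"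

definition smaller :: "rterm \<Rightarrow> rterm \<Rightarrow> bool" where
  "smaller a b \<longleftrightarrow> lexless (rsz a, rI a) (rsz b, rI b)"

definition smaller_v :: "rval \<Rightarrow> rval \<Rightarrow> bool" where
  "smaller_v a b \<longleftrightarrow> lexless (rsz_v a, rI_v a) (rsz_v b, rI_v b)"

lemma smaller_trans: "smaller a b \<Longrightarrow> smaller b c \<Longrightarrow> smaller a c"
  unfolding smaller_def lexless_def by auto

lemma wf_smaller: "wf {(a, b). smaller a b}"
proof -
  have "{(a, b). smaller a b} = inv_image (less_than <*lex*> less_than) (\<lambda>a. (rsz a, rI a))"
    unfolding smaller_def lexless_def by auto
  then show ?thesis by (simp add: wf_lex_prod)
qed

lemma sum_rsz_lift: "sum_mset (image_mset rsz_v (image_mset (rlift_v k) A)) = sum_mset (image_mset rsz_v A)"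
  by (simp add: multiset.map_comp comp_def rsz_rlift)

lemma lsub_size: "lsub x A t t' \<Longrightarrow> rsz t' + size A = rsz t + sum_mset (image_mset rsz_v A)"
   "lsub_v x A v v' \<Longrightarrow> rsz_v v' + size A = rsz_v v + sum_mset (image_mset rsz_v A)"
  by (induction rule: lsub_lsub_v.inducts) (auto simp: sum_rsz_lift)

lemma rstep_smaller: "rstep e E \<Longrightarrow> x \<in> E \<Longrightarrow> smaller x e"
   "rstep_v v V \<Longrightarrow> w \<in> V \<Longrightarrow> smaller_v w v"
proof (induction arbitrary: x and w rule: rstep_rstep_v.inducts)
  case (beta_r t vs)
  then have "lsub 0 vs t x" by (simp add: lin_subst_def)
  from lsub_size(1)[OF this] show ?case by (simp add: smaller_def lexless_def)
next
  case (zero_r m t)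
  then show ?case by simp
next
  case (sigma1_r t s1 s2)
  let ?T = "rI t" and ?S1 = "rI s1" and ?S2 = "rI s2"
  have "?S2 \<ge> 2" by (rule rI_pos)
  have eq: "(2 + ?T) * (?S1 + 1) * (?S2 + 1) = (2 + ?T * (?S2 + 1)) * (?S1 + 1) + 2 * (?S1 + 1) * ?S2"
    by (simp add: algebra_simps)
  have "(2 + ?T * (?S2 + 1)) * (?S1 + 1) < (2 + ?T) * (?S1 + 1) * (?S2 + 1)"
    unfolding eq using \<open>?S2 \<ge> 2\<close> by simp
  then show ?case using sigma1_r by (simp add: smaller_def lexless_def rsz_rlift rI_rlift)
next
  case (sigma3_r v t s)
  let ?T = "rI t" and ?S = "rI s" and ?a = "rI_v v"
  have eq: "(2 + ?a) * ((2 + ?T) * (?S + 1) + 1) = (2 + (2 + ?a) * (?T + 1)) * (?S + 1) + ?a * (?S + 1) + 2 + ?a"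
    by (simp add: algebra_simps)
  have "(2 + (2 + ?a) * (?T + 1)) * (?S + 1) < (2 + ?a) * ((2 + ?T) * (?S + 1) + 1)"
    unfolding eq by simp
  then show ?case using sigma3_r by (simp add: smaller_def lexless_def rsz_rlift rI_rlift algebra_simps)
next
  case (ctx_appL_r s S t)
  then obtain s' where "s' \<in> S" "x = RApp s' t" by auto
  with ctx_appL_r.IH have "smaller s' s" by auto
  moreover have "rI s' < rI s \<Longrightarrow> rI s' * (rI t + 1) < rI s * (rI t + 1)"
    by (rule mult_strict_right_mono) auto
  ultimately show ?case using \<open>x = RApp s' t\<close> unfolding smaller_def lexless_def by auto
next
  case (ctx_appR_r t T s)
  then obtain t' where "t' \<in> T" "x = RApp s t'" by auto
  with ctx_appR_r.IH have "smaller t' t" by auto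
  moreover have "rI s > 0" using rI_pos(1)[of s] by simp
  ultimately show ?case using \<open>x = RApp s t'\<close> by (auto simp: smaller_def lexless_def)
next
  case (ctx_bag_r u U m)
  then obtain u' where "u' \<in> U" "x = Bag (add_mset u' m)" by auto
  with ctx_bag_r.IH have "smaller_v u' u" by auto
  then show ?case using \<open>x = Bag (add_mset u' m)\<close> by (auto simp: smaller_def smaller_v_def lexless_def)
next
  case (ctx_lam_r t T)
  then obtain t' where "t' \<in> T" "w = RLam t'" by auto
  with ctx_lam_r.IH have "smaller t' t" by auto
  then show ?case using \<open>w = RLam t'\<close> unfolding smaller_def smaller_v_def lexless_def by auto
qed

inductive_cases lsub_AppE: "lsub x A (RApp s t) t'"
inductive_cases lsub_VarE: "lsub_v x A (RVar y) v'"
inductive_cases lsub_LamE: "lsub_v x A (RLam t) v'"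
inductive_cases lsub_emptyE: "lsub x A (Bag {#}) t'"

lemma lift_lift_img: "image_mset (rlift_v (Suc k)) (image_mset (rlift_v 0) A) = image_mset (rlift_v 0) (image_mset (rlift_v k) A)"
  by (simp add: multiset.map_comp comp_def rlift_rlift(2)[of 0 k])

lemma lsub_rlift_ex: "\<And>k. lsub k {#} (rlift k s) s" "\<And>k. lsub_v k {#} (rlift_v k v) v"
proof (induction s and v rule: rterm.induct rval.induct)
  case (RApp s t)
  then show ?case using ls_app[of k "{#}" "rlift k s" s "{#}" "rlift k t" t] by simp
next
  case (Bag m)
  then show ?case
  proof (induction m)
    case empty then show ?case by (simp add: ls_nil)
  next
    case (add u m)
    then show ?case using ls_bag[of k "{#}" "rlift_v k u" u "{#}" "image_mset (rlift_v k) m" m] by simp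
  qed
next
  case (RVar y)
  show ?case
  proof (cases "y < k")
    case True then show ?thesis using ls_var[of y k] by simp
  next
    case False then show ?thesis using ls_var[of "Suc y" k] by simp
  qed
next
  case (RLam t)
  have "lsub (Suc k) (image_mset (rlift_v 0) {#}) (rlift (Suc k) t) t" using RLam by simp
  then have "lsub_v k {#} (RLam (rlift (Suc k) t)) (RLam t)" by (rule ls_lam)
  then show ?case by simp
qed

lemma lsub_rlift_uniq: "\<And>k A s'. lsub k A (rlift k s) s' \<Longrightarrow> A = {#} \<and> s' = s"
   "\<And>k A v'. lsub_v k A (rlift_v k v) v' \<Longrightarrow> A = {#} \<and> v' = v"
proof (induction s and v rule: rterm.induct rval.induct)
  case (RApp s t)
  from RApp.prems have "lsub k A (RApp (rlift k s) (rlift k t)) s'" by simp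
  then show ?case by (rule lsub_AppE) (use RApp.IH in force)
next
  case (Bag m)
  then show ?case
  proof (induction m arbitrary: A s')
    case empty then show ?case by (auto elim: lsub_emptyE)
  next
    case (add u m)
    from add.prems(2) obtain A1 A2 u' m' where h: "A = A1 + A2" "lsub_v k A1 (rlift_v k u) u'"
      "lsub k A2 (Bag (image_mset (rlift_v k) m)) (Bag m')" "s' = Bag (add_mset u' m')"
      using lsub_pick by fastforce
    have "A2 = {#} \<and> Bag m' = Bag m" using add.IH[of A2 "Bag m'"] add.prems(1) h(3) by auto
    moreover have "A1 = {#} \<and> u' = u" using add.prems(1) h(2) by auto
    ultimately show ?case using h by auto
  qed
next
  case (RVar y)
  from RVar.prems have "lsub_v k A (RVar (if y < k then y else Suc y)) v'" by (simp split: if_splits)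
  then show ?case by (rule lsub_VarE) (auto split: if_splits)
next
  case (RLam t)
  from RLam.prems have "lsub_v k A (RLam (rlift (Suc k) t)) v'" by simp
  then show ?case by (rule lsub_LamE) (use RLam.IH in force)
qed

lemma lsub_lift_below: "lsub x A t t' \<Longrightarrow> (\<And>k. k \<le> x \<Longrightarrow> lsub (Suc x) (image_mset (rlift_v k) A) (rlift k t) (rlift k t'))"
  "lsub_v x A v v' \<Longrightarrow> (\<And>k. k \<le> x \<Longrightarrow> lsub_v (Suc x) (image_mset (rlift_v k) A) (rlift_v k v) (rlift_v k v'))"
proof (induction rule: lsub_lsub_v.inducts)
  case (ls_app x A s s' B t t')
  then show ?case using ls_app by (simp add: lsub_lsub_v.ls_app)
next
  case (ls_nil x)
  then show ?case by (simp add: lsub_lsub_v.ls_nil)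
next
  case (ls_bag x A u u' B m m')
  then show ?case using lsub_lsub_v.ls_bag[of "Suc x" "image_mset (rlift_v k) A" "rlift_v k u" "rlift_v k u'" "image_mset (rlift_v k) B"] by simp
next
  case (ls_hit x v)
  then show ?case using lsub_lsub_v.ls_hit[of "Suc x" "rlift_v k v"] by simp
next
  case (ls_var y x)
  then show ?case using lsub_lsub_v.ls_var[of "if y < k then y else Suc y" "Suc x"] by (auto split: if_splits)
next
  case (ls_lam x A t t')
  have "lsub (Suc (Suc x)) (image_mset (rlift_v (Suc k)) (image_mset (rlift_v 0) A)) (rlift (Suc k) t) (rlift (Suc k) t')"
    using ls_lam by simp
  then show ?case by (simp add: lift_lift_img lsub_lsub_v.ls_lam)
qed

lemma lsub_lift_above: "lsub x A t t' \<Longrightarrow> (\<And>k. x \<le> k \<Longrightarrow> lsub x (image_mset (rlift_v k) A) (rlift (Suc k) t) (rlift k t'))"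
  "lsub_v x A v v' \<Longrightarrow> (\<And>k. x \<le> k \<Longrightarrow> lsub_v x (image_mset (rlift_v k) A) (rlift_v (Suc k) v) (rlift_v k v'))"
proof (induction rule: lsub_lsub_v.inducts)
  case (ls_app x A s s' B t t')
  then show ?case using ls_app by (simp add: lsub_lsub_v.ls_app)
next
  case (ls_nil x)
  then show ?case by (simp add: lsub_lsub_v.ls_nil)
next
  case (ls_bag x A u u' B m m')
  then show ?case using lsub_lsub_v.ls_bag[of x "image_mset (rlift_v k) A" "rlift_v (Suc k) u" "rlift_v k u'" "image_mset (rlift_v k) B"] by simp
next
  case (ls_hit x v)
  then show ?case using lsub_lsub_v.ls_hit[of x "rlift_v k v"] by simp
next
  case (ls_var y x)
  then show ?case using lsub_lsub_v.ls_var[of "if y < Suc k then y else Suc y" x] by (auto split: if_splits)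
next
  case (ls_lam x A t t')
  have "lsub (Suc x) (image_mset (rlift_v (Suc k)) (image_mset (rlift_v 0) A)) (rlift (Suc (Suc k)) t) (rlift (Suc k) t')"
    using ls_lam by simp
  then show ?case by (simp add: lift_lift_img lsub_lsub_v.ls_lam)
qed

lemma lsub_Var_iff: "lsub_v x A (RVar y) v' \<longleftrightarrow> (y = x \<and> A = {#v'#}) \<or> (y \<noteq> x \<and> A = {#} \<and> v' = RVar (if y < x then y else y - 1))"
proof
  assume "lsub_v x A (RVar y) v'" then show "(y = x \<and> A = {#v'#}) \<or> (y \<noteq> x \<and> A = {#} \<and> v' = RVar (if y < x then y else y - 1))"
    by (auto elim: lsub_VarE)
next
  assume "(y = x \<and> A = {#v'#}) \<or> (y \<noteq> x \<and> A = {#} \<and> v' = RVar (if y < x then y else y - 1))"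
  then show "lsub_v x A (RVar y) v'" using ls_hit[of x v'] ls_var[of y x] by auto
qed

lemma add_mset_in_self: "u \<in># add_mset u m" by simp

lemma image_mset_eq_single: "image_mset f A = {#z#} \<Longrightarrow> \<exists>a. A = {#a#} \<and> z = f a"
  by (cases A) auto

lemma lsub_lift_below_inv:
  "\<And>x k A z. k \<le> x \<Longrightarrow> lsub (Suc x) (image_mset (rlift_v k) A) (rlift k t) z \<Longrightarrow> \<exists>t'. lsub x A t t' \<and> z = rlift k t'"
  "\<And>x k A z. k \<le> x \<Longrightarrow> lsub_v (Suc x) (image_mset (rlift_v k) A) (rlift_v k v) z \<Longrightarrow> \<exists>v'. lsub_v x A v v' \<and> z = rlift_v k v'"
proof (induction t and v rule: rterm.induct rval.induct)
  case (RApp s t)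
  from RApp.prems(2) have "lsub (Suc x) (image_mset (rlift_v k) A) (RApp (rlift k s) (rlift k t)) z" by simp
  then obtain A1' A2' s1 t1 where h: "image_mset (rlift_v k) A = A1' + A2'" "lsub (Suc x) A1' (rlift k s) s1"
     "lsub (Suc x) A2' (rlift k t) t1" "z = RApp s1 t1" by (rule lsub_AppE) blast
  obtain A1 A2 where A: "A = A1 + A2" "A1' = image_mset (rlift_v k) A1" "A2' = image_mset (rlift_v k) A2"
    using image_mset_eq_plusD[OF h(1)] by blast
  obtain s' where s': "lsub x A1 s s'" "s1 = rlift k s'" using RApp.IH(1)[OF RApp.prems(1)] h(2) A by blast
  obtain t' where t': "lsub x A2 t t'" "t1 = rlift k t'" using RApp.IH(2)[OF RApp.prems(1)] h(3) A by blast
  show ?case using ls_app[OF s'(1) t'(1)] s' t' h(4) A(1) by auto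
next
  case (Bag m)
  then show ?case
  proof (induction m arbitrary: A z)
    case empty
    have "image_mset (rlift_v k) A = {#} \<and> z = Bag {#}" using empty.prems by (auto elim!: lsub_emptyE)
    then show ?case using ls_nil by (auto intro!: exI[of _ "Bag {#}"])
  next
    case (add u m)
    from add.prems(3) have "lsub (Suc x) (image_mset (rlift_v k) A) (Bag (add_mset (rlift_v k u) (image_mset (rlift_v k) m))) z" by simp
    then obtain A1' A2' u1 m1 where h: "image_mset (rlift_v k) A = A1' + A2'" "lsub_v (Suc x) A1' (rlift_v k u) u1"
      "lsub (Suc x) A2' (Bag (image_mset (rlift_v k) m)) (Bag m1)" "z = Bag (add_mset u1 m1)"
      using lsub_pick by blast
    obtain A1 A2 where A: "A = A1 + A2" "A1' = image_mset (rlift_v k) A1" "A2' = image_mset (rlift_v k) A2"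
      using image_mset_eq_plusD[OF h(1)] by blast
    obtain u' where u': "lsub_v x A1 u u'" "u1 = rlift_v k u'" using add.prems(1)[OF add_mset_in_self[of u m], where x=x and k=k and A=A1 and z=u1] add.prems(2) h(2) A by auto
    obtain t' where t': "lsub x A2 (Bag m) t'" "Bag m1 = rlift k t'" using add.IH[of A2 "Bag m1"] add.prems h(3) A by auto
    obtain m' where m': "t' = Bag m'" using lsub_Bag[OF t'(1)] by blast
    show ?case using ls_bag[OF u'(1) t'(1)[unfolded m']] u' t' m' h(4) A(1) by auto
  qed
next
  case (RVar y)
  from RVar.prems(2) have h: "lsub_v (Suc x) (image_mset (rlift_v k) A) (RVar (if y < k then y else Suc y)) z" by (simp split: if_splits)
  show ?case
  proof (cases "y = x")
    case True
    then have "\<not> y < k" using RVar.prems(1) by simp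
    then have "image_mset (rlift_v k) A = {#z#}" using h True unfolding lsub_Var_iff by auto
    from image_mset_eq_single[OF this] obtain a where "A = {#a#}" "z = rlift_v k a" by blast
    then show ?thesis using True ls_hit[of x a] by auto
  next
    case False
    then have "(if y < k then y else Suc y) \<noteq> Suc x" using RVar.prems(1) by auto
    then have "image_mset (rlift_v k) A = {#} \<and> z = RVar (if (if y < k then y else Suc y) < Suc x then (if y < k then y else Suc y) else (if y < k then y else Suc y) - 1)"
      using h unfolding lsub_Var_iff by auto
    then show ?thesis using False RVar.prems(1) ls_var[of y x]
      by (intro exI[of _ "RVar (if y < x then y else y - 1)"]) (auto split: if_splits)
  qed
next
  case (RLam t)
  from RLam.prems(2) have "lsub_v (Suc x) (image_mset (rlift_v k) A) (RLam (rlift (Suc k) t)) z" by simp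
  then obtain z0 where h: "lsub (Suc (Suc x)) (image_mset (rlift_v 0) (image_mset (rlift_v k) A)) (rlift (Suc k) t) z0" "z = RLam z0"
    by (rule lsub_LamE) blast
  from h(1) have "lsub (Suc (Suc x)) (image_mset (rlift_v (Suc k)) (image_mset (rlift_v 0) A)) (rlift (Suc k) t) z0"
    by (simp add: lift_lift_img)
  then obtain t' where t': "lsub (Suc x) (image_mset (rlift_v 0) A) t t'" "z0 = rlift (Suc k) t'"
    using RLam.IH[of "Suc k" "Suc x"] RLam.prems(1) by auto
  show ?case using ls_lam[OF t'(1)] t' h(2) by auto
qed

lemma lsub_lift_above_inv:
  "\<And>x k A z. x \<le> k \<Longrightarrow> lsub x (image_mset (rlift_v k) A) (rlift (Suc k) t) z \<Longrightarrow> \<exists>t'. lsub x A t t' \<and> z = rlift k t'"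
  "\<And>x k A z. x \<le> k \<Longrightarrow> lsub_v x (image_mset (rlift_v k) A) (rlift_v (Suc k) v) z \<Longrightarrow> \<exists>v'. lsub_v x A v v' \<and> z = rlift_v k v'"
proof (induction t and v rule: rterm.induct rval.induct)
  case (RApp s t)
  from RApp.prems(2) have "lsub x (image_mset (rlift_v k) A) (RApp (rlift (Suc k) s) (rlift (Suc k) t)) z" by simp
  then obtain A1' A2' s1 t1 where h: "image_mset (rlift_v k) A = A1' + A2'" "lsub x A1' (rlift (Suc k) s) s1"
     "lsub x A2' (rlift (Suc k) t) t1" "z = RApp s1 t1" by (rule lsub_AppE) blast
  obtain A1 A2 where A: "A = A1 + A2" "A1' = image_mset (rlift_v k) A1" "A2' = image_mset (rlift_v k) A2"
    using image_mset_eq_plusD[OF h(1)] by blast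
  obtain s' where s': "lsub x A1 s s'" "s1 = rlift k s'" using RApp.IH(1)[OF RApp.prems(1)] h(2) A by blast
  obtain t' where t': "lsub x A2 t t'" "t1 = rlift k t'" using RApp.IH(2)[OF RApp.prems(1)] h(3) A by blast
  show ?case using ls_app[OF s'(1) t'(1)] s' t' h(4) A(1) by auto
next
  case (Bag m)
  then show ?case
  proof (induction m arbitrary: A z)
    case empty
    have "image_mset (rlift_v k) A = {#} \<and> z = Bag {#}" using empty.prems by (auto elim!: lsub_emptyE)
    then show ?case using ls_nil by (auto intro!: exI[of _ "Bag {#}"])
  next
    case (add u m)
    from add.prems(3) have "lsub x (image_mset (rlift_v k) A) (Bag (add_mset (rlift_v (Suc k) u) (image_mset (rlift_v (Suc k)) m))) z" by simp
    then obtain A1' A2' u1 m1 where h: "image_mset (rlift_v k) A = A1' + A2'" "lsub_v x A1' (rlift_v (Suc k) u) u1"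
      "lsub x A2' (Bag (image_mset (rlift_v (Suc k)) m)) (Bag m1)" "z = Bag (add_mset u1 m1)"
      using lsub_pick by blast
    obtain A1 A2 where A: "A = A1 + A2" "A1' = image_mset (rlift_v k) A1" "A2' = image_mset (rlift_v k) A2"
      using image_mset_eq_plusD[OF h(1)] by blast
    obtain u' where u': "lsub_v x A1 u u'" "u1 = rlift_v k u'" using add.prems(1)[OF add_mset_in_self[of u m], where x=x and k=k and A=A1 and z=u1] add.prems(2) h(2) A by auto
    obtain t' where t': "lsub x A2 (Bag m) t'" "Bag m1 = rlift k t'" using add.IH[of A2 "Bag m1"] add.prems h(3) A by auto
    obtain m' where m': "t' = Bag m'" using lsub_Bag[OF t'(1)] by blast
    show ?case using ls_bag[OF u'(1) t'(1)[unfolded m']] u' t' m' h(4) A(1) by auto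
  qed
next
  case (RVar y)
  from RVar.prems(2) have h: "lsub_v x (image_mset (rlift_v k) A) (RVar (if y < Suc k then y else Suc y)) z" by (simp split: if_splits)
  show ?case
  proof (cases "y = x")
    case True
    then have "y < Suc k" using RVar.prems(1) by simp
    then have "image_mset (rlift_v k) A = {#z#}" using h True unfolding lsub_Var_iff by auto
    from image_mset_eq_single[OF this] obtain a where "A = {#a#}" "z = rlift_v k a" by blast
    then show ?thesis using True ls_hit[of x a] by auto
  next
    case False
    then have "(if y < Suc k then y else Suc y) \<noteq> x" using RVar.prems(1) by auto
    then have "image_mset (rlift_v k) A = {#} \<and> z = RVar (if (if y < Suc k then y else Suc y) < x then (if y < Suc k then y else Suc y) else (if y < Suc k then y else Suc y) - 1)"
      using h unfolding lsub_Var_iff by auto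
    then show ?thesis using False RVar.prems(1) ls_var[of y x]
      by (intro exI[of _ "RVar (if y < x then y else y - 1)"]) (auto split: if_splits)
  qed
next
  case (RLam t)
  from RLam.prems(2) have "lsub_v x (image_mset (rlift_v k) A) (RLam (rlift (Suc (Suc k)) t)) z" by simp
  then obtain z0 where h: "lsub (Suc x) (image_mset (rlift_v 0) (image_mset (rlift_v k) A)) (rlift (Suc (Suc k)) t) z0" "z = RLam z0"
    by (rule lsub_LamE) blast
  from h(1) have "lsub (Suc x) (image_mset (rlift_v (Suc k)) (image_mset (rlift_v 0) A)) (rlift (Suc (Suc k)) t) z0"
    by (simp add: lift_lift_img)
  then obtain t' where t': "lsub (Suc x) (image_mset (rlift_v 0) A) t t'" "z0 = rlift (Suc k) t'"
    using RLam.IH[of "Suc x" "Suc k"] RLam.prems(1) by auto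
  show ?case using ls_lam[OF t'(1)] t' h(2) by auto
qed

lemma lin_subst_lift: "lin_subst (rlift (Suc k) t) 0 (image_mset (rlift_v k) vs) = rlift k ` lin_subst t 0 vs"
proof
  show "rlift k ` lin_subst t 0 vs \<subseteq> lin_subst (rlift (Suc k) t) 0 (image_mset (rlift_v k) vs)"
    unfolding lin_subst_def using lsub_lift_above(1) by blast
next
  show "lin_subst (rlift (Suc k) t) 0 (image_mset (rlift_v k) vs) \<subseteq> rlift k ` lin_subst t 0 vs"
  proof
    fix z assume "z \<in> lin_subst (rlift (Suc k) t) 0 (image_mset (rlift_v k) vs)"
    then have "lsub 0 (image_mset (rlift_v k) vs) (rlift (Suc k) t) z" by (simp add: lin_subst_def)
    from lsub_lift_above_inv(1)[OF _ this] obtain t' where "lsub 0 vs t t'" "z = rlift k t'" by blast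
    then show "z \<in> rlift k ` lin_subst t 0 vs" by (simp add: lin_subst_def)
  qed
qed

lemma rstep_lift: "rstep s S \<Longrightarrow> (\<And>k. rstep (rlift k s) (rlift k ` S))"
  "rstep_v v V \<Longrightarrow> (\<And>k. rstep_v (rlift_v k v) (rlift_v k ` V))"
proof (induction rule: rstep_rstep_v.inducts)
  case (beta_r t vs)
  have "rstep (RApp (Bag {#RLam (rlift (Suc k) t)#}) (Bag (image_mset (rlift_v k) vs))) (lin_subst (rlift (Suc k) t) 0 (image_mset (rlift_v k) vs))"
    by (rule rstep_rstep_v.beta_r)
  then show ?case by (simp add: lin_subst_lift)
next
  case (zero_r m t)
  have "rstep (RApp (Bag (image_mset (rlift_v k) m)) (rlift k t)) {}" using zero_r by (intro rstep_rstep_v.zero_r) simp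
  then show ?case by simp
next
  case (sigma1_r t s1 s2)
  have "rstep (RApp (RApp (Bag {#RLam (rlift (Suc k) t)#}) (rlift k s1)) (rlift k s2))
     {RApp (Bag {#RLam (RApp (rlift (Suc k) t) (rlift 0 (rlift k s2)))#}) (rlift k s1)}"
    by (rule rstep_rstep_v.sigma1_r)
  then show ?case by (simp add: rlift_rlift(1)[of 0 k])
next
  case (sigma3_r v t s)
  have "rstep (RApp (Bag {#rlift_v k v#}) (RApp (Bag {#RLam (rlift (Suc k) t)#}) (rlift k s)))
     {RApp (Bag {#RLam (RApp (Bag {#rlift_v 0 (rlift_v k v)#}) (rlift (Suc k) t))#}) (rlift k s)}"
    by (rule rstep_rstep_v.sigma3_r)
  then show ?case by (simp add: rlift_rlift(2)[of 0 k])
next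
  case (ctx_appL_r s S t)
  have "rstep (RApp (rlift k s) (rlift k t)) ((\<lambda>s'. RApp s' (rlift k t)) ` (rlift k ` S))"
    using ctx_appL_r by (intro rstep_rstep_v.ctx_appL_r) auto
  then show ?case by (simp add: image_image)
next
  case (ctx_appR_r t T s)
  have "rstep (RApp (rlift k s) (rlift k t)) (RApp (rlift k s) ` (rlift k ` T))"
    using ctx_appR_r by (intro rstep_rstep_v.ctx_appR_r) auto
  then show ?case by (simp add: image_image)
next
  case (ctx_bag_r u U m)
  have "rstep (Bag (add_mset (rlift_v k u) (image_mset (rlift_v k) m))) ((\<lambda>u'. Bag (add_mset u' (image_mset (rlift_v k) m))) ` (rlift_v k ` U))"
    using ctx_bag_r by (intro rstep_rstep_v.ctx_bag_r) auto
  then show ?case by (simp add: image_image)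
next
  case (ctx_lam_r t T)
  have "rstep_v (RLam (rlift (Suc k) t)) (RLam ` (rlift (Suc k) ` T))"
    using ctx_lam_r by (intro rstep_rstep_v.ctx_lam_r) auto
  then show ?case by (simp add: image_image)
qed

lemma lsub_App_iff: "lsub x A (RApp s t) z \<longleftrightarrow> (\<exists>A1 A2 s' t'. A = A1 + A2 \<and> lsub x A1 s s' \<and> lsub x A2 t t' \<and> z = RApp s' t')"
proof
  assume "lsub x A (RApp s t) z"
  then show "\<exists>A1 A2 s' t'. A = A1 + A2 \<and> lsub x A1 s s' \<and> lsub x A2 t t' \<and> z = RApp s' t'"
    by (rule lsub_AppE) blast
qed (auto intro: ls_app)

lemma lsub_Lam_iff: "lsub_v x A (RLam t) z \<longleftrightarrow> (\<exists>t'. z = RLam t' \<and> lsub (Suc x) (image_mset (rlift_v 0) A) t t')"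
  by (auto elim: lsub_LamE intro: ls_lam)

lemma lsub_empty_in: "lsub x A (Bag {#}) y \<Longrightarrow> A = {#} \<and> y = Bag {#}"
  by (auto elim: lsub_emptyE)

lemma lsub_empty_out: "lsub x B (Bag bs) (Bag {#}) \<Longrightarrow> bs = {#} \<and> B = {#}"
proof -
  assume a: "lsub x B (Bag bs) (Bag {#})"
  then obtain m' where "Bag {#} = Bag m'" "size m' = size bs" using lsub_Bag by blast
  then have "bs = {#}" by simp
  then show ?thesis using a lsub_empty_in by blast
qed

lemma lsub_single: "lsub_v x B b y \<Longrightarrow> lsub x B (Bag {#b#}) (Bag {#y#})"
  using ls_bag[of x B b y "{#}" "{#}" "{#}"] ls_nil[of x] by simp

lemma lsub_single_out: "lsub x B (Bag bs) (Bag {#y#}) \<Longrightarrow> \<exists>b. bs = {#b#} \<and> lsub_v x B b y"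
proof -
  assume "lsub x B (Bag bs) (Bag {#y#})"
  from lsub_pick_out[of x B "Bag bs" y "{#}", simplified, OF this] obtain B1 B2 b m where
    h: "B = B1 + B2" "lsub_v x B1 b y" "lsub x B2 (Bag m) (Bag {#})" "bs = add_mset b m" by blast
  from lsub_empty_out[OF h(3)] show ?thesis using h by auto
qed

lemma lsub_single_in: "lsub x B (Bag {#b#}) z \<Longrightarrow> \<exists>y. z = Bag {#y#} \<and> lsub_v x B b y"
proof -
  assume "lsub x B (Bag {#b#}) z"
  from lsub_pick[of x B b "{#}", simplified, OF this] obtain B1 B2 y m' where
    h: "B = B1 + B2" "lsub_v x B1 b y" "lsub x B2 (Bag {#}) (Bag m')" "z = Bag (add_mset y m')" by blast
  from lsub_empty_in[OF h(3)] show ?thesis using h by auto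
qed

lemma sub_dir1:
  "lsub x' A t t' \<Longrightarrow> (\<And>x j A0 B bs bs' y. x' = Suc x \<Longrightarrow> j \<le> x \<Longrightarrow> A = image_mset (rlift_v j) A0 \<Longrightarrow>
      lsub x B (Bag bs) (Bag bs') \<Longrightarrow> lsub j bs' t' y \<Longrightarrow> \<exists>u'. lsub j bs t u' \<and> lsub x (A0 + B) u' y)"
  "lsub_v x' A v v' \<Longrightarrow> (\<And>x j A0 B bs bs' y. x' = Suc x \<Longrightarrow> j \<le> x \<Longrightarrow> A = image_mset (rlift_v j) A0 \<Longrightarrow>
      lsub x B (Bag bs) (Bag bs') \<Longrightarrow> lsub_v j bs' v' y \<Longrightarrow> \<exists>u'. lsub_v j bs v u' \<and> lsub_v x (A0 + B) u' y)"
proof (induction rule: lsub_lsub_v.inducts)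
  case (ls_app x' A1 s s' A2 t t')
  obtain C1 C2 y1 y2 where y: "bs' = C1 + C2" "lsub j C1 s' y1" "lsub j C2 t' y2" "y = RApp y1 y2"
    using ls_app.prems(5) unfolding lsub_App_iff by blast
  obtain A01 A02 where A0: "A0 = A01 + A02" "A1 = image_mset (rlift_v j) A01" "A2 = image_mset (rlift_v j) A02"
    using image_mset_eq_plusD[OF ls_app.prems(3)[symmetric]] by blast
  obtain B1 B2 bs1 bs2 where B: "B = B1 + B2" "lsub x B1 (Bag bs1) (Bag C1)" "lsub x B2 (Bag bs2) (Bag C2)" "Bag bs = Bag (bs1 + bs2)"
    using lsub_split_out[of x B "Bag bs" C1 C2] ls_app.prems(4) y(1) by blast
  obtain u1 where u1: "lsub j bs1 s u1" "lsub x (A01 + B1) u1 y1"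
    using ls_app.IH(1)[OF ls_app.prems(1,2) A0(2) B(2) y(2)] by blast
  obtain u2 where u2: "lsub j bs2 t u2" "lsub x (A02 + B2) u2 y2"
    using ls_app.IH(2)[OF ls_app.prems(1,2) A0(3) B(3) y(3)] by blast
  have "lsub j bs (RApp s t) (RApp u1 u2)" using lsub_lsub_v.ls_app[OF u1(1) u2(1)] B(4) by simp
  moreover have "lsub x (A0 + B) (RApp u1 u2) y" using lsub_lsub_v.ls_app[OF u1(2) u2(2)] A0(1) B(1) y(4)
    by (simp add: ac_simps)
  ultimately show ?case by blast
next
  case (ls_nil x')
  then have "A0 = {#}" by simp
  from ls_nil.prems(5) have "bs' = {#} \<and> y = Bag {#}" by (rule lsub_empty_in)
  then have "bs = {#} \<and> B = {#}" using ls_nil.prems(4) lsub_empty_out by blast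
  then show ?case using \<open>A0 = {#}\<close> \<open>bs' = {#} \<and> y = Bag {#}\<close> lsub_lsub_v.ls_nil by auto
next
  case (ls_bag x' A1 u u' A2 m m')
  obtain C1 C2 y1 y2m where y: "bs' = C1 + C2" "lsub_v j C1 u' y1" "lsub j C2 (Bag m') (Bag y2m)" "y = Bag (add_mset y1 y2m)"
    using lsub_pick[OF ls_bag.prems(5)] by blast
  obtain A01 A02 where A0: "A0 = A01 + A02" "A1 = image_mset (rlift_v j) A01" "A2 = image_mset (rlift_v j) A02"
    using image_mset_eq_plusD[OF ls_bag.prems(3)[symmetric]] by blast
  obtain B1 B2 bs1 bs2 where B: "B = B1 + B2" "lsub x B1 (Bag bs1) (Bag C1)" "lsub x B2 (Bag bs2) (Bag C2)" "Bag bs = Bag (bs1 + bs2)"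
    using lsub_split_out[of x B "Bag bs" C1 C2] ls_bag.prems(4) y(1) by blast
  obtain u1 where u1: "lsub_v j bs1 u u1" "lsub_v x (A01 + B1) u1 y1"
    using ls_bag.IH(1)[OF ls_bag.prems(1,2) A0(2) B(2) y(2)] by blast
  obtain u2 where u2: "lsub j bs2 (Bag m) u2" "lsub x (A02 + B2) u2 (Bag y2m)"
    using ls_bag.IH(2)[OF ls_bag.prems(1,2) A0(3) B(3) y(3)] by blast
  obtain m2 where m2: "u2 = Bag m2" using lsub_Bag[OF u2(1)] by blast
  have "lsub j bs (Bag (add_mset u m)) (Bag (add_mset u1 m2))" using lsub_lsub_v.ls_bag[OF u1(1) u2(1)[unfolded m2]] B(4) by simp
  moreover have "lsub x (A0 + B) (Bag (add_mset u1 m2)) y" using lsub_lsub_v.ls_bag[OF u1(2) u2(2)[unfolded m2]] A0(1) B(1) y(4)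
    by (simp add: ac_simps)
  ultimately show ?case by blast
next
  case (ls_hit x' v)
  from ls_hit.prems(3) obtain a where a: "A0 = {#a#}" "v = rlift_v j a"
    using image_mset_eq_single[of "rlift_v j" A0 v] by auto
  from lsub_rlift_uniq(2)[of j bs' a y] ls_hit.prems(5) a have "bs' = {#} \<and> y = a" by simp
  then have "bs = {#} \<and> B = {#}" using ls_hit.prems(4) lsub_empty_out by blast
  have "lsub_v j {#} (RVar (Suc x)) (RVar x)" using ls_var[of "Suc x" j] ls_hit.prems(2) by simp
  moreover have "lsub_v x {#a#} (RVar x) a" by (rule lsub_lsub_v.ls_hit)
  ultimately show ?case using ls_hit.prems(1) \<open>bs = {#} \<and> B = {#}\<close> \<open>bs' = {#} \<and> y = a\<close> a by auto
next
  case (ls_var y0 x')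
  then have A0: "A0 = {#}" by simp
  let ?y1 = "if y0 < x' then y0 else y0 - 1"
  show ?case
  proof (cases "?y1 = j")
    case True
    then have y0j: "y0 = j" using ls_var.hyps ls_var.prems(1,2) by (auto split: if_splits)
    from ls_var.prems(5) True have "bs' = {#y#}" unfolding lsub_Var_iff by auto
    then obtain b where b: "bs = {#b#}" "lsub_v x B b y" using lsub_single_out ls_var.prems(4) by blast
    show ?thesis using b y0j A0 lsub_lsub_v.ls_hit[of j b] by auto
  next
    case False
    from ls_var.prems(5) False have h: "bs' = {#}" "y = RVar (if ?y1 < j then ?y1 else ?y1 - 1)" unfolding lsub_Var_iff by auto
    then have "bs = {#} \<and> B = {#}" using ls_var.prems(4) lsub_empty_out by blast
    have y0j: "y0 \<noteq> j" using False ls_var.hyps ls_var.prems by (auto split: if_splits)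
    let ?z = "if y0 < j then y0 else y0 - 1"
    have "?z \<noteq> x" using ls_var.hyps ls_var.prems y0j by (auto split: if_splits)
    then have "lsub_v x {#} (RVar ?z) (RVar (if ?z < x then ?z else ?z - 1))" by (rule lsub_lsub_v.ls_var)
    moreover have "RVar (if ?z < x then ?z else ?z - 1) = y" using h(2) ls_var.hyps ls_var.prems False y0j by (auto split: if_splits)
    moreover have "lsub_v j {#} (RVar y0) (RVar ?z)" using y0j by (rule lsub_lsub_v.ls_var)
    ultimately show ?thesis using A0 \<open>bs = {#} \<and> B = {#}\<close> by auto
  qed
next
  case (ls_lam x' A t t')
  from ls_lam.prems(5) obtain y0 where y: "y = RLam y0" "lsub (Suc j) (image_mset (rlift_v 0) bs') t' y0"
    unfolding lsub_Lam_iff by blast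
  have A': "image_mset (rlift_v 0) A = image_mset (rlift_v (Suc j)) (image_mset (rlift_v 0) A0)"
    using ls_lam.prems(3) by (simp add: lift_lift_img)
  have B': "lsub (Suc x) (image_mset (rlift_v 0) B) (Bag (image_mset (rlift_v 0) bs)) (Bag (image_mset (rlift_v 0) bs'))"
    using lsub_lift_below(1)[OF ls_lam.prems(4), of 0] by simp
  obtain u0 where u0: "lsub (Suc j) (image_mset (rlift_v 0) bs) t u0" "lsub (Suc x) (image_mset (rlift_v 0) A0 + image_mset (rlift_v 0) B) u0 y0"
    using ls_lam.IH[of "Suc x" "Suc j" "image_mset (rlift_v 0) A0", OF _ _ A' B' y(2)] ls_lam.prems(1,2) by auto
  have "lsub_v j bs (RLam t) (RLam u0)" using u0(1) by (rule lsub_lsub_v.ls_lam)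
  moreover have "lsub_v x (A0 + B) (RLam u0) (RLam y0)" using u0(2) by (intro lsub_lsub_v.ls_lam) simp
  ultimately show ?case using y by blast
qed

lemma sub_dir2:
  "lsub j bs t u' \<Longrightarrow> (\<And>x VS y. j \<le> x \<Longrightarrow> lsub x VS u' y \<Longrightarrow>
     \<exists>A0 B t' bs'. VS = A0 + B \<and> lsub (Suc x) (image_mset (rlift_v j) A0) t t' \<and> lsub x B (Bag bs) (Bag bs') \<and> lsub j bs' t' y)"
  "lsub_v j bs v v' \<Longrightarrow> (\<And>x VS y. j \<le> x \<Longrightarrow> lsub_v x VS v' y \<Longrightarrow>
     \<exists>A0 B t' bs'. VS = A0 + B \<and> lsub_v (Suc x) (image_mset (rlift_v j) A0) v t' \<and> lsub x B (Bag bs) (Bag bs') \<and> lsub_v j bs' t' y)"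
proof (induction rule: lsub_lsub_v.inducts)
  case (ls_app j C1 s s1 C2 t t1)
  obtain V1 V2 y1 y2 where y: "VS = V1 + V2" "lsub x V1 s1 y1" "lsub x V2 t1 y2" "y = RApp y1 y2"
    using ls_app.prems(2) unfolding lsub_App_iff by blast
  obtain A01 B1 s' C1' where h1: "V1 = A01 + B1" "lsub (Suc x) (image_mset (rlift_v j) A01) s s'"
      "lsub x B1 (Bag C1) (Bag C1')" "lsub j C1' s' y1"
    using ls_app.IH(1)[OF ls_app.prems(1) y(2)] by blast
  obtain A02 B2 t' C2' where h2: "V2 = A02 + B2" "lsub (Suc x) (image_mset (rlift_v j) A02) t t'"
      "lsub x B2 (Bag C2) (Bag C2')" "lsub j C2' t' y2"
    using ls_app.IH(2)[OF ls_app.prems(1) y(3)] by blast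
  have "VS = (A01 + A02) + (B1 + B2)" using y(1) h1(1) h2(1) by (simp add: ac_simps)
  moreover have "lsub (Suc x) (image_mset (rlift_v j) (A01 + A02)) (RApp s t) (RApp s' t')"
    using lsub_lsub_v.ls_app[OF h1(2) h2(2)] by simp
  moreover have "lsub x (B1 + B2) (Bag (C1 + C2)) (Bag (C1' + C2'))" using lsub_merge[OF h1(3) h2(3)] .
  moreover have "lsub j (C1' + C2') (RApp s' t') y" using lsub_lsub_v.ls_app[OF h1(4) h2(4)] y(4) by simp
  ultimately show ?case by blast
next
  case (ls_nil j)
  from lsub_empty_in[OF ls_nil.prems(2)] have "VS = {#}" "y = Bag {#}" by auto
  then show ?case using lsub_lsub_v.ls_nil
    by (intro exI[of _ "{#}"] exI[of _ "{#}"] exI[of _ "Bag {#}"] exI[of _ "{#}"]) auto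
next
  case (ls_bag j C1 u u1 C2 m m1)
  obtain V1 V2 y1 y2m where y: "VS = V1 + V2" "lsub_v x V1 u1 y1" "lsub x V2 (Bag m1) (Bag y2m)" "y = Bag (add_mset y1 y2m)"
    using lsub_pick[OF ls_bag.prems(2)] by blast
  obtain A01 B1 u' C1' where h1: "V1 = A01 + B1" "lsub_v (Suc x) (image_mset (rlift_v j) A01) u u'"
      "lsub x B1 (Bag C1) (Bag C1')" "lsub_v j C1' u' y1"
    using ls_bag.IH(1)[OF ls_bag.prems(1) y(2)] by blast
  obtain A02 B2 t' C2' where h2: "V2 = A02 + B2" "lsub (Suc x) (image_mset (rlift_v j) A02) (Bag m) t'"
      "lsub x B2 (Bag C2) (Bag C2')" "lsub j C2' t' (Bag y2m)"
    using ls_bag.IH(2)[OF ls_bag.prems(1) y(3)] by blast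
  obtain m2 where m2: "t' = Bag m2" using lsub_Bag[OF h2(2)] by blast
  have "VS = (A01 + A02) + (B1 + B2)" using y(1) h1(1) h2(1) by (simp add: ac_simps)
  moreover have "lsub (Suc x) (image_mset (rlift_v j) (A01 + A02)) (Bag (add_mset u m)) (Bag (add_mset u' m2))"
    using lsub_lsub_v.ls_bag[OF h1(2) h2(2)[unfolded m2]] by simp
  moreover have "lsub x (B1 + B2) (Bag (C1 + C2)) (Bag (C1' + C2'))" using lsub_merge[OF h1(3) h2(3)] .
  moreover have "lsub j (C1' + C2') (Bag (add_mset u' m2)) y" using lsub_lsub_v.ls_bag[OF h1(4) h2(4)[unfolded m2]] y(4) by simp
  ultimately show ?case by blast
next
  case (ls_hit j v)
  have "lsub_v (Suc x) {#} (RVar j) (RVar j)" using ls_var[of j "Suc x"] ls_hit.prems(1) by simp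
  moreover have "lsub x VS (Bag {#v#}) (Bag {#y#})" using lsub_single[OF ls_hit.prems(2)] .
  moreover have "lsub_v j {#y#} (RVar j) y" by (rule lsub_lsub_v.ls_hit)
  ultimately show ?case by (intro exI[of _ "{#}"] exI[of _ VS] exI[of _ "RVar j"] exI[of _ "{#y#}"]) simp
next
  case (ls_var y0 j)
  let ?z = "if y0 < j then y0 else y0 - 1"
  show ?case
  proof (cases "?z = x")
    case True
    then have y0: "y0 = Suc x" using ls_var.hyps ls_var.prems(1) by (auto split: if_splits)
    from ls_var.prems(2) True have VS: "VS = {#y#}" unfolding lsub_Var_iff by auto
    have "lsub_v (Suc x) (image_mset (rlift_v j) {#y#}) (RVar y0) (rlift_v j y)" using y0 lsub_lsub_v.ls_hit by simp
    moreover have "lsub x {#} (Bag {#}) (Bag {#})" by (rule lsub_lsub_v.ls_nil)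
    moreover have "lsub_v j {#} (rlift_v j y) y" by (rule lsub_rlift_ex(2))
    ultimately show ?thesis using VS by (intro exI[of _ "{#y#}"] exI[of _ "{#}"] exI[of _ "rlift_v j y"] exI[of _ "{#}"]) simp
  next
    case False
    from ls_var.prems(2) False have h: "VS = {#}" "y = RVar (if ?z < x then ?z else ?z - 1)" unfolding lsub_Var_iff by auto
    have y0x: "y0 \<noteq> Suc x" using False ls_var.hyps ls_var.prems(1) by (auto split: if_splits)
    let ?w = "if y0 < Suc x then y0 else y0 - 1"
    have "lsub_v (Suc x) {#} (RVar y0) (RVar ?w)" using y0x by (rule lsub_lsub_v.ls_var)
    moreover have wj: "?w \<noteq> j" using y0x ls_var.hyps ls_var.prems(1) by (auto split: if_splits)
    have "lsub_v j {#} (RVar ?w) (RVar (if ?w < j then ?w else ?w - 1))" using wj by (rule lsub_lsub_v.ls_var)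
    moreover have "RVar (if ?w < j then ?w else ?w - 1) = y" using h(2) ls_var.hyps ls_var.prems(1) y0x False by (auto split: if_splits)
    moreover have "lsub x {#} (Bag {#}) (Bag {#})" by (rule lsub_lsub_v.ls_nil)
    ultimately show ?thesis using h(1) by (intro exI[of _ "{#}"] exI[of _ "{#}"] exI[of _ "RVar ?w"] exI[of _ "{#}"]) simp
  qed
next
  case (ls_lam j bs t u0)
  from ls_lam.prems(2) obtain y0 where y: "y = RLam y0" "lsub (Suc x) (image_mset (rlift_v 0) VS) u0 y0"
    unfolding lsub_Lam_iff by blast
  obtain A0' B' t' bs'' where h: "image_mset (rlift_v 0) VS = A0' + B'"
     "lsub (Suc (Suc x)) (image_mset (rlift_v (Suc j)) A0') t t'"
     "lsub (Suc x) B' (Bag (image_mset (rlift_v 0) bs)) (Bag bs'')" "lsub (Suc j) bs'' t' y0"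
    using ls_lam.IH[of "Suc x", OF _ y(2)] ls_lam.prems(1) by auto
  obtain A0 B where AB: "VS = A0 + B" "A0' = image_mset (rlift_v 0) A0" "B' = image_mset (rlift_v 0) B"
    using image_mset_eq_plusD[OF h(1)] by blast
  have "lsub (Suc x) (image_mset (rlift_v 0) B) (rlift 0 (Bag bs)) (Bag bs'')" using h(3) AB(3) by simp
  from lsub_lift_below_inv(1)[OF _ this] obtain t1 where t1: "lsub x B (Bag bs) t1" "Bag bs'' = rlift 0 t1" by blast
  obtain bs' where bs': "t1 = Bag bs'" using lsub_Bag[OF t1(1)] by blast
  have "lsub_v (Suc x) (image_mset (rlift_v j) A0) (RLam t) (RLam t')"
    using h(2) AB(2) by (intro lsub_lsub_v.ls_lam) (simp add: lift_lift_img)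
  moreover have "lsub_v j bs' (RLam t') (RLam y0)"
    using h(4) t1(2) bs' by (intro lsub_lsub_v.ls_lam) simp
  ultimately show ?case using AB(1) t1(1) bs' y(1) by blast
qed

lemma lsub_lamb_in: "lsub x A (Bag {#RLam t#}) w \<Longrightarrow> \<exists>t'. w = Bag {#RLam t'#} \<and> lsub (Suc x) (image_mset (rlift_v 0) A) t t'"
  using lsub_single_in[of x A "RLam t" w] unfolding lsub_Lam_iff by blast

lemma lsub_lamb: "lsub (Suc x) (image_mset (rlift_v 0) A) t t' \<Longrightarrow> lsub x A (Bag {#RLam t#}) (Bag {#RLam t'#})"
  by (intro lsub_single ls_lam)

lemma L1a: "rstep u U \<Longrightarrow> (\<And>x vs w. lsub x vs u w \<Longrightarrow> \<exists>W. rstep w W \<and> (\<forall>w'\<in>W. \<exists>u'\<in>U. lsub x vs u' w'))"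
  "rstep_v v V \<Longrightarrow> (\<And>x vs w. lsub_v x vs v w \<Longrightarrow> \<exists>W. rstep_v w W \<and> (\<forall>w'\<in>W. \<exists>v'\<in>V. lsub_v x vs v' w'))"
proof (induction rule: rstep_rstep_v.inducts)
  case (beta_r t bs)
  obtain A B w1 w2 where h: "vs = A + B" "lsub x A (Bag {#RLam t#}) w1" "lsub x B (Bag bs) w2" "w = RApp w1 w2"
    using beta_r unfolding lsub_App_iff by blast
  obtain t' where t': "w1 = Bag {#RLam t'#}" "lsub (Suc x) (image_mset (rlift_v 0) A) t t'" using lsub_lamb_in[OF h(2)] by blast
  obtain bs' where bs': "w2 = Bag bs'" using lsub_Bag[OF h(3)] by blast
  have "rstep w (lin_subst t' 0 bs')" using h(4) t'(1) bs' by (simp add: rstep_rstep_v.beta_r)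
  moreover have "\<forall>w'\<in>lin_subst t' 0 bs'. \<exists>u'\<in>lin_subst t 0 bs. lsub x vs u' w'"
  proof
    fix w' assume "w' \<in> lin_subst t' 0 bs'"
    then have "lsub 0 bs' t' w'" by (simp add: lin_subst_def)
    from sub_dir1(1)[OF t'(2) refl _ _ h(3)[unfolded bs'] this] obtain u' where "lsub 0 bs t u'" "lsub x (A + B) u' w'" by auto
    then show "\<exists>u'\<in>lin_subst t 0 bs. lsub x vs u' w'" using h(1) by (auto simp: lin_subst_def)
  qed
  ultimately show ?case by blast
next
  case (zero_r m t)
  obtain A B w1 w2 where h: "vs = A + B" "lsub x A (Bag m) w1" "lsub x B t w2" "w = RApp w1 w2"
    using zero_r unfolding lsub_App_iff by blast
  obtain m' where "w1 = Bag m'" "size m' = size m" using lsub_Bag[OF h(2)] by blast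
  then have "rstep w {}" using h(4) zero_r(1) by (simp add: rstep_rstep_v.zero_r)
  then show ?case by blast
next
  case (sigma1_r t s1 s2)
  obtain AB C w12 s2' where h: "vs = AB + C" "lsub x AB (RApp (Bag {#RLam t#}) s1) w12" "lsub x C s2 s2'" "w = RApp w12 s2'"
    using sigma1_r unfolding lsub_App_iff by blast
  obtain A B w1 s1' where h2: "AB = A + B" "lsub x A (Bag {#RLam t#}) w1" "lsub x B s1 s1'" "w12 = RApp w1 s1'"
    using h(2) unfolding lsub_App_iff by blast
  obtain t' where t': "w1 = Bag {#RLam t'#}" "lsub (Suc x) (image_mset (rlift_v 0) A) t t'" using lsub_lamb_in[OF h2(2)] by blast
  let ?w' = "RApp (Bag {#RLam (RApp t' (rlift 0 s2'))#}) s1'"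
  have "rstep w {?w'}" using h(4) h2(4) t'(1) by (simp add: rstep_rstep_v.sigma1_r)
  moreover have "lsub x vs (RApp (Bag {#RLam (RApp t (rlift 0 s2))#}) s1) ?w'"
  proof -
    have "lsub (Suc x) (image_mset (rlift_v 0) C) (rlift 0 s2) (rlift 0 s2')" using lsub_lift_below(1)[OF h(3), of 0] by simp
    then have "lsub (Suc x) (image_mset (rlift_v 0) (A + C)) (RApp t (rlift 0 s2)) (RApp t' (rlift 0 s2'))"
      using ls_app[OF t'(2)] by simp
    from ls_app[OF lsub_lamb[OF this] h2(3)] show ?thesis using h(1) h2(1) by (simp add: ac_simps)
  qed
  ultimately show ?case by blast
next
  case (sigma3_r v t s)
  obtain A BC w1 w23 where h: "vs = A + BC" "lsub x A (Bag {#v#}) w1" "lsub x BC (RApp (Bag {#RLam t#}) s) w23" "w = RApp w1 w23"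
    using sigma3_r unfolding lsub_App_iff by blast
  obtain v' where v': "w1 = Bag {#v'#}" "lsub_v x A v v'" using lsub_single_in[OF h(2)] by blast
  obtain B C w2 s' where h2: "BC = B + C" "lsub x B (Bag {#RLam t#}) w2" "lsub x C s s'" "w23 = RApp w2 s'"
    using h(3) unfolding lsub_App_iff by blast
  obtain t' where t': "w2 = Bag {#RLam t'#}" "lsub (Suc x) (image_mset (rlift_v 0) B) t t'" using lsub_lamb_in[OF h2(2)] by blast
  let ?w' = "RApp (Bag {#RLam (RApp (Bag {#rlift_v 0 v'#}) t')#}) s'"
  have "rstep w {?w'}" using h(4) h2(4) t'(1) v'(1) by (simp add: rstep_rstep_v.sigma3_r)
  moreover have "lsub x vs (RApp (Bag {#RLam (RApp (Bag {#rlift_v 0 v#}) t)#}) s) ?w'"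
  proof -
    have "lsub_v (Suc x) (image_mset (rlift_v 0) A) (rlift_v 0 v) (rlift_v 0 v')" using lsub_lift_below(2)[OF v'(2), of 0] by simp
    then have "lsub (Suc x) (image_mset (rlift_v 0) (A + B)) (RApp (Bag {#rlift_v 0 v#}) t) (RApp (Bag {#rlift_v 0 v'#}) t')"
      using ls_app[OF lsub_single t'(2)] by simp
    from ls_app[OF lsub_lamb[OF this] h2(3)] show ?thesis using h(1) h2(1) by (simp add: ac_simps)
  qed
  ultimately show ?case by blast
next
  case (ctx_appL_r s S t)
  obtain A B w1 w2 where h: "vs = A + B" "lsub x A s w1" "lsub x B t w2" "w = RApp w1 w2"
    using ctx_appL_r.prems unfolding lsub_App_iff by blast
  obtain W1 where W1: "rstep w1 W1" "\<forall>w'\<in>W1. \<exists>u'\<in>S. lsub x A u' w'" using ctx_appL_r.IH[OF h(2)] by blast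
  have "rstep w ((\<lambda>a. RApp a w2) ` W1)" using h(4) W1(1) by (simp add: rstep_rstep_v.ctx_appL_r)
  moreover have "\<forall>w'\<in>(\<lambda>a. RApp a w2) ` W1. \<exists>u'\<in>(\<lambda>s'. RApp s' t) ` S. lsub x vs u' w'"
    using W1(2) h(1) h(3) ls_app by fastforce
  ultimately show ?case by blast
next
  case (ctx_appR_r t T s)
  obtain A B w1 w2 where h: "vs = A + B" "lsub x A s w1" "lsub x B t w2" "w = RApp w1 w2"
    using ctx_appR_r.prems unfolding lsub_App_iff by blast
  obtain W2 where W2: "rstep w2 W2" "\<forall>w'\<in>W2. \<exists>u'\<in>T. lsub x B u' w'" using ctx_appR_r.IH[OF h(3)] by blast
  have "rstep w (RApp w1 ` W2)" using h(4) W2(1) by (simp add: rstep_rstep_v.ctx_appR_r)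
  moreover have "\<forall>w'\<in>RApp w1 ` W2. \<exists>u'\<in>RApp s ` T. lsub x vs u' w'"
    using W2(2) h(1) h(2) ls_app by fastforce
  ultimately show ?case by blast
next
  case (ctx_bag_r u U m)
  obtain A B u' m' where h: "vs = A + B" "lsub_v x A u u'" "lsub x B (Bag m) (Bag m')" "w = Bag (add_mset u' m')"
    using lsub_pick[OF ctx_bag_r.prems] by blast
  obtain W1 where W1: "rstep_v u' W1" "\<forall>w'\<in>W1. \<exists>v'\<in>U. lsub_v x A v' w'" using ctx_bag_r.IH[OF h(2)] by blast
  have "rstep w ((\<lambda>z. Bag (add_mset z m')) ` W1)" using h(4) W1(1) by (simp add: rstep_rstep_v.ctx_bag_r)
  moreover have "\<forall>w'\<in>(\<lambda>z. Bag (add_mset z m')) ` W1. \<exists>u'\<in>(\<lambda>u'. Bag (add_mset u' m)) ` U. lsub x vs u' w'"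
    using W1(2) h(1) h(3) ls_bag by fastforce
  ultimately show ?case by blast
next
  case (ctx_lam_r t T)
  obtain t' where h: "w = RLam t'" "lsub (Suc x) (image_mset (rlift_v 0) vs) t t'"
    using ctx_lam_r.prems unfolding lsub_Lam_iff by blast
  obtain W1 where W1: "rstep t' W1" "\<forall>w'\<in>W1. \<exists>u'\<in>T. lsub (Suc x) (image_mset (rlift_v 0) vs) u' w'"
    using ctx_lam_r.IH[OF h(2)] by blast
  have "rstep_v w (RLam ` W1)" using h(1) W1(1) by (simp add: rstep_rstep_v.ctx_lam_r)
  moreover have "\<forall>w'\<in>RLam ` W1. \<exists>v'\<in>RLam ` T. lsub_v x vs v' w'"
    using W1(2) ls_lam by fastforce
  ultimately show ?case by blast
qed

lemma L1b: "rstep u U \<Longrightarrow> (\<And>x vs u' y. u' \<in> U \<Longrightarrow> lsub x vs u' y \<Longrightarrow> \<exists>w W. lsub x vs u w \<and> rstep w W \<and> y \<in> W)"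
  "rstep_v v V \<Longrightarrow> (\<And>x vs v' y. v' \<in> V \<Longrightarrow> lsub_v x vs v' y \<Longrightarrow> \<exists>w W. lsub_v x vs v w \<and> rstep_v w W \<and> y \<in> W)"
proof (induction rule: rstep_rstep_v.inducts)
  case (beta_r t bs)
  then have "lsub 0 bs t u'" by (simp add: lin_subst_def)
  from sub_dir2(1)[OF this _ beta_r(2)] obtain A0 B t' bs' where
    h: "vs = A0 + B" "lsub (Suc x) (image_mset (rlift_v 0) A0) t t'" "lsub x B (Bag bs) (Bag bs')" "lsub 0 bs' t' y" by auto
  have "lsub x vs (RApp (Bag {#RLam t#}) (Bag bs)) (RApp (Bag {#RLam t'#}) (Bag bs'))"
    using ls_app[OF lsub_lamb[OF h(2)] h(3)] h(1) by simp
  moreover have "rstep (RApp (Bag {#RLam t'#}) (Bag bs')) (lin_subst t' 0 bs')" by (rule rstep_rstep_v.beta_r)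
  moreover have "y \<in> lin_subst t' 0 bs'" using h(4) by (simp add: lin_subst_def)
  ultimately show ?case by blast
next
  case (zero_r m t)
  then show ?case by simp
next
  case (sigma1_r t s1 s2)
  then have y: "lsub x vs (RApp (Bag {#RLam (RApp t (rlift 0 s2))#}) s1) y" by simp
  obtain A' B w1 y1 where h: "vs = A' + B" "lsub x A' (Bag {#RLam (RApp t (rlift 0 s2))#}) w1" "lsub x B s1 y1" "y = RApp w1 y1"
    using y unfolding lsub_App_iff by blast
  obtain y0 where y0: "w1 = Bag {#RLam y0#}" "lsub (Suc x) (image_mset (rlift_v 0) A') (RApp t (rlift 0 s2)) y0"
    using lsub_lamb_in[OF h(2)] by blast
  obtain P Q t' z where h2: "image_mset (rlift_v 0) A' = P + Q" "lsub (Suc x) P t t'" "lsub (Suc x) Q (rlift 0 s2) z" "y0 = RApp t' z"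
    using y0(2) unfolding lsub_App_iff by blast
  obtain A1 C1 where AC: "A' = A1 + C1" "P = image_mset (rlift_v 0) A1" "Q = image_mset (rlift_v 0) C1"
    using image_mset_eq_plusD[OF h2(1)] by blast
  obtain s2' where s2': "lsub x C1 s2 s2'" "z = rlift 0 s2'"
    using lsub_lift_below_inv(1)[of 0 x C1 s2 z] h2(3) AC(3) by auto
  have "lsub x vs (RApp (RApp (Bag {#RLam t#}) s1) s2) (RApp (RApp (Bag {#RLam t'#}) y1) s2')"
    using ls_app[OF ls_app[OF lsub_lamb[OF h2(2)[unfolded AC(2)]] h(3)] s2'(1)] h(1) AC(1) by (simp add: ac_simps)
  moreover have "rstep (RApp (RApp (Bag {#RLam t'#}) y1) s2') {RApp (Bag {#RLam (RApp t' (rlift 0 s2'))#}) y1}"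
    by (rule rstep_rstep_v.sigma1_r)
  moreover have "y = RApp (Bag {#RLam (RApp t' (rlift 0 s2'))#}) y1" using h(4) y0(1) h2(4) s2'(2) by simp
  ultimately show ?case by blast
next
  case (sigma3_r v t s)
  then have y: "lsub x vs (RApp (Bag {#RLam (RApp (Bag {#rlift_v 0 v#}) t)#}) s) y" by simp
  obtain A' C w1 s' where h: "vs = A' + C" "lsub x A' (Bag {#RLam (RApp (Bag {#rlift_v 0 v#}) t)#}) w1" "lsub x C s s'" "y = RApp w1 s'"
    using y unfolding lsub_App_iff by blast
  obtain y0 where y0: "w1 = Bag {#RLam y0#}" "lsub (Suc x) (image_mset (rlift_v 0) A') (RApp (Bag {#rlift_v 0 v#}) t) y0"
    using lsub_lamb_in[OF h(2)] by blast
  obtain P Q zb t' where h2: "image_mset (rlift_v 0) A' = P + Q" "lsub (Suc x) P (Bag {#rlift_v 0 v#}) zb" "lsub (Suc x) Q t t'" "y0 = RApp zb t'"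
    using y0(2) unfolding lsub_App_iff by blast
  obtain z where z: "zb = Bag {#z#}" "lsub_v (Suc x) P (rlift_v 0 v) z" using lsub_single_in[OF h2(2)] by blast
  obtain A1 B1 where AB: "A' = A1 + B1" "P = image_mset (rlift_v 0) A1" "Q = image_mset (rlift_v 0) B1"
    using image_mset_eq_plusD[OF h2(1)] by blast
  obtain v' where v': "lsub_v x A1 v v'" "z = rlift_v 0 v'"
    using lsub_lift_below_inv(2)[of 0 x A1 v z] z(2) AB(2) by auto
  have "lsub x vs (RApp (Bag {#v#}) (RApp (Bag {#RLam t#}) s)) (RApp (Bag {#v'#}) (RApp (Bag {#RLam t'#}) s'))"
    using ls_app[OF lsub_single[OF v'(1)] ls_app[OF lsub_lamb[OF h2(3)[unfolded AB(3)]] h(3)]] h(1) AB(1) by (simp add: ac_simps)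
  moreover have "rstep (RApp (Bag {#v'#}) (RApp (Bag {#RLam t'#}) s')) {RApp (Bag {#RLam (RApp (Bag {#rlift_v 0 v'#}) t')#}) s'}"
    by (rule rstep_rstep_v.sigma3_r)
  moreover have "y = RApp (Bag {#RLam (RApp (Bag {#rlift_v 0 v'#}) t')#}) s'" using h(4) y0(1) h2(4) z(1) v'(2) by simp
  ultimately show ?case by blast
next
  case (ctx_appL_r s S t)
  then obtain s' where s': "s' \<in> S" "u' = RApp s' t" by auto
  obtain A B y1 y2 where h: "vs = A + B" "lsub x A s' y1" "lsub x B t y2" "y = RApp y1 y2"
    using ctx_appL_r.prems(2)[unfolded s'(2)] unfolding lsub_App_iff by blast
  obtain w1 W1 where W1: "lsub x A s w1" "rstep w1 W1" "y1 \<in> W1" using ctx_appL_r.IH[OF s'(1) h(2)] by blast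
  have "lsub x vs (RApp s t) (RApp w1 y2)" using ls_app[OF W1(1) h(3)] h(1) by simp
  moreover have "rstep (RApp w1 y2) ((\<lambda>a. RApp a y2) ` W1)" using W1(2) by (rule rstep_rstep_v.ctx_appL_r)
  ultimately show ?case using W1(3) h(4) by blast
next
  case (ctx_appR_r t T s)
  then obtain t' where t': "t' \<in> T" "u' = RApp s t'" by auto
  obtain A B y1 y2 where h: "vs = A + B" "lsub x A s y1" "lsub x B t' y2" "y = RApp y1 y2"
    using ctx_appR_r.prems(2)[unfolded t'(2)] unfolding lsub_App_iff by blast
  obtain w2 W2 where W2: "lsub x B t w2" "rstep w2 W2" "y2 \<in> W2" using ctx_appR_r.IH[OF t'(1) h(3)] by blast
  have "lsub x vs (RApp s t) (RApp y1 w2)" using ls_app[OF h(2) W2(1)] h(1) by simp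
  moreover have "rstep (RApp y1 w2) (RApp y1 ` W2)" using W2(2) by (rule rstep_rstep_v.ctx_appR_r)
  ultimately show ?case using W2(3) h(4) by blast
next
  case (ctx_bag_r u U m)
  then obtain u1 where u1: "u1 \<in> U" "u' = Bag (add_mset u1 m)" by auto
  obtain A B z m' where h: "vs = A + B" "lsub_v x A u1 z" "lsub x B (Bag m) (Bag m')" "y = Bag (add_mset z m')"
    using lsub_pick[of x vs u1 m y] ctx_bag_r.prems(2) u1(2) by blast
  obtain w1 W1 where W1: "lsub_v x A u w1" "rstep_v w1 W1" "z \<in> W1" using ctx_bag_r.IH[OF u1(1) h(2)] by blast
  have "lsub x vs (Bag (add_mset u m)) (Bag (add_mset w1 m'))" using ls_bag[OF W1(1) h(3)] h(1) by simp
  moreover have "rstep (Bag (add_mset w1 m')) ((\<lambda>z. Bag (add_mset z m')) ` W1)" using W1(2) by (rule rstep_rstep_v.ctx_bag_r)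
  ultimately show ?case using W1(3) h(4) by blast
next
  case (ctx_lam_r t T)
  then obtain t' where t': "t' \<in> T" "v' = RLam t'" by auto
  obtain y0 where h: "y = RLam y0" "lsub (Suc x) (image_mset (rlift_v 0) vs) t' y0"
    using ctx_lam_r.prems(2)[unfolded t'(2)] unfolding lsub_Lam_iff by blast
  obtain w0 W0 where W0: "lsub (Suc x) (image_mset (rlift_v 0) vs) t w0" "rstep w0 W0" "y0 \<in> W0"
    using ctx_lam_r.IH[OF t'(1) h(2)] by blast
  have "lsub_v x vs (RLam t) (RLam w0)" using W0(1) by (rule ls_lam)
  moreover have "rstep_v (RLam w0) (RLam ` W0)" using W0(2) by (rule rstep_rstep_v.ctx_lam_r)
  ultimately show ?case using W0(3) h(1) by blast
qed

lemma plus_eq_add_mset_cases: "A + B = add_mset v VS \<Longrightarrow>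
  (\<exists>A'. A = add_mset v A' \<and> VS = A' + B) \<or> (\<exists>B'. B = add_mset v B' \<and> VS = A + B')"
proof -
  assume h: "A + B = add_mset v VS"
  then have "v \<in># A + B" by (metis add_mset_in_self)
  then show ?thesis
  proof (cases "v \<in># A")
    case True
    then obtain A' where "A = add_mset v A'" by (metis multi_member_split)
    then show ?thesis using h by auto
  next
    case False
    then have "v \<in># B" using \<open>v \<in># A + B\<close> by simp
    then obtain B' where "B = add_mset v B'" by (metis multi_member_split)
    then show ?thesis using h by auto
  qed
qed

inductive_cases rstep_BagE: "rstep (Bag m) E"

lemma rstep_Bag_inv: "rstep (Bag m) E \<Longrightarrow> \<exists>u U m0. m = add_mset u m0 \<and> rstep_v u U \<and> E = (\<lambda>u'. Bag (add_mset u' m0)) ` U"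
  by (erule rstep_BagE) auto

lemma rstep_Bag_add: "rstep (Bag m) E \<Longrightarrow> rstep (Bag (add_mset w m)) (addb w ` E)"
proof -
  assume "rstep (Bag m) E"
  from rstep_Bag_inv[OF this] obtain u U m0 where h: "m = add_mset u m0" "rstep_v u U" "E = (\<lambda>u'. Bag (add_mset u' m0)) ` U"
    by blast
  have "rstep (Bag (add_mset u (add_mset w m0))) ((\<lambda>u'. Bag (add_mset u' (add_mset w m0))) ` U)"
    using h(2) by (rule ctx_bag_r)
  moreover have "addb w ` E = (\<lambda>u'. Bag (add_mset u' (add_mset w m0))) ` U" using h(3) by (auto simp: add_mset_commute image_image)
  ultimately show ?thesis using h(1) by (simp add: add_mset_commute)
qed

lemma L2a: "lsub x M t w \<Longrightarrow> (\<And>v V' VS. M = add_mset v VS \<Longrightarrow> rstep_v v V' \<Longrightarrow>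
     \<exists>W. rstep w W \<and> (\<forall>w'\<in>W. \<exists>v'\<in>V'. lsub x (add_mset v' VS) t w'))"
  "lsub_v x M u wv \<Longrightarrow> (\<And>v V' VS. M = add_mset v VS \<Longrightarrow> rstep_v v V' \<Longrightarrow>
     \<exists>W. rstep_v wv W \<and> (\<forall>w'\<in>W. \<exists>v'\<in>V'. lsub_v x (add_mset v' VS) u w'))"
proof (induction rule: lsub_lsub_v.inducts)
  case (ls_app x A s s' B t t')
  from plus_eq_add_mset_cases[OF ls_app.prems(1)] show ?case
  proof
    assume "\<exists>A'. A = add_mset v A' \<and> VS = A' + B"
    then obtain A' where A': "A = add_mset v A'" "VS = A' + B" by blast
    obtain W1 where W1: "rstep s' W1" "\<forall>w'\<in>W1. \<exists>v'\<in>V'. lsub x (add_mset v' A') s w'" using ls_app.IH(1)[OF A'(1) ls_app.prems(2)] by blast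
    have "rstep (RApp s' t') ((\<lambda>a. RApp a t') ` W1)" using W1(1) by (rule ctx_appL_r)
    moreover have "\<forall>w'\<in>(\<lambda>a. RApp a t') ` W1. \<exists>v'\<in>V'. lsub x (add_mset v' VS) (RApp s t) w'"
    proof
      fix w' assume "w' \<in> (\<lambda>a. RApp a t') ` W1"
      then obtain a where a: "a \<in> W1" "w' = RApp a t'" by blast
      then obtain v' where "v' \<in> V'" "lsub x (add_mset v' A') s a" using W1(2) by blast
      then show "\<exists>v'\<in>V'. lsub x (add_mset v' VS) (RApp s t) w'" using lsub_lsub_v.ls_app[OF _ ls_app.hyps(2)] a A'(2) by fastforce
    qed
    ultimately show ?case by blast
  next
    assume "\<exists>B'. B = add_mset v B' \<and> VS = A + B'"
    then obtain B' where B': "B = add_mset v B'" "VS = A + B'" by blast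
    obtain W1 where W1: "rstep t' W1" "\<forall>w'\<in>W1. \<exists>v'\<in>V'. lsub x (add_mset v' B') t w'" using ls_app.IH(2)[OF B'(1) ls_app.prems(2)] by blast
    have "rstep (RApp s' t') (RApp s' ` W1)" using W1(1) by (rule ctx_appR_r)
    moreover have "\<forall>w'\<in>RApp s' ` W1. \<exists>v'\<in>V'. lsub x (add_mset v' VS) (RApp s t) w'"
    proof
      fix w' assume "w' \<in> RApp s' ` W1"
      then obtain a where a: "a \<in> W1" "w' = RApp s' a" by blast
      then obtain v' where "v' \<in> V'" "lsub x (add_mset v' B') t a" using W1(2) by blast
      then show "\<exists>v'\<in>V'. lsub x (add_mset v' VS) (RApp s t) w'" using lsub_lsub_v.ls_app[OF ls_app.hyps(1)] a B'(2) by fastforce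
    qed
    ultimately show ?case by blast
  qed
next
  case (ls_nil x)
  then show ?case by simp
next
  case (ls_bag x A u u' B m m')
  from plus_eq_add_mset_cases[OF ls_bag.prems(1)] show ?case
  proof
    assume "\<exists>A'. A = add_mset v A' \<and> VS = A' + B"
    then obtain A' where A': "A = add_mset v A'" "VS = A' + B" by blast
    obtain W1 where W1: "rstep_v u' W1" "\<forall>w'\<in>W1. \<exists>v'\<in>V'. lsub_v x (add_mset v' A') u w'" using ls_bag.IH(1)[OF A'(1) ls_bag.prems(2)] by blast
    have "rstep (Bag (add_mset u' m')) ((\<lambda>z. Bag (add_mset z m')) ` W1)" using W1(1) by (rule ctx_bag_r)
    moreover have "\<forall>w'\<in>(\<lambda>z. Bag (add_mset z m')) ` W1. \<exists>v'\<in>V'. lsub x (add_mset v' VS) (Bag (add_mset u m)) w'"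
    proof
      fix w' assume "w' \<in> (\<lambda>z. Bag (add_mset z m')) ` W1"
      then obtain a where a: "a \<in> W1" "w' = Bag (add_mset a m')" by blast
      then obtain v' where "v' \<in> V'" "lsub_v x (add_mset v' A') u a" using W1(2) by blast
      then show "\<exists>v'\<in>V'. lsub x (add_mset v' VS) (Bag (add_mset u m)) w'" using lsub_lsub_v.ls_bag[OF _ ls_bag.hyps(2)] a A'(2) by fastforce
    qed
    ultimately show ?case by blast
  next
    assume "\<exists>B'. B = add_mset v B' \<and> VS = A + B'"
    then obtain B' where B': "B = add_mset v B'" "VS = A + B'" by blast
    obtain W1 where W1: "rstep (Bag m') W1" "\<forall>w'\<in>W1. \<exists>v'\<in>V'. lsub x (add_mset v' B') (Bag m) w'" using ls_bag.IH(2)[OF B'(1) ls_bag.prems(2)] by blast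
    have "rstep (Bag (add_mset u' m')) (addb u' ` W1)" using W1(1) by (rule rstep_Bag_add)
    moreover have "\<forall>w'\<in>addb u' ` W1. \<exists>v'\<in>V'. lsub x (add_mset v' VS) (Bag (add_mset u m)) w'"
    proof
      fix w' assume "w' \<in> addb u' ` W1"
      then obtain a where a: "a \<in> W1" "w' = addb u' a" by blast
      then obtain v' where v': "v' \<in> V'" "lsub x (add_mset v' B') (Bag m) a" using W1(2) by blast
      obtain ma where ma: "a = Bag ma" using lsub_Bag[OF v'(2)] by blast
      show "\<exists>v'\<in>V'. lsub x (add_mset v' VS) (Bag (add_mset u m)) w'" using lsub_lsub_v.ls_bag[OF ls_bag.hyps(1) v'(2)[unfolded ma]] a ma v'(1) B'(2) by fastforce
    qed
    ultimately show ?case by blast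
  qed
next
  case (ls_hit x v0)
  then have "v0 = v" "VS = {#}" by (auto simp: add_mset_eq_single)
  then show ?case using ls_hit.prems(2) lsub_lsub_v.ls_hit by blast
next
  case (ls_var y x)
  then show ?case by simp
next
  case (ls_lam x A t t')
  have M: "image_mset (rlift_v 0) A = add_mset (rlift_v 0 v) (image_mset (rlift_v 0) VS)" using ls_lam.prems(1) by simp
  obtain W0 where W0: "rstep t' W0" "\<forall>w'\<in>W0. \<exists>v'\<in>rlift_v 0 ` V'. lsub (Suc x) (add_mset v' (image_mset (rlift_v 0) VS)) t w'"
    using ls_lam.IH[OF M rstep_lift(2)[OF ls_lam.prems(2)]] by blast
  have "rstep_v (RLam t') (RLam ` W0)" using W0(1) by (rule ctx_lam_r)
  moreover have "\<forall>w'\<in>RLam ` W0. \<exists>v'\<in>V'. lsub_v x (add_mset v' VS) (RLam t) w'"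
  proof
    fix w' assume "w' \<in> RLam ` W0"
    then obtain a where a: "a \<in> W0" "w' = RLam a" by blast
    then obtain v' where "v' \<in> V'" "lsub (Suc x) (add_mset (rlift_v 0 v') (image_mset (rlift_v 0) VS)) t a" using W0(2) by blast
    then show "\<exists>v'\<in>V'. lsub_v x (add_mset v' VS) (RLam t) w'" using a lsub_lsub_v.ls_lam[of x "add_mset v' VS" t a] by auto
  qed
  ultimately show ?case by blast
qed

lemma L2b: "lsub x M t y \<Longrightarrow> (\<And>v v' V' VS. M = add_mset v' VS \<Longrightarrow> rstep_v v V' \<Longrightarrow> v' \<in> V' \<Longrightarrow>
     \<exists>w W. lsub x (add_mset v VS) t w \<and> rstep w W \<and> y \<in> W)"
  "lsub_v x M u yv \<Longrightarrow> (\<And>v v' V' VS. M = add_mset v' VS \<Longrightarrow> rstep_v v V' \<Longrightarrow> v' \<in> V' \<Longrightarrow>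
     \<exists>w W. lsub_v x (add_mset v VS) u w \<and> rstep_v w W \<and> yv \<in> W)"
proof (induction rule: lsub_lsub_v.inducts)
  case (ls_app x A s s' B t t')
  from plus_eq_add_mset_cases[OF ls_app.prems(1)] show ?case
  proof
    assume "\<exists>A'. A = add_mset v' A' \<and> VS = A' + B"
    then obtain A' where A': "A = add_mset v' A'" "VS = A' + B" by blast
    obtain w W where W: "lsub x (add_mset v A') s w" "rstep w W" "s' \<in> W" using ls_app.IH(1)[OF A'(1) ls_app.prems(2,3)] by blast
    have "lsub x (add_mset v VS) (RApp s t) (RApp w t')" using lsub_lsub_v.ls_app[OF W(1) ls_app.hyps(2)] A'(2) by simp
    moreover have "rstep (RApp w t') ((\<lambda>a. RApp a t') ` W)" using W(2) by (rule ctx_appL_r)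
    ultimately show ?case using W(3) by blast
  next
    assume "\<exists>B'. B = add_mset v' B' \<and> VS = A + B'"
    then obtain B' where B': "B = add_mset v' B'" "VS = A + B'" by blast
    obtain w W where W: "lsub x (add_mset v B') t w" "rstep w W" "t' \<in> W" using ls_app.IH(2)[OF B'(1) ls_app.prems(2,3)] by blast
    have "lsub x (add_mset v VS) (RApp s t) (RApp s' w)" using lsub_lsub_v.ls_app[OF ls_app.hyps(1) W(1)] B'(2) by simp
    moreover have "rstep (RApp s' w) (RApp s' ` W)" using W(2) by (rule ctx_appR_r)
    ultimately show ?case using W(3) by blast
  qed
next
  case (ls_nil x)
  then show ?case by simp
next
  case (ls_bag x A u u' B m m')
  from plus_eq_add_mset_cases[OF ls_bag.prems(1)] show ?case
  proof
    assume "\<exists>A'. A = add_mset v' A' \<and> VS = A' + B"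
    then obtain A' where A': "A = add_mset v' A'" "VS = A' + B" by blast
    obtain w W where W: "lsub_v x (add_mset v A') u w" "rstep_v w W" "u' \<in> W" using ls_bag.IH(1)[OF A'(1) ls_bag.prems(2,3)] by blast
    have "lsub x (add_mset v VS) (Bag (add_mset u m)) (Bag (add_mset w m'))" using lsub_lsub_v.ls_bag[OF W(1) ls_bag.hyps(2)] A'(2) by simp
    moreover have "rstep (Bag (add_mset w m')) ((\<lambda>z. Bag (add_mset z m')) ` W)" using W(2) by (rule ctx_bag_r)
    ultimately show ?case using W(3) by blast
  next
    assume "\<exists>B'. B = add_mset v' B' \<and> VS = A + B'"
    then obtain B' where B': "B = add_mset v' B'" "VS = A + B'" by blast
    obtain w W where W: "lsub x (add_mset v B') (Bag m) w" "rstep w W" "Bag m' \<in> W" using ls_bag.IH(2)[OF B'(1) ls_bag.prems(2,3)] by blast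
    obtain mw where mw: "w = Bag mw" using lsub_Bag[OF W(1)] by blast
    have "lsub x (add_mset v VS) (Bag (add_mset u m)) (Bag (add_mset u' mw))" using lsub_lsub_v.ls_bag[OF ls_bag.hyps(1) W(1)[unfolded mw]] B'(2) by simp
    moreover have "rstep (Bag (add_mset u' mw)) (addb u' ` W)" using rstep_Bag_add[OF W(2)[unfolded mw]] .
    moreover have "Bag (add_mset u' m') \<in> addb u' ` W" using W(3) by force
    ultimately show ?case by blast
  qed
next
  case (ls_hit x v0)
  then have "v0 = v'" "VS = {#}" by (auto simp: add_mset_eq_single)
  then show ?case using ls_hit.prems(2,3) lsub_lsub_v.ls_hit by blast
next
  case (ls_var y x)
  then show ?case by simp
next
  case (ls_lam x A t t')
  have M: "image_mset (rlift_v 0) A = add_mset (rlift_v 0 v') (image_mset (rlift_v 0) VS)" using ls_lam.prems(1) by simp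
  obtain w W where W: "lsub (Suc x) (add_mset (rlift_v 0 v) (image_mset (rlift_v 0) VS)) t w" "rstep w W" "t' \<in> W"
    using ls_lam.IH[OF M rstep_lift(2)[OF ls_lam.prems(2)]] ls_lam.prems(3) by blast
  have "lsub_v x (add_mset v VS) (RLam t) (RLam w)" using W(1) by (intro lsub_lsub_v.ls_lam) simp
  moreover have "rstep_v (RLam w) (RLam ` W)" using W(2) by (rule ctx_lam_r)
  ultimately show ?case using W(3) by blast
qed

definition rnf :: "rterm \<Rightarrow> bool" where "rnf e \<longleftrightarrow> \<not> (\<exists>E. rstep e E)"

definition good :: "rterm \<Rightarrow> bool" where
  "good e \<longleftrightarrow> (\<exists>!F. rstep_set\<^sup>*\<^sup>* {e} F \<and> r_normal F) \<and> (\<forall>E. rstep e E \<longrightarrow> NF E = nf e)"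

definition hg :: "rterm \<Rightarrow> bool" where
  "hg e \<longleftrightarrow> (\<forall>z. z = e \<or> smaller z e \<longrightarrow> good z)"

lemma rstep_set_elim: "rstep_set X Y \<Longrightarrow> \<exists>e E1 E2. X = insert e E2 \<and> Y = E1 \<union> E2 \<and> rstep e E1 \<and> e \<notin> E2 \<and> finite E2"
  by (erule rstep_set.cases) blast

lemma rstep_set_finite: "rstep_set X Y \<Longrightarrow> finite X \<and> finite Y"
  using rstep_set_elim rstep_finite(1) by fastforce

lemma rstep_set_intro: "e \<in> X \<Longrightarrow> finite X \<Longrightarrow> rstep e E \<Longrightarrow> rstep_set X (E \<union> (X - {e}))"
proof -
  assume a: "e \<in> X" "finite X" "rstep e E"
  have "rstep_set (insert e (X - {e})) (E \<union> (X - {e}))" using a by (intro rstep_set.intros) auto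
  then show ?thesis using a(1) by (simp add: insert_absorb)
qed

lemma r_normal_iff: "finite E \<Longrightarrow> r_normal E \<longleftrightarrow> (\<forall>e\<in>E. rnf e)"
proof
  assume "finite E" "r_normal E"
  then show "\<forall>e\<in>E. rnf e" unfolding rnf_def r_normal_def using rstep_set_intro by blast
next
  assume "\<forall>e\<in>E. rnf e"
  then show "r_normal E" unfolding r_normal_def rnf_def using rstep_set_elim by blast
qed

lemma rtranclp_finite: "rstep_set\<^sup>*\<^sup>* X Y \<Longrightarrow> finite X \<Longrightarrow> finite Y"
  by (induction rule: rtranclp_induct) (auto dest: rstep_set_finite)

lemma hg_smaller: "hg e \<Longrightarrow> smaller z e \<Longrightarrow> hg z"
  unfolding hg_def using smaller_trans by blast

lemma hg_good: "hg e \<Longrightarrow> good e"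
  unfolding hg_def by blast

lemma rstep_set_hg: "rstep_set X Y \<Longrightarrow> \<forall>x\<in>X. hg x \<Longrightarrow> \<forall>y\<in>Y. hg y"
proof -
  assume "rstep_set X Y" "\<forall>x\<in>X. hg x"
  then obtain e E1 E2 where h: "X = insert e E2" "Y = E1 \<union> E2" "rstep e E1" by (auto elim: rstep_set.cases)
  then show ?thesis using \<open>\<forall>x\<in>X. hg x\<close> rstep_smaller(1)[OF h(3)] hg_smaller by auto
qed

lemma rtranclp_hg: "rstep_set\<^sup>*\<^sup>* X Y \<Longrightarrow> \<forall>x\<in>X. hg x \<Longrightarrow> \<forall>y\<in>Y. hg y"
  by (induction rule: rtranclp_induct) (auto dest: rstep_set_hg)

lemma good_nf: "good e \<Longrightarrow> rstep_set\<^sup>*\<^sup>* {e} (nf e) \<and> r_normal (nf e)"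
  unfolding good_def nf_def by (metis (mono_tags, lifting) theI')

lemma good_nf_uniq: "good e \<Longrightarrow> rstep_set\<^sup>*\<^sup>* {e} F \<Longrightarrow> r_normal F \<Longrightarrow> F = nf e"
  unfolding good_def nf_def by (metis (mono_tags, lifting) the_equality)

lemma good_step: "good e \<Longrightarrow> rstep e E \<Longrightarrow> NF E = nf e"
  unfolding good_def by blast

lemma good_nf_finite: "good e \<Longrightarrow> finite (nf e)"
  using good_nf rtranclp_finite by blast

lemma good_rnf: "good e \<Longrightarrow> rnf e \<Longrightarrow> nf e = {e}"
proof -
  assume "good e" "rnf e"
  then have "r_normal {e}" using r_normal_iff by auto
  then show ?thesis using good_nf_uniq[OF \<open>good e\<close>] by auto
qed

lemma good_nf_rnf: "good e \<Longrightarrow> y \<in> nf e \<Longrightarrow> rnf y"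
  using good_nf good_nf_finite r_normal_iff by blast

lemma NF_union: "NF (A \<union> B) = NF A \<union> NF B"
  unfolding NF_def by auto

lemma NF_insert: "NF (insert a B) = nf a \<union> NF B"
  unfolding NF_def by auto

lemma NF_empty[simp]: "NF {} = {}"
  unfolding NF_def by auto

lemma NF_normal: "\<forall>x\<in>X. hg x \<Longrightarrow> \<forall>x\<in>X. rnf x \<Longrightarrow> NF X = X"
  unfolding NF_def using good_rnf hg_good by auto

lemma D2: "rstep_set\<^sup>*\<^sup>* X F \<Longrightarrow> finite X \<Longrightarrow> \<forall>x\<in>X. hg x \<Longrightarrow> r_normal F \<Longrightarrow> F = NF X"
proof (induction rule: converse_rtranclp_induct)
  case base
  then show ?case using NF_normal r_normal_iff by auto
next
  case (step X X')
  obtain e E1 E2 where h: "X = insert e E2" "X' = E1 \<union> E2" "rstep e E1" "e \<notin> E2" "finite E2"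
    using rstep_set_elim[OF step.hyps(1)] by blast
  have "finite X'" using rstep_set_finite step.hyps(1) by blast
  moreover have "\<forall>x\<in>X'. hg x" using rstep_set_hg step.hyps(1) step.prems(2) by blast
  ultimately have "F = NF X'" using step.IH step.prems(3) by blast
  also have "\<dots> = NF E1 \<union> NF E2" using h(2) NF_union by simp
  also have "\<dots> = nf e \<union> NF E2" using good_step[OF hg_good h(3)] step.prems(2) h(1) by simp
  also have "\<dots> = NF X" using h(1) NF_insert by simp
  finally show ?case .
qed

lemma wf_mult_smaller: "wf (mult {(a, b). smaller a b})"
  using wf_mult wf_smaller by blast

lemma mset_set_step:
  assumes "e \<notin> E2" "finite E2" "finite E1" "\<forall>x\<in>E1. smaller x e"
  shows "(mset_set (E1 \<union> E2), mset_set (insert e E2)) \<in> mult {(a, b). smaller a b}"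
proof -
  have "mset_set (E1 \<union> E2) = mset_set E2 + mset_set (E1 - E2)"
    using assms by (subst mset_set_Union[symmetric]) (auto intro: arg_cong[where f=mset_set])
  moreover have "mset_set (insert e E2) = mset_set E2 + {#e#}" using assms by simp
  moreover have "(mset_set E2 + mset_set (E1 - E2), mset_set E2 + {#e#}) \<in> mult {(a, b). smaller a b}"
    using assms by (intro one_step_implies_mult) auto
  ultimately show ?thesis by simp
qed

lemma D1: "finite X \<Longrightarrow> \<forall>x\<in>X. hg x \<Longrightarrow> rstep_set\<^sup>*\<^sup>* X (NF X)"
proof (induction "mset_set X" arbitrary: X rule: wf_induct_rule[OF wf_mult_smaller])
  case 1
  show ?case
  proof (cases "\<forall>x\<in>X. rnf x")
    case True
    then show ?thesis using NF_normal 1 by simp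
  next
    case False
    then obtain e E1 where e: "e \<in> X" "rstep e E1" unfolding rnf_def by blast
    let ?X' = "E1 \<union> (X - {e})"
    have step: "rstep_set X ?X'" using rstep_set_intro e 1 by blast
    have fin: "finite E1" using rstep_finite(1) e(2) .
    have "(mset_set ?X', mset_set (insert e (X - {e}))) \<in> mult {(a, b). smaller a b}"
      using mset_set_step[of e "X - {e}" E1] fin 1(2) rstep_smaller(1)[OF e(2)] by auto
    then have lt: "(mset_set ?X', mset_set X) \<in> mult {(a, b). smaller a b}" using e(1) by (simp add: insert_absorb)
    have "finite ?X'" using fin 1(2) by simp
    moreover have "\<forall>x\<in>?X'. hg x" using rstep_set_hg[OF step] 1(3) by blast
    ultimately have "rstep_set\<^sup>*\<^sup>* ?X' (NF ?X')" using 1(1)[OF lt] by blast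
    moreover have "NF ?X' = NF X"
    proof -
      have "NF ?X' = NF E1 \<union> NF (X - {e})" by (rule NF_union)
      also have "\<dots> = nf e \<union> NF (X - {e})" using good_step[OF hg_good e(2)] 1(3) e(1) by simp
      also have "\<dots> = NF X" using NF_insert[of e "X - {e}"] e(1) by (simp add: insert_absorb)
      finally show ?thesis .
    qed
    ultimately show ?thesis using step by (metis converse_rtranclp_into_rtranclp)
  qed
qed

lemma NF_normal_set: "finite X \<Longrightarrow> \<forall>x\<in>X. hg x \<Longrightarrow> r_normal (NF X)"
proof -
  assume a: "finite X" "\<forall>x\<in>X. hg x"
  have "finite (NF X)" unfolding NF_def using a good_nf_finite hg_good by auto
  moreover have "\<forall>y\<in>NF X. rnf y" unfolding NF_def using a good_nf_rnf hg_good by auto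
  ultimately show ?thesis using r_normal_iff by blast
qed

lemma D3: "rstep_set\<^sup>*\<^sup>* X Y \<Longrightarrow> finite X \<Longrightarrow> \<forall>x\<in>X. hg x \<Longrightarrow> NF X = NF Y"
proof -
  assume a: "rstep_set\<^sup>*\<^sup>* X Y" "finite X" "\<forall>x\<in>X. hg x"
  have fY: "finite Y" using rtranclp_finite a by blast
  have hY: "\<forall>y\<in>Y. hg y" using rtranclp_hg a by blast
  have "rstep_set\<^sup>*\<^sup>* Y (NF Y)" using D1 fY hY by blast
  then have "rstep_set\<^sup>*\<^sup>* X (NF Y)" using a(1) by simp
  moreover have "r_normal (NF Y)" using NF_normal_set fY hY by blast
  ultimately show ?thesis using D2 a by metis
qed

lemma good_from_LC:
  assumes IH: "\<And>z. smaller z e \<Longrightarrow> good z"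
    and LC: "\<And>E1 E2. rstep e E1 \<Longrightarrow> rstep e E2 \<Longrightarrow> NF E1 = NF E2"
  shows "good e"
proof (cases "rnf e")
  case True
  then have nrm: "r_normal {e}" using r_normal_iff by auto
  have "rstep_set\<^sup>*\<^sup>* {e} F \<Longrightarrow> F = {e}" for F
    using nrm unfolding r_normal_def by (metis converse_rtranclpE)
  then have "\<exists>!F. rstep_set\<^sup>*\<^sup>* {e} F \<and> r_normal F" using nrm by blast
  then show ?thesis using True unfolding good_def rnf_def by blast
next
  case False
  then obtain E1 where E1: "rstep e E1" unfolding rnf_def by blast
  have hgE1: "\<forall>x\<in>E1. hg x" using rstep_smaller(1)[OF E1] IH smaller_trans unfolding hg_def by blast
  have fE1: "finite E1" using rstep_finite(1)[OF E1] .
  have s1: "rstep_set {e} E1" using rstep_set_intro[of e "{e}" E1] E1 by simp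
  have ex: "rstep_set\<^sup>*\<^sup>* {e} (NF E1) \<and> r_normal (NF E1)"
    using s1 D1[OF fE1 hgE1] NF_normal_set[OF fE1 hgE1] by simp
  have uniq: "F = NF E1" if F: "rstep_set\<^sup>*\<^sup>* {e} F" "r_normal F" for F
  proof -
    have "{e} \<noteq> F" using F(2) E1 rstep_set_intro[of e "{e}" E1] unfolding r_normal_def by auto
    then obtain X' where X': "rstep_set {e} X'" "rstep_set\<^sup>*\<^sup>* X' F" using F(1) by (metis converse_rtranclpE)
    obtain a A1 A2 where h: "{e} = insert a A2" "X' = A1 \<union> A2" "rstep a A1" "a \<notin> A2"
      using rstep_set_elim[OF X'(1)] by blast
    then have "a = e" "A2 = {}" by auto
    then have A1: "rstep e A1" "X' = A1" using h by auto
    have "finite A1" using rstep_finite(1)[OF A1(1)] .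
    moreover have "\<forall>x\<in>A1. hg x" using rstep_smaller(1)[OF A1(1)] IH smaller_trans unfolding hg_def by blast
    ultimately have "F = NF A1" using D2 X'(2) A1(2) F(2) by blast
    then show ?thesis using LC[OF A1(1) E1] by simp
  qed
  have eu: "\<exists>!F. rstep_set\<^sup>*\<^sup>* {e} F \<and> r_normal F" using ex uniq by blast
  have "nf e = NF E1" using uniq ex unfolding nf_def by (metis (mono_tags, lifting) the_equality)
  then show ?thesis using eu LC[OF _ E1] unfolding good_def by auto
qed

definition ctxf :: "(rterm \<Rightarrow> rterm) \<Rightarrow> rterm set \<Rightarrow> bool" where
  "ctxf f D \<longleftrightarrow> inj_on f D \<and> (\<forall>x\<in>D. \<forall>X. rstep x X \<longrightarrow> X \<subseteq> D \<and> rstep (f x) (f ` X))"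

lemma ctxf_rtranclp: "rstep_set\<^sup>*\<^sup>* X Y \<Longrightarrow> ctxf f D \<Longrightarrow> X \<subseteq> D \<Longrightarrow> rstep_set\<^sup>*\<^sup>* (f ` X) (f ` Y) \<and> Y \<subseteq> D"
proof (induction rule: rtranclp_induct)
  case base
  then show ?case by simp
next
  case (step Y Z)
  then have IH: "rstep_set\<^sup>*\<^sup>* (f ` X) (f ` Y)" "Y \<subseteq> D" by auto
  obtain e E1 E2 where h: "Y = insert e E2" "Z = E1 \<union> E2" "rstep e E1" "e \<notin> E2" "finite E2"
    using rstep_set_elim[OF step.hyps(2)] by blast
  have eD: "e \<in> D" "E2 \<subseteq> D" using IH(2) h(1) by auto
  have E1D: "E1 \<subseteq> D" "rstep (f e) (f ` E1)" using step.prems(1) eD h(3) unfolding ctxf_def by auto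
  have "f e \<notin> f ` E2" using step.prems(1) eD h(4) unfolding ctxf_def inj_on_def by blast
  then have "rstep_set (insert (f e) (f ` E2)) (f ` E1 \<union> f ` E2)" using E1D(2) h(5) by (intro rstep_set.intros) auto
  then have "rstep_set (f ` Y) (f ` Z)" using h(1,2) by (simp add: image_Un)
  then show ?case using IH E1D eD h(2) by auto
qed

lemma NF_image_UN: "NF (f ` (\<Union>x\<in>A. B x)) = (\<Union>x\<in>A. NF (f ` B x))"
  unfolding NF_def by auto

lemma NF_image: "NF (f ` A) = (\<Union>x\<in>A. nf (f x))"
  unfolding NF_def by auto

lemma nf_ctx: "ctxf f D \<Longrightarrow> x \<in> D \<Longrightarrow> good x \<Longrightarrow> hg (f x) \<Longrightarrow> nf (f x) = NF (f ` nf x) \<and> (\<forall>y\<in>f ` nf x. hg y)"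
proof -
  assume a: "ctxf f D" "x \<in> D" "good x" "hg (f x)"
  have "rstep_set\<^sup>*\<^sup>* {x} (nf x)" using good_nf[OF a(3)] by blast
  from ctxf_rtranclp[OF this a(1)] a(2) have r: "rstep_set\<^sup>*\<^sup>* {f x} (f ` nf x)" by simp
  have "NF {f x} = NF (f ` nf x)" using D3[OF r] a(4) by simp
  moreover have "\<forall>y\<in>f ` nf x. hg y" using rtranclp_hg[OF r] a(4) by simp
  ultimately show ?thesis by (simp add: NF_def)
qed

lemma ctxf_appL: "ctxf (\<lambda>s. RApp s t) UNIV"
  unfolding ctxf_def inj_on_def by (auto intro: ctx_appL_r)

lemma ctxf_appR: "ctxf (RApp s) UNIV"
  unfolding ctxf_def inj_on_def by (auto intro: ctx_appR_r)

lemma rstep_lamb: "rstep x X \<Longrightarrow> rstep (Bag (add_mset (RLam x) m)) ((\<lambda>x. Bag (add_mset (RLam x) m)) ` X)"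
proof -
  assume "rstep x X"
  then have "rstep (Bag (add_mset (RLam x) m)) ((\<lambda>u'. Bag (add_mset u' m)) ` (RLam ` X))"
    by (intro ctx_bag_r ctx_lam_r)
  then show ?thesis by (simp add: image_image)
qed

lemma ctxf_lamb: "ctxf (\<lambda>x. Bag (add_mset (RLam x) m)) UNIV"
  unfolding ctxf_def inj_on_def by (auto intro: rstep_lamb)

lemma ctxf_addb: "ctxf (addb w) (range Bag)"
  unfolding ctxf_def
proof
  show "inj_on (addb w) (range Bag)" unfolding inj_on_def by auto
next
  show "\<forall>x\<in>range Bag. \<forall>X. rstep x X \<longrightarrow> X \<subseteq> range Bag \<and> rstep (addb w x) (addb w ` X)"
  proof (intro ballI allI impI)
    fix x X assume "x \<in> range Bag" "rstep x X"
    then obtain m where m: "x = Bag m" by blast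
    from rstep_Bag_inv[OF \<open>rstep x X\<close>[unfolded m]] have "X \<subseteq> range Bag" by auto
    then show "X \<subseteq> range Bag \<and> rstep (addb w x) (addb w ` X)" using rstep_Bag_add \<open>rstep x X\<close> m by simp
  qed
qed

lemma smaller_appL: "smaller s (RApp s t)" unfolding smaller_def lexless_def by simp
lemma smaller_appR: "smaller t (RApp s t)" unfolding smaller_def lexless_def by simp
lemma smaller_bag: "smaller (Bag m) (Bag (add_mset u m))" unfolding smaller_def lexless_def using rsz_pos(2)[of u] by simp
lemma smaller_lamb: "RLam t \<in># m \<Longrightarrow> smaller t (Bag m)"
proof -
  assume "RLam t \<in># m"
  then obtain m' where "m = add_mset (RLam t) m'" by (metis multi_member_split)
  then show ?thesis unfolding smaller_def lexless_def by simp
qed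

definition Phi :: "rterm \<Rightarrow> rterm \<Rightarrow> rterm set" where
  "Phi s t = (\<Union>s'\<in>nf s. \<Union>t'\<in>nf t. nf (RApp s' t'))"

lemma nf_app: "hg (RApp s t) \<Longrightarrow> nf (RApp s t) = Phi s t"
proof -
  assume h: "hg (RApp s t)"
  have gs: "good s" using h smaller_appL hg_def by blast
  have gt: "good t" using h smaller_appR hg_def by blast
  from nf_ctx[OF ctxf_appL _ gs, of t] h have 1: "nf (RApp s t) = NF ((\<lambda>s. RApp s t) ` nf s)" "\<forall>y\<in>(\<lambda>s. RApp s t) ` nf s. hg y"
    by auto
  have "nf (RApp s' t) = (\<Union>t'\<in>nf t. nf (RApp s' t'))" if "s' \<in> nf s" for s'
  proof -
    have "hg (RApp s' t)" using 1(2) that by auto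
    from nf_ctx[OF ctxf_appR _ gt this] show ?thesis by (simp add: NF_image)
  qed
  then show ?thesis using 1(1) unfolding Phi_def NF_image by auto
qed

lemma NF_L: "good s \<Longrightarrow> rstep s S \<Longrightarrow> \<forall>s'\<in>S. hg (RApp s' t) \<Longrightarrow> NF ((\<lambda>s'. RApp s' t) ` S) = Phi s t"
proof -
  assume a: "good s" "rstep s S" "\<forall>s'\<in>S. hg (RApp s' t)"
  have "NF ((\<lambda>s'. RApp s' t) ` S) = (\<Union>s'\<in>S. Phi s' t)" using a(3) nf_app by (simp add: NF_image)
  also have "\<dots> = (\<Union>s''\<in>NF S. \<Union>t'\<in>nf t. nf (RApp s'' t'))" unfolding Phi_def NF_def by auto
  also have "\<dots> = Phi s t" using good_step[OF a(1,2)] unfolding Phi_def by simp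
  finally show ?thesis .
qed

lemma NF_R: "good t \<Longrightarrow> rstep t T \<Longrightarrow> \<forall>t'\<in>T. hg (RApp s t') \<Longrightarrow> NF (RApp s ` T) = Phi s t"
proof -
  assume a: "good t" "rstep t T" "\<forall>t'\<in>T. hg (RApp s t')"
  have "NF (RApp s ` T) = (\<Union>t'\<in>T. Phi s t')" using a(3) nf_app by (simp add: NF_image)
  also have "\<dots> = (\<Union>s'\<in>nf s. \<Union>t''\<in>NF T. nf (RApp s' t''))" unfolding Phi_def NF_def by auto
  also have "\<dots> = Phi s t" using good_step[OF a(1,2)] unfolding Phi_def by simp
  finally show ?thesis .
qed

inductive_cases rstep_v_LamE: "rstep_v (RLam t) V"
inductive_cases rstep_v_VarE: "rstep_v (RVar y) V"

lemma rstep_v_Lam_inv: "rstep_v (RLam t) V \<Longrightarrow> \<exists>T. rstep t T \<and> V = RLam ` T"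
  by (erule rstep_v_LamE) blast

lemma rstep_v_Var: "\<not> rstep_v (RVar y) V"
  by (auto elim: rstep_v_VarE)

lemma rstep_v_inv: "rstep_v u V \<Longrightarrow> \<exists>t T. u = RLam t \<and> rstep t T \<and> V = RLam ` T"
  by (cases u) (auto simp: rstep_v_Var dest: rstep_v_Lam_inv)

fun nfv :: "rval \<Rightarrow> rval set" where
  "nfv (RVar x) = {RVar x}"
| "nfv (RLam t) = RLam ` nf t"

definition Psi :: "rval multiset \<Rightarrow> rterm set" where
  "Psi m = {Bag m' | m'. rel_mset (\<lambda>u u'. u' \<in> nfv u) m m'}"

lemma Psi_empty: "Psi {#} = {Bag {#}}"
  unfolding Psi_def by auto

lemma Psi_add: "Psi (add_mset u m) = (\<Union>z\<in>nfv u. addb z ` Psi m)"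
proof
  show "Psi (add_mset u m) \<subseteq> (\<Union>z\<in>nfv u. addb z ` Psi m)"
  proof
    fix x assume "x \<in> Psi (add_mset u m)"
    then obtain m' where "x = Bag m'" "rel_mset (\<lambda>u u'. u' \<in> nfv u) (add_mset u m) m'" unfolding Psi_def by blast
    from msed_rel_invL[OF this(2)] obtain N1 b where "m' = add_mset b N1" "b \<in> nfv u" "rel_mset (\<lambda>u u'. u' \<in> nfv u) m N1" by blast
    then show "x \<in> (\<Union>z\<in>nfv u. addb z ` Psi m)" using \<open>x = Bag m'\<close> unfolding Psi_def by force
  qed
next
  show "(\<Union>z\<in>nfv u. addb z ` Psi m) \<subseteq> Psi (add_mset u m)"
    unfolding Psi_def using rel_mset_Plus[of "\<lambda>u u'. u' \<in> nfv u"] by force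
qed

lemma rnf_Bag: "(\<And>t. RLam t \<in># m \<Longrightarrow> rnf t) \<Longrightarrow> rnf (Bag m)"
proof -
  assume a: "\<And>t. RLam t \<in># m \<Longrightarrow> rnf t"
  show "rnf (Bag m)" unfolding rnf_def
  proof
    assume "\<exists>E. rstep (Bag m) E"
    then obtain E where "rstep (Bag m) E" by blast
    from rstep_Bag_inv[OF this] obtain u U m0 where h: "m = add_mset u m0" "rstep_v u U" by blast
    from rstep_v_inv[OF h(2)] obtain t T where "u = RLam t" "rstep t T" by blast
    then show False using a h(1) unfolding rnf_def by auto
  qed
qed

lemma rnf_Bag_inv: "rnf (Bag m) \<Longrightarrow> RLam t \<in># m \<Longrightarrow> rnf t"
proof -
  assume a: "rnf (Bag m)" "RLam t \<in># m"
  then obtain m0 where m0: "m = add_mset (RLam t) m0" by (metis multi_member_split)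
  show "rnf t" unfolding rnf_def
  proof
    assume "\<exists>T. rstep t T"
    then obtain T where "rstep t T" by blast
    then have "rstep (Bag m) ((\<lambda>x. Bag (add_mset (RLam x) m0)) ` T)" using rstep_lamb m0 by simp
    then show False using a(1) unfolding rnf_def by blast
  qed
qed

lemma rnf_addb: "rnf (Bag m) \<Longrightarrow> (\<And>t. z = RLam t \<Longrightarrow> rnf t) \<Longrightarrow> rnf (addb z (Bag m))"
  using rnf_Bag_inv by (auto intro!: rnf_Bag)

lemma good_rnf_hg: "hg x \<Longrightarrow> rnf x \<Longrightarrow> nf x = {x}"
  using good_rnf hg_good by blast

lemma NF_rnf_hg: "\<forall>x\<in>X. hg x \<Longrightarrow> \<forall>x\<in>X. rnf x \<Longrightarrow> NF X = X"
  by (rule NF_normal)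

lemma NFBAG: "hg (Bag m) \<Longrightarrow> nf (Bag m) = Psi m"
proof (induction m)
  case empty
  have "rnf (Bag {#})" by (rule rnf_Bag) simp
  then show ?case using good_rnf_hg[OF empty] Psi_empty by simp
next
  case (add u m)
  have hm: "hg (Bag m)" using hg_smaller[OF add.prems smaller_bag] .
  have IH: "nf (Bag m) = Psi m" using add.IH[OF hm] .
  have gm: "good (Bag m)" using hg_good[OF hm] .
  have key: "nf (Bag (add_mset z m)) = addb z ` Psi m" if z: "hg (Bag (add_mset z m))" "\<And>t. z = RLam t \<Longrightarrow> rnf t" for z
  proof -
    from nf_ctx[OF ctxf_addb _ gm, of z] z(1) have h: "nf (Bag (add_mset z m)) = NF (addb z ` nf (Bag m))" "\<forall>y\<in>addb z ` nf (Bag m). hg y"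
      by auto
    have "\<forall>y\<in>addb z ` nf (Bag m). rnf y"
    proof
      fix y assume "y \<in> addb z ` nf (Bag m)"
      then obtain b where b: "b \<in> nf (Bag m)" "y = addb z b" by blast
      have "rnf b" using good_nf_rnf[OF gm b(1)] .
      moreover obtain mb where "b = Bag mb" using b(1) IH unfolding Psi_def by auto
      ultimately show "rnf y" using rnf_addb z(2) b(2) by simp
    qed
    then show ?thesis using h NF_rnf_hg IH by metis
  qed
  show ?case
  proof (cases u)
    case (RVar y)
    then show ?thesis using key[of u] add.prems Psi_add by simp
  next
    case (RLam w)
    have gw: "good w" using add.prems smaller_lamb[of w "add_mset u m"] RLam hg_def by auto
    from nf_ctx[OF ctxf_lamb _ gw, of m] add.prems RLam
    have h: "nf (Bag (add_mset u m)) = NF ((\<lambda>x. Bag (add_mset (RLam x) m)) ` nf w)" "\<forall>y\<in>(\<lambda>x. Bag (add_mset (RLam x) m)) ` nf w. hg y"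
      by auto
    have "nf (Bag (add_mset (RLam w') m)) = addb (RLam w') ` Psi m" if "w' \<in> nf w" for w'
      using key[of "RLam w'"] h(2) that good_nf_rnf[OF gw] by auto
    then have "nf (Bag (add_mset u m)) = (\<Union>w'\<in>nf w. addb (RLam w') ` Psi m)" using h(1) by (simp add: NF_image)
    then show ?thesis using RLam Psi_add by simp
  qed
qed

lemma NF_bag_step: "rstep (Bag m) E \<Longrightarrow> \<forall>x\<in>E. hg x \<Longrightarrow> (\<And>w. RLam w \<in># m \<Longrightarrow> good w) \<Longrightarrow> NF E = Psi m"
proof -
  assume a: "rstep (Bag m) E" "\<forall>x\<in>E. hg x" "\<And>w. RLam w \<in># m \<Longrightarrow> good w"
  from rstep_Bag_inv[OF a(1)] obtain u U m1 where h: "m = add_mset u m1" "rstep_v u U" "E = (\<lambda>u'. Bag (add_mset u' m1)) ` U" by blast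
  from rstep_v_inv[OF h(2)] obtain w W where w: "u = RLam w" "rstep w W" "U = RLam ` W" by blast
  have gw: "good w" using a(3) h(1) w(1) by simp
  have "NF E = (\<Union>w'\<in>W. nf (Bag (add_mset (RLam w') m1)))" using h(3) w(3) by (simp add: NF_image image_image)
  also have "\<dots> = (\<Union>w'\<in>W. Psi (add_mset (RLam w') m1))" using NFBAG a(2) h(3) w(3) by auto
  also have "\<dots> = (\<Union>w''\<in>NF W. addb (RLam w'') ` Psi m1)" by (auto simp: Psi_add NF_def)
  also have "\<dots> = Psi m" using good_step[OF gw w(2)] h(1) w(1) by (simp add: Psi_add)
  finally show ?thesis .
qed

lemma hyp_hg: "(\<And>z. smaller z e \<Longrightarrow> good z) \<Longrightarrow> smaller z e \<Longrightarrow> hg z"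
  unfolding hg_def using smaller_trans by blast

lemma NF_sim:
  assumes HYP: "\<And>z. smaller z e \<Longrightarrow> good z"
    and sm: "\<forall>w\<in>X. smaller w e"
    and d1: "\<forall>w\<in>X. \<exists>W. rstep w W \<and> W \<subseteq> Y"
    and d2: "\<forall>y\<in>Y. \<exists>w\<in>X. \<exists>W. rstep w W \<and> y \<in> W"
  shows "NF X = NF Y"
proof
  show "NF X \<subseteq> NF Y"
  proof
    fix x assume "x \<in> NF X"
    then obtain w where w: "w \<in> X" "x \<in> nf w" unfolding NF_def by blast
    then obtain W where W: "rstep w W" "W \<subseteq> Y" using d1 by blast
    have "nf w = NF W" using good_step[OF HYP W(1)] sm w(1) by simp
    then show "x \<in> NF Y" using w(2) W(2) unfolding NF_def by blast
  qed
next
  show "NF Y \<subseteq> NF X"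
  proof
    fix x assume "x \<in> NF Y"
    then obtain y where y: "y \<in> Y" "x \<in> nf y" unfolding NF_def by blast
    then obtain w W where W: "w \<in> X" "rstep w W" "y \<in> W" using d2 by blast
    have "nf w = NF W" using good_step[OF HYP W(2)] sm W(1) by simp
    then show "x \<in> NF X" using y(2) W(1,3) unfolding NF_def by blast
  qed
qed

lemma rstep_lamb1_inv: "rstep (Bag {#RLam u#}) S \<Longrightarrow> \<exists>U. rstep u U \<and> S = (\<lambda>u'. Bag {#RLam u'#}) ` U"
proof -
  assume "rstep (Bag {#RLam u#}) S"
  from rstep_Bag_inv[OF this] obtain u0 U0 m0 where h: "{#RLam u#} = add_mset u0 m0" "rstep_v u0 U0" "S = (\<lambda>u'. Bag (add_mset u' m0)) ` U0" by blast
  then have "u0 = RLam u" "m0 = {#}" by (auto simp: add_mset_eq_single)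
  from rstep_v_Lam_inv[OF h(2)[unfolded this(1)]] obtain U where "rstep u U" "U0 = RLam ` U" by blast
  then show ?thesis using h(3) \<open>m0 = {#}\<close> by (auto simp: image_image)
qed

lemma rstep_sing_inv: "rstep (Bag {#v#}) S \<Longrightarrow> \<exists>V. rstep_v v V \<and> S = (\<lambda>v'. Bag {#v'#}) ` V"
proof -
  assume "rstep (Bag {#v#}) S"
  from rstep_Bag_inv[OF this] obtain u0 U0 m0 where h: "{#v#} = add_mset u0 m0" "rstep_v u0 U0" "S = (\<lambda>u'. Bag (add_mset u' m0)) ` U0" by blast
  then have "u0 = v" "m0 = {#}" by (auto simp: add_mset_eq_single)
  then show ?thesis using h by auto
qed

lemma rstep_Bag_size: "rstep (Bag m) S \<Longrightarrow> x \<in> S \<Longrightarrow> \<exists>m'. x = Bag m' \<and> size m' = size m"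
proof -
  assume "rstep (Bag m) S" "x \<in> S"
  from rstep_Bag_inv[OF this(1)] obtain u0 U0 m0 where h: "m = add_mset u0 m0" "rstep_v u0 U0" "S = (\<lambda>u'. Bag (add_mset u' m0)) ` U0" by blast
  then show ?thesis using \<open>x \<in> S\<close> by auto
qed

lemma pair_BL:
  assumes HYP: "\<And>z. smaller z e \<Longrightarrow> good z"
    and e: "e = RApp (Bag {#RLam u#}) (Bag vs)"
    and S: "rstep (Bag {#RLam u#}) S"
  shows "NF (lin_subst u 0 vs) = NF ((\<lambda>s'. RApp s' (Bag vs)) ` S)"
proof -
  obtain U where U: "rstep u U" "S = (\<lambda>u'. Bag {#RLam u'#}) ` U" using rstep_lamb1_inv[OF S] by blast
  have E1: "rstep e (lin_subst u 0 vs)" using e beta_r by simp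
  have E2: "rstep e ((\<lambda>s'. RApp s' (Bag vs)) ` S)" using e S ctx_appL_r by simp
  let ?Y = "\<Union>u'\<in>U. lin_subst u' 0 vs"
  have "NF ((\<lambda>s'. RApp s' (Bag vs)) ` S) = (\<Union>u'\<in>U. nf (RApp (Bag {#RLam u'#}) (Bag vs)))" using U(2) by (simp add: NF_image image_image)
  also have "\<dots> = (\<Union>u'\<in>U. NF (lin_subst u' 0 vs))"
  proof -
    have "nf (RApp (Bag {#RLam u'#}) (Bag vs)) = NF (lin_subst u' 0 vs)" if "u' \<in> U" for u'
    proof -
      have "smaller (RApp (Bag {#RLam u'#}) (Bag vs)) e" using rstep_smaller(1)[OF E2] U(2) that by auto
      then show ?thesis using good_step[OF HYP beta_r] by simp
    qed
    then show ?thesis by simp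
  qed
  also have "\<dots> = NF ?Y" unfolding NF_def by auto
  finally have 2: "NF ((\<lambda>s'. RApp s' (Bag vs)) ` S) = NF ?Y" .
  have "NF (lin_subst u 0 vs) = NF ?Y"
  proof (rule NF_sim[OF HYP])
    show "\<forall>w\<in>lin_subst u 0 vs. smaller w e" using rstep_smaller(1)[OF E1] by blast
    show "\<forall>w\<in>lin_subst u 0 vs. \<exists>W. rstep w W \<and> W \<subseteq> ?Y"
    proof
      fix w assume "w \<in> lin_subst u 0 vs"
      then have "lsub 0 vs u w" by (simp add: lin_subst_def)
      from L1a(1)[OF U(1) this] obtain W where "rstep w W" "\<forall>w'\<in>W. \<exists>u'\<in>U. lsub 0 vs u' w'" by blast
      then show "\<exists>W. rstep w W \<and> W \<subseteq> ?Y" by (auto simp: lin_subst_def)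
    qed
    show "\<forall>y\<in>?Y. \<exists>w\<in>lin_subst u 0 vs. \<exists>W. rstep w W \<and> y \<in> W"
    proof
      fix y assume "y \<in> ?Y"
      then obtain u' where "u' \<in> U" "lsub 0 vs u' y" by (auto simp: lin_subst_def)
      from L1b(1)[OF U(1) this] show "\<exists>w\<in>lin_subst u 0 vs. \<exists>W. rstep w W \<and> y \<in> W" by (auto simp: lin_subst_def)
    qed
  qed
  then show ?thesis using 2 by simp
qed

lemma pair_BR:
  assumes HYP: "\<And>z. smaller z e \<Longrightarrow> good z"
    and e: "e = RApp (Bag {#RLam u#}) (Bag vs)"
    and T: "rstep (Bag vs) T"
  shows "NF (lin_subst u 0 vs) = NF (RApp (Bag {#RLam u#}) ` T)"
proof -
  from rstep_Bag_inv[OF T] obtain v V' vs0 where h: "vs = add_mset v vs0" "rstep_v v V'" "T = (\<lambda>u'. Bag (add_mset u' vs0)) ` V'" by blast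
  have E1: "rstep e (lin_subst u 0 vs)" using e beta_r by simp
  have E2: "rstep e (RApp (Bag {#RLam u#}) ` T)" using e T ctx_appR_r by simp
  let ?Y = "\<Union>v'\<in>V'. lin_subst u 0 (add_mset v' vs0)"
  have "NF (RApp (Bag {#RLam u#}) ` T) = (\<Union>v'\<in>V'. nf (RApp (Bag {#RLam u#}) (Bag (add_mset v' vs0))))" using h(3) by (simp add: NF_image image_image)
  also have "\<dots> = (\<Union>v'\<in>V'. NF (lin_subst u 0 (add_mset v' vs0)))"
  proof -
    have "nf (RApp (Bag {#RLam u#}) (Bag (add_mset v' vs0))) = NF (lin_subst u 0 (add_mset v' vs0))" if "v' \<in> V'" for v'
    proof -
      have "smaller (RApp (Bag {#RLam u#}) (Bag (add_mset v' vs0))) e" using rstep_smaller(1)[OF E2] h(3) that by auto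
      then show ?thesis using good_step[OF HYP beta_r] by simp
    qed
    then show ?thesis by simp
  qed
  also have "\<dots> = NF ?Y" unfolding NF_def by auto
  finally have 2: "NF (RApp (Bag {#RLam u#}) ` T) = NF ?Y" .
  have "NF (lin_subst u 0 vs) = NF ?Y"
  proof (rule NF_sim[OF HYP])
    show "\<forall>w\<in>lin_subst u 0 vs. smaller w e" using rstep_smaller(1)[OF E1] by blast
    show "\<forall>w\<in>lin_subst u 0 vs. \<exists>W. rstep w W \<and> W \<subseteq> ?Y"
    proof
      fix w assume "w \<in> lin_subst u 0 vs"
      then have "lsub 0 (add_mset v vs0) u w" using h(1) by (simp add: lin_subst_def)
      from L2a(1)[OF this refl h(2)] obtain W where "rstep w W" "\<forall>w'\<in>W. \<exists>v'\<in>V'. lsub 0 (add_mset v' vs0) u w'" by blast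
      then show "\<exists>W. rstep w W \<and> W \<subseteq> ?Y" by (auto simp: lin_subst_def)
    qed
    show "\<forall>y\<in>?Y. \<exists>w\<in>lin_subst u 0 vs. \<exists>W. rstep w W \<and> y \<in> W"
    proof
      fix y assume "y \<in> ?Y"
      then obtain v' where "v' \<in> V'" "lsub 0 (add_mset v' vs0) u y" by (auto simp: lin_subst_def)
      from L2b(1)[OF this(2) refl h(2) this(1)] show "\<exists>w\<in>lin_subst u 0 vs. \<exists>W. rstep w W \<and> y \<in> W"
        using h(1) by (auto simp: lin_subst_def)
    qed
  qed
  then show ?thesis using 2 by simp
qed

lemma pair_ZL:
  assumes HYP: "\<And>z. smaller z e \<Longrightarrow> good z"
    and e: "e = RApp (Bag m) t" and m: "size m \<noteq> 1"
    and S: "rstep (Bag m) S"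
  shows "NF {} = NF ((\<lambda>s'. RApp s' t) ` S)"
proof -
  have E2: "rstep e ((\<lambda>s'. RApp s' t) ` S)" using e S ctx_appL_r by simp
  have "nf (RApp s' t) = {}" if s': "s' \<in> S" for s'
  proof -
    obtain m' where m': "s' = Bag m'" "size m' = size m" using rstep_Bag_size[OF S s'] by blast
    have "smaller (RApp s' t) e" using rstep_smaller(1)[OF E2] s' by auto
    moreover have "rstep (RApp s' t) {}" using m' m zero_r by simp
    ultimately show ?thesis using good_step[OF HYP] by fastforce
  qed
  then show ?thesis by (simp add: NF_image)
qed

lemma pair_ZR:
  assumes HYP: "\<And>z. smaller z e \<Longrightarrow> good z"
    and e: "e = RApp (Bag m) t" and m: "size m \<noteq> 1"
    and T: "rstep t T"
  shows "NF {} = NF (RApp (Bag m) ` T)"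
proof -
  have E2: "rstep e (RApp (Bag m) ` T)" using e T ctx_appR_r by simp
  have "nf (RApp (Bag m) t') = {}" if "t' \<in> T" for t'
  proof -
    have "smaller (RApp (Bag m) t') e" using rstep_smaller(1)[OF E2] that by auto
    moreover have "rstep (RApp (Bag m) t') {}" using m zero_r by simp
    ultimately show ?thesis using good_step[OF HYP] by fastforce
  qed
  then show ?thesis by (simp add: NF_image)
qed

inductive_cases rstep_AppE: "rstep (RApp s t) E"

lemma rstep_App_cases: "rstep (RApp s t) E \<Longrightarrow>
  (\<exists>u vs. s = Bag {#RLam u#} \<and> t = Bag vs \<and> E = lin_subst u 0 vs) \<or>
  (\<exists>m. s = Bag m \<and> size m \<noteq> 1 \<and> E = {}) \<or>
  (\<exists>u s1. s = RApp (Bag {#RLam u#}) s1 \<and> E = {RApp (Bag {#RLam (RApp u (rlift 0 t))#}) s1}) \<or>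
  (\<exists>v u s0. s = Bag {#v#} \<and> t = RApp (Bag {#RLam u#}) s0 \<and> E = {RApp (Bag {#RLam (RApp (Bag {#rlift_v 0 v#}) u)#}) s0}) \<or>
  (\<exists>S. rstep s S \<and> E = (\<lambda>s'. RApp s' t) ` S) \<or>
  (\<exists>T. rstep t T \<and> E = RApp s ` T)"
  apply (erule rstep_AppE)
       apply simp_all
   apply (rule disjI2, rule disjI2, rule disjI2, rule disjI2, rule disjI1, blast)
  apply (rule disjI2, rule disjI2, rule disjI2, rule disjI2, rule disjI2, blast)
  done

lemma lin_subst_app_lift: "lin_subst (RApp u (rlift 0 s2)) 0 vs = (\<lambda>w. RApp w s2) ` lin_subst u 0 vs"
proof
  show "lin_subst (RApp u (rlift 0 s2)) 0 vs \<subseteq> (\<lambda>w. RApp w s2) ` lin_subst u 0 vs"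
  proof
    fix z assume "z \<in> lin_subst (RApp u (rlift 0 s2)) 0 vs"
    then obtain A B w z2 where h: "vs = A + B" "lsub 0 A u w" "lsub 0 B (rlift 0 s2) z2" "z = RApp w z2"
      unfolding lin_subst_def lsub_App_iff by blast
    from lsub_rlift_uniq(1)[OF h(3)] have "B = {#}" "z2 = s2" by auto
    then show "z \<in> (\<lambda>w. RApp w s2) ` lin_subst u 0 vs" using h by (auto simp: lin_subst_def)
  qed
next
  show "(\<lambda>w. RApp w s2) ` lin_subst u 0 vs \<subseteq> lin_subst (RApp u (rlift 0 s2)) 0 vs"
  proof
    fix z assume "z \<in> (\<lambda>w. RApp w s2) ` lin_subst u 0 vs"
    then obtain w where w: "lsub 0 vs u w" "z = RApp w s2" by (auto simp: lin_subst_def)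
    have "lsub 0 (vs + {#}) (RApp u (rlift 0 s2)) (RApp w s2)" using w(1) lsub_rlift_ex(1) by (rule ls_app)
    then show "z \<in> lin_subst (RApp u (rlift 0 s2)) 0 vs" using w(2) by (simp add: lin_subst_def)
  qed
qed

lemma lin_subst_sing_lift: "lin_subst (RApp (Bag {#rlift_v 0 v#}) u) 0 vs = RApp (Bag {#v#}) ` lin_subst u 0 vs"
proof
  show "lin_subst (RApp (Bag {#rlift_v 0 v#}) u) 0 vs \<subseteq> RApp (Bag {#v#}) ` lin_subst u 0 vs"
  proof
    fix z assume "z \<in> lin_subst (RApp (Bag {#rlift_v 0 v#}) u) 0 vs"
    then obtain A B zb w where h: "vs = A + B" "lsub 0 A (Bag {#rlift_v 0 v#}) zb" "lsub 0 B u w" "z = RApp zb w"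
      unfolding lin_subst_def lsub_App_iff by blast
    from lsub_single_in[OF h(2)] obtain y where y: "zb = Bag {#y#}" "lsub_v 0 A (rlift_v 0 v) y" by blast
    from lsub_rlift_uniq(2)[OF y(2)] have "A = {#}" "y = v" by auto
    then show "z \<in> RApp (Bag {#v#}) ` lin_subst u 0 vs" using h y by (auto simp: lin_subst_def)
  qed
next
  show "RApp (Bag {#v#}) ` lin_subst u 0 vs \<subseteq> lin_subst (RApp (Bag {#rlift_v 0 v#}) u) 0 vs"
  proof
    fix z assume "z \<in> RApp (Bag {#v#}) ` lin_subst u 0 vs"
    then obtain w where w: "lsub 0 vs u w" "z = RApp (Bag {#v#}) w" by (auto simp: lin_subst_def)
    have "lsub 0 ({#} + vs) (RApp (Bag {#rlift_v 0 v#}) u) (RApp (Bag {#v#}) w)"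
      using lsub_single[OF lsub_rlift_ex(2)] w(1) by (rule ls_app)
    then show "z \<in> lin_subst (RApp (Bag {#rlift_v 0 v#}) u) 0 vs" using w(2) by (simp add: lin_subst_def)
  qed
qed

lemma rstep_lamctx: "rstep x X \<Longrightarrow> rstep (RApp (Bag {#RLam x#}) r) ((\<lambda>y. RApp (Bag {#RLam y#}) r) ` X)"
proof -
  assume "rstep x X"
  from rstep_lamb[OF this, of "{#}"] have "rstep (Bag {#RLam x#}) ((\<lambda>x. Bag {#RLam x#}) ` X)" by simp
  from ctx_appL_r[OF this, of r] show ?thesis by (simp add: image_image)
qed

lemma rstep_singctx: "rstep_v y Y \<Longrightarrow> rstep (RApp (Bag {#y#}) r) ((\<lambda>y'. RApp (Bag {#y'#}) r) ` Y)"
proof -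
  assume "rstep_v y Y"
  from ctx_bag_r[OF this, of "{#}"] have "rstep (Bag {#y#}) ((\<lambda>y'. Bag {#y'#}) ` Y)" by simp
  from ctx_appL_r[OF this, of r] show ?thesis by (simp add: image_image)
qed

lemma NF_join1:
  assumes HYP: "\<And>z. smaller z e \<Longrightarrow> good z"
    and h: "\<forall>a\<in>A. smaller (f a) e \<and> rstep (f a) {g a}"
  shows "NF (f ` A) = NF (g ` A)"
proof -
  have "nf (f a) = nf (g a)" if "a \<in> A" for a
    using good_step[OF HYP, of "f a" "{g a}"] h that by (simp add: NF_def)
  then show ?thesis by (simp add: NF_image)
qed

lemma NF_single:
  assumes HYP: "\<And>z. smaller z e \<Longrightarrow> good z"
  shows "smaller x e \<Longrightarrow> rstep x Y \<Longrightarrow> NF {x} = NF Y"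
  using good_step[OF HYP] by (simp add: NF_def)

lemma join_via:
  assumes HYP: "\<And>z. smaller z e \<Longrightarrow> good z"
    and "smaller a e" "rstep a (g ` A)" "\<forall>x\<in>A. smaller (f x) e \<and> rstep (f x) {g x}"
  shows "NF {a} = NF (f ` A)"
  using NF_single[OF HYP assms(2,3)] NF_join1[OF HYP assms(4)] by simp

lemma pair_1L:
  assumes HYP: "\<And>z. smaller z e \<Longrightarrow> good z"
    and e: "e = RApp (RApp (Bag {#RLam u#}) s1) s2"
    and S: "rstep (RApp (Bag {#RLam u#}) s1) S"
  shows "NF {RApp (Bag {#RLam (RApp u (rlift 0 s2))#}) s1} = NF ((\<lambda>s'. RApp s' s2) ` S)"
proof -
  let ?a = "RApp (Bag {#RLam (RApp u (rlift 0 s2))#}) s1"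
  have E1: "rstep e {?a}" using e sigma1_r by simp
  have E2: "rstep e ((\<lambda>s'. RApp s' s2) ` S)" using e S ctx_appL_r by simp
  have sa: "smaller ?a e" using rstep_smaller(1)[OF E1] by simp
  have sE2: "\<forall>y\<in>(\<lambda>s'. RApp s' s2) ` S. smaller y e" using rstep_smaller(1)[OF E2] by blast
  show ?thesis
  proof (rule rstep_AppE[OF S])
    fix u' vs assume h: "S = lin_subst u' 0 vs" "Bag {#RLam u#} = Bag {#RLam u'#}" "s1 = Bag vs"
    then have "u' = u" by simp
    have "NF {?a} = NF (lin_subst (RApp u (rlift 0 s2)) 0 vs)"
      using NF_single[OF HYP sa] beta_r h(3) by simp
    then show ?thesis using h \<open>u' = u\<close> lin_subst_app_lift by simp
  next
    fix m assume "Bag {#RLam u#} = Bag m" "S = {}" "size m \<noteq> Suc 0"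
    then have False by (metis rterm.inject(2) size_single One_nat_def)
    then show ?thesis ..
  next
    fix t s1' assume "Bag {#RLam u#} = RApp (Bag {#RLam t#}) s1'"
    then show ?thesis by simp
  next
    fix v w r assume h: "S = {RApp (Bag {#RLam (RApp (Bag {#rlift_v 0 v#}) w)#}) r}" "Bag {#RLam u#} = Bag {#v#}"
      "s1 = RApp (Bag {#RLam w#}) r"
    then have v: "v = RLam u" by simp
    let ?b = "RApp (RApp (Bag {#RLam (RApp (Bag {#RLam (rlift (Suc 0) u)#}) w)#}) r) s2"
    let ?b1 = "RApp (Bag {#RLam (RApp (RApp (Bag {#RLam (rlift (Suc 0) u)#}) w) (rlift 0 s2))#}) r"
    let ?b2 = "RApp (Bag {#RLam (RApp (Bag {#RLam (RApp (rlift (Suc 0) u) (rlift 0 (rlift 0 s2)))#}) w)#}) r"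
    have E2b: "(\<lambda>s'. RApp s' s2) ` S = {?b}" using h v by simp
    have sb: "smaller ?b e" using sE2 E2b by simp
    have bb1: "rstep ?b {?b1}" by (rule sigma1_r)
    have sb1: "smaller ?b1 e" using smaller_trans[OF rstep_smaller(1)[OF bb1] sb] by simp
    have "rstep (RApp (RApp (Bag {#RLam (rlift (Suc 0) u)#}) w) (rlift 0 s2))
             {RApp (Bag {#RLam (RApp (rlift (Suc 0) u) (rlift 0 (rlift 0 s2)))#}) w}" by (rule sigma1_r)
    from rstep_lamctx[OF this, of r] have b1b2: "rstep ?b1 {?b2}" by simp
    have "rstep ?a {RApp (Bag {#RLam (RApp (Bag {#rlift_v 0 (RLam (RApp u (rlift 0 s2)))#}) w)#}) r}"
      using h(3) sigma3_r[of "RLam (RApp u (rlift 0 s2))" w r] by simp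
    then have aa1: "rstep ?a {?b2}" by (simp add: rlift_rlift(1)[of 0 0])
    have "NF {?a} = NF {?b2}" using NF_single[OF HYP sa aa1] .
    also have "\<dots> = NF {?b1}" using NF_single[OF HYP sb1 b1b2] by simp
    also have "\<dots> = NF {?b}" using NF_single[OF HYP sb bb1] by simp
    finally show ?thesis using E2b by simp
  next
    fix S0 assume h: "S = (\<lambda>s'. RApp s' s1) ` S0" "rstep (Bag {#RLam u#}) S0"
    obtain U where U: "rstep u U" "S0 = (\<lambda>u'. Bag {#RLam u'#}) ` U" using rstep_lamb1_inv[OF h(2)] by blast
    let ?f = "\<lambda>u'. RApp (RApp (Bag {#RLam u'#}) s1) s2"
    let ?g = "\<lambda>u'. RApp (Bag {#RLam (RApp u' (rlift 0 s2))#}) s1"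
    have E2f: "(\<lambda>s'. RApp s' s2) ` S = ?f ` U" using h(1) U(2) by (simp add: image_image)
    have "rstep ?a ((\<lambda>y. RApp (Bag {#RLam y#}) s1) ` ((\<lambda>y. RApp y (rlift 0 s2)) ` U))"
      by (rule rstep_lamctx) (rule ctx_appL_r[OF U(1)])
    then have r: "rstep ?a (?g ` U)" by (simp add: image_image)
    have q: "\<forall>x\<in>U. smaller (?f x) e \<and> rstep (?f x) {?g x}" using sE2 E2f sigma1_r by auto
    from join_via[OF HYP sa r q] show ?thesis using E2f by simp
  next
    fix T1 assume h: "S = RApp (Bag {#RLam u#}) ` T1" "rstep s1 T1"
    let ?f = "\<lambda>y. RApp (RApp (Bag {#RLam u#}) y) s2"
    let ?g = "\<lambda>y. RApp (Bag {#RLam (RApp u (rlift 0 s2))#}) y"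
    have E2f: "(\<lambda>s'. RApp s' s2) ` S = ?f ` T1" using h(1) by (simp add: image_image)
    have r: "rstep ?a (?g ` T1)" using ctx_appR_r[OF h(2)] by simp
    have q: "\<forall>x\<in>T1. smaller (?f x) e \<and> rstep (?f x) {?g x}" using sE2 E2f sigma1_r by auto
    from join_via[OF HYP sa r q] show ?thesis using E2f by simp
  qed
qed

lemma pair_1R:
  assumes HYP: "\<And>z. smaller z e \<Longrightarrow> good z"
    and e: "e = RApp (RApp (Bag {#RLam u#}) s1) s2"
    and S2: "rstep s2 S2"
  shows "NF {RApp (Bag {#RLam (RApp u (rlift 0 s2))#}) s1} = NF (RApp (RApp (Bag {#RLam u#}) s1) ` S2)"
proof -
  let ?a = "RApp (Bag {#RLam (RApp u (rlift 0 s2))#}) s1"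
  have E1: "rstep e {?a}" using e sigma1_r by simp
  have E2: "rstep e (RApp (RApp (Bag {#RLam u#}) s1) ` S2)" using e S2 ctx_appR_r by simp
  have sa: "smaller ?a e" using rstep_smaller(1)[OF E1] by simp
  have sE2: "\<forall>y\<in>RApp (RApp (Bag {#RLam u#}) s1) ` S2. smaller y e" using rstep_smaller(1)[OF E2] by blast
  let ?f = "\<lambda>y. RApp (RApp (Bag {#RLam u#}) s1) y"
  let ?g = "\<lambda>y. RApp (Bag {#RLam (RApp u (rlift 0 y))#}) s1"
  have "rstep ?a ((\<lambda>y. RApp (Bag {#RLam y#}) s1) ` (RApp u ` (rlift 0 ` S2)))"
    by (rule rstep_lamctx) (rule ctx_appR_r[OF rstep_lift(1)[OF S2]])
  then have r: "rstep ?a (?g ` S2)" by (simp add: image_image)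
  have q: "\<forall>x\<in>S2. smaller (?f x) e \<and> rstep (?f x) {?g x}" using sE2 sigma1_r by auto
  from join_via[OF HYP sa r q] show ?thesis by simp
qed

lemma pair_3L:
  assumes HYP: "\<And>z. smaller z e \<Longrightarrow> good z"
    and e: "e = RApp (Bag {#v#}) (RApp (Bag {#RLam u#}) s0)"
    and S: "rstep (Bag {#v#}) S"
  shows "NF {RApp (Bag {#RLam (RApp (Bag {#rlift_v 0 v#}) u)#}) s0} = NF ((\<lambda>s'. RApp s' (RApp (Bag {#RLam u#}) s0)) ` S)"
proof -
  let ?a = "RApp (Bag {#RLam (RApp (Bag {#rlift_v 0 v#}) u)#}) s0"
  have E1: "rstep e {?a}" using e sigma3_r by simp
  have E2: "rstep e ((\<lambda>s'. RApp s' (RApp (Bag {#RLam u#}) s0)) ` S)" using e S ctx_appL_r by simp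
  have sa: "smaller ?a e" using rstep_smaller(1)[OF E1] by simp
  have sE2: "\<forall>y\<in>(\<lambda>s'. RApp s' (RApp (Bag {#RLam u#}) s0)) ` S. smaller y e" using rstep_smaller(1)[OF E2] by blast
  obtain V where V: "rstep_v v V" "S = (\<lambda>v'. Bag {#v'#}) ` V" using rstep_sing_inv[OF S] by blast
  let ?f = "\<lambda>y. RApp (Bag {#y#}) (RApp (Bag {#RLam u#}) s0)"
  let ?g = "\<lambda>y. RApp (Bag {#RLam (RApp (Bag {#rlift_v 0 y#}) u)#}) s0"
  have E2f: "(\<lambda>s'. RApp s' (RApp (Bag {#RLam u#}) s0)) ` S = ?f ` V" using V(2) by (simp add: image_image)
  have "rstep ?a ((\<lambda>y. RApp (Bag {#RLam y#}) s0) ` ((\<lambda>y'. RApp (Bag {#y'#}) u) ` (rlift_v 0 ` V)))"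
    by (rule rstep_lamctx) (rule rstep_singctx[OF rstep_lift(2)[OF V(1)]])
  then have r: "rstep ?a (?g ` V)" by (simp add: image_image)
  have q: "\<forall>x\<in>V. smaller (?f x) e \<and> rstep (?f x) {?g x}" using sE2 E2f sigma3_r by auto
  from join_via[OF HYP sa r q] show ?thesis using E2f by simp
qed

lemma pair_3R:
  assumes HYP: "\<And>z. smaller z e \<Longrightarrow> good z"
    and e: "e = RApp (Bag {#v#}) (RApp (Bag {#RLam u#}) s0)"
    and T: "rstep (RApp (Bag {#RLam u#}) s0) T"
  shows "NF {RApp (Bag {#RLam (RApp (Bag {#rlift_v 0 v#}) u)#}) s0} = NF (RApp (Bag {#v#}) ` T)"
proof -
  let ?a = "RApp (Bag {#RLam (RApp (Bag {#rlift_v 0 v#}) u)#}) s0"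
  have E1: "rstep e {?a}" using e sigma3_r by simp
  have E2: "rstep e (RApp (Bag {#v#}) ` T)" using e T ctx_appR_r by simp
  have sa: "smaller ?a e" using rstep_smaller(1)[OF E1] by simp
  have sE2: "\<forall>y\<in>RApp (Bag {#v#}) ` T. smaller y e" using rstep_smaller(1)[OF E2] by blast
  show ?thesis
  proof (rule rstep_AppE[OF T])
    fix u' vs assume h: "T = lin_subst u' 0 vs" "Bag {#RLam u#} = Bag {#RLam u'#}" "s0 = Bag vs"
    then have "u' = u" by simp
    have "NF {?a} = NF (lin_subst (RApp (Bag {#rlift_v 0 v#}) u) 0 vs)"
      using NF_single[OF HYP sa] beta_r h(3) by simp
    then show ?thesis using h \<open>u' = u\<close> lin_subst_sing_lift by simp
  next
    fix m assume "Bag {#RLam u#} = Bag m" "T = {}" "size m \<noteq> Suc 0"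
    then have False by (metis rterm.inject(2) size_single One_nat_def)
    then show ?thesis ..
  next
    fix t s1' assume "Bag {#RLam u#} = RApp (Bag {#RLam t#}) s1'"
    then show ?thesis by simp
  next
    fix v' w r assume h: "T = {RApp (Bag {#RLam (RApp (Bag {#rlift_v 0 v'#}) w)#}) r}" "Bag {#RLam u#} = Bag {#v'#}"
      "s0 = RApp (Bag {#RLam w#}) r"
    then have v': "v' = RLam u" by simp
    let ?b = "RApp (Bag {#v#}) (RApp (Bag {#RLam (RApp (Bag {#RLam (rlift (Suc 0) u)#}) w)#}) r)"
    let ?b1 = "RApp (Bag {#RLam (RApp (Bag {#rlift_v 0 v#}) (RApp (Bag {#RLam (rlift (Suc 0) u)#}) w))#}) r"
    let ?b2 = "RApp (Bag {#RLam (RApp (Bag {#RLam (RApp (Bag {#rlift_v 0 (rlift_v 0 v)#}) (rlift (Suc 0) u))#}) w)#}) r"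
    have E2b: "RApp (Bag {#v#}) ` T = {?b}" using h v' by simp
    have sb: "smaller ?b e" using sE2 E2b by simp
    have bb1: "rstep ?b {?b1}" by (rule sigma3_r)
    have sb1: "smaller ?b1 e" using smaller_trans[OF rstep_smaller(1)[OF bb1] sb] by simp
    have "rstep (RApp (Bag {#rlift_v 0 v#}) (RApp (Bag {#RLam (rlift (Suc 0) u)#}) w))
             {RApp (Bag {#RLam (RApp (Bag {#rlift_v 0 (rlift_v 0 v)#}) (rlift (Suc 0) u))#}) w}" by (rule sigma3_r)
    from rstep_lamctx[OF this, of r] have b1b2: "rstep ?b1 {?b2}" by simp
    have "rstep ?a {RApp (Bag {#RLam (RApp (Bag {#rlift_v 0 (RLam (RApp (Bag {#rlift_v 0 v#}) u))#}) w)#}) r}"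
      using h(3) sigma3_r[of "RLam (RApp (Bag {#rlift_v 0 v#}) u)" w r] by simp
    then have aa1: "rstep ?a {?b2}" by (simp add: rlift_rlift(2)[of 0 0])
    have "NF {?a} = NF {?b2}" using NF_single[OF HYP sa aa1] .
    also have "\<dots> = NF {?b1}" using NF_single[OF HYP sb1 b1b2] by simp
    also have "\<dots> = NF {?b}" using NF_single[OF HYP sb bb1] by simp
    finally show ?thesis using E2b by simp
  next
    fix S0 assume h: "T = (\<lambda>s'. RApp s' s0) ` S0" "rstep (Bag {#RLam u#}) S0"
    obtain U where U: "rstep u U" "S0 = (\<lambda>u'. Bag {#RLam u'#}) ` U" using rstep_lamb1_inv[OF h(2)] by blast
    let ?f = "\<lambda>u'. RApp (Bag {#v#}) (RApp (Bag {#RLam u'#}) s0)"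
    let ?g = "\<lambda>u'. RApp (Bag {#RLam (RApp (Bag {#rlift_v 0 v#}) u')#}) s0"
    have E2f: "RApp (Bag {#v#}) ` T = ?f ` U" using h(1) U(2) by (simp add: image_image)
    have "rstep ?a ((\<lambda>y. RApp (Bag {#RLam y#}) s0) ` (RApp (Bag {#rlift_v 0 v#}) ` U))"
      by (rule rstep_lamctx) (rule ctx_appR_r[OF U(1)])
    then have r: "rstep ?a (?g ` U)" by (simp add: image_image)
    have q: "\<forall>x\<in>U. smaller (?f x) e \<and> rstep (?f x) {?g x}" using sE2 E2f sigma3_r by auto
    from join_via[OF HYP sa r q] show ?thesis using E2f by simp
  next
    fix T1 assume h: "T = RApp (Bag {#RLam u#}) ` T1" "rstep s0 T1"
    let ?f = "\<lambda>y. RApp (Bag {#v#}) (RApp (Bag {#RLam u#}) y)"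
    let ?g = "\<lambda>y. RApp (Bag {#RLam (RApp (Bag {#rlift_v 0 v#}) u)#}) y"
    have E2f: "RApp (Bag {#v#}) ` T = ?f ` T1" using h(1) by (simp add: image_image)
    have r: "rstep ?a (?g ` T1)" using ctx_appR_r[OF h(2)] by simp
    have q: "\<forall>x\<in>T1. smaller (?f x) e \<and> rstep (?f x) {?g x}" using sE2 E2f sigma3_r by auto
    from join_via[OF HYP sa r q] show ?thesis using E2f by simp
  qed
qed

lemma LC_app:
  assumes HYP: "\<And>z. smaller z e \<Longrightarrow> good z"
    and e: "e = RApp s t" and E1: "rstep e E1" and E2: "rstep e E2"
  shows "NF E1 = NF E2"
proof -
  have gs: "good s" using HYP smaller_appL e by simp
  have gt: "good t" using HYP smaller_appR e by simp
  have hgE1: "\<forall>x\<in>E1. hg x" using rstep_smaller(1)[OF E1] hyp_hg[OF HYP] by blast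
  have hgE2: "\<forall>x\<in>E2. hg x" using rstep_smaller(1)[OF E2] hyp_hg[OF HYP] by blast
  have E1': "rstep (RApp s t) E1" using E1 e by simp
  have E2': "rstep (RApp s t) E2" using E2 e by simp
  show ?thesis
  proof (rule rstep_AppE[OF E1'])
    fix u1 vs1 assume a: "E1 = lin_subst u1 0 vs1" "s = Bag {#RLam u1#}" "t = Bag vs1"
    show ?thesis
    proof (rule rstep_AppE[OF E2'])
      fix u2 vs2 assume b: "E2 = lin_subst u2 0 vs2" "s = Bag {#RLam u2#}" "t = Bag vs2"
      show ?thesis using a b by auto
    next
      fix m2 assume b: "s = Bag m2" "E2 = {}" "size m2 \<noteq> Suc 0"
      show ?thesis using a b by (auto simp: One_nat_def)
    next
      fix u2 s12 assume b: "s = RApp (Bag {#RLam u2#}) s12" "E2 = {RApp (Bag {#RLam (RApp u2 (rlift 0 t))#}) s12}"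
      show ?thesis using a b by (auto simp: One_nat_def)
    next
      fix v2 u2 s02 assume b: "E2 = {RApp (Bag {#RLam (RApp (Bag {#rlift_v 0 v2#}) u2)#}) s02}" "s = Bag {#v2#}" "t = RApp (Bag {#RLam u2#}) s02"
      show ?thesis using a b by (auto simp: One_nat_def)
    next
      fix S2 assume b: "E2 = (\<lambda>s'. RApp s' t) ` S2" "rstep s S2"
      show ?thesis using pair_BL[OF HYP _ b(2)[unfolded a(2)]] a b e by simp
    next
      fix T2 assume b: "E2 = RApp s ` T2" "rstep t T2"
      show ?thesis using pair_BR[OF HYP _ b(2)[unfolded a(3)]] a b e by simp
    qed
  next
    fix m1 assume a: "s = Bag m1" "E1 = {}" "size m1 \<noteq> Suc 0"
    show ?thesis
    proof (rule rstep_AppE[OF E2'])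
      fix u2 vs2 assume b: "E2 = lin_subst u2 0 vs2" "s = Bag {#RLam u2#}" "t = Bag vs2"
      show ?thesis using a b by (auto simp: One_nat_def)
    next
      fix m2 assume b: "s = Bag m2" "E2 = {}" "size m2 \<noteq> Suc 0"
      show ?thesis using a b by auto
    next
      fix u2 s12 assume b: "s = RApp (Bag {#RLam u2#}) s12" "E2 = {RApp (Bag {#RLam (RApp u2 (rlift 0 t))#}) s12}"
      show ?thesis using a b by (auto simp: One_nat_def)
    next
      fix v2 u2 s02 assume b: "E2 = {RApp (Bag {#RLam (RApp (Bag {#rlift_v 0 v2#}) u2)#}) s02}" "s = Bag {#v2#}" "t = RApp (Bag {#RLam u2#}) s02"
      show ?thesis using a b by (auto simp: One_nat_def)
    next
      fix S2 assume b: "E2 = (\<lambda>s'. RApp s' t) ` S2" "rstep s S2"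
      show ?thesis using pair_ZL[OF HYP _ a(3)[unfolded One_nat_def[symmetric]] b(2)[unfolded a(1)]] a b e by simp
    next
      fix T2 assume b: "E2 = RApp s ` T2" "rstep t T2"
      show ?thesis using pair_ZR[OF HYP _ a(3)[unfolded One_nat_def[symmetric]] b(2)] a b e by simp
    qed
  next
    fix u1 s11 assume a: "s = RApp (Bag {#RLam u1#}) s11" "E1 = {RApp (Bag {#RLam (RApp u1 (rlift 0 t))#}) s11}"
    show ?thesis
    proof (rule rstep_AppE[OF E2'])
      fix u2 vs2 assume b: "E2 = lin_subst u2 0 vs2" "s = Bag {#RLam u2#}" "t = Bag vs2"
      show ?thesis using a b by (auto simp: One_nat_def)
    next
      fix m2 assume b: "s = Bag m2" "E2 = {}" "size m2 \<noteq> Suc 0"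
      show ?thesis using a b by (auto simp: One_nat_def)
    next
      fix u2 s12 assume b: "s = RApp (Bag {#RLam u2#}) s12" "E2 = {RApp (Bag {#RLam (RApp u2 (rlift 0 t))#}) s12}"
      show ?thesis using a b by auto
    next
      fix v2 u2 s02 assume b: "E2 = {RApp (Bag {#RLam (RApp (Bag {#rlift_v 0 v2#}) u2)#}) s02}" "s = Bag {#v2#}" "t = RApp (Bag {#RLam u2#}) s02"
      show ?thesis using a b by (auto simp: One_nat_def)
    next
      fix S2 assume b: "E2 = (\<lambda>s'. RApp s' t) ` S2" "rstep s S2"
      show ?thesis using pair_1L[OF HYP _ b(2)[unfolded a(1)]] a b e by simp
    next
      fix T2 assume b: "E2 = RApp s ` T2" "rstep t T2"
      show ?thesis using pair_1R[OF HYP _ b(2)] a b e by simp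
    qed
  next
    fix v1 u1 s01 assume a: "E1 = {RApp (Bag {#RLam (RApp (Bag {#rlift_v 0 v1#}) u1)#}) s01}" "s = Bag {#v1#}" "t = RApp (Bag {#RLam u1#}) s01"
    show ?thesis
    proof (rule rstep_AppE[OF E2'])
      fix u2 vs2 assume b: "E2 = lin_subst u2 0 vs2" "s = Bag {#RLam u2#}" "t = Bag vs2"
      show ?thesis using a b by (auto simp: One_nat_def)
    next
      fix m2 assume b: "s = Bag m2" "E2 = {}" "size m2 \<noteq> Suc 0"
      show ?thesis using a b by (auto simp: One_nat_def)
    next
      fix u2 s12 assume b: "s = RApp (Bag {#RLam u2#}) s12" "E2 = {RApp (Bag {#RLam (RApp u2 (rlift 0 t))#}) s12}"
      show ?thesis using a b by (auto simp: One_nat_def)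
    next
      fix v2 u2 s02 assume b: "E2 = {RApp (Bag {#RLam (RApp (Bag {#rlift_v 0 v2#}) u2)#}) s02}" "s = Bag {#v2#}" "t = RApp (Bag {#RLam u2#}) s02"
      show ?thesis using a b by auto
    next
      fix S2 assume b: "E2 = (\<lambda>s'. RApp s' t) ` S2" "rstep s S2"
      show ?thesis using pair_3L[OF HYP _ b(2)[unfolded a(2)]] a b e by simp
    next
      fix T2 assume b: "E2 = RApp s ` T2" "rstep t T2"
      show ?thesis using pair_3R[OF HYP _ b(2)[unfolded a(3)]] a b e by simp
    qed
  next
    fix S1 assume a: "E1 = (\<lambda>s'. RApp s' t) ` S1" "rstep s S1"
    show ?thesis
    proof (rule rstep_AppE[OF E2'])
      fix u2 vs2 assume b: "E2 = lin_subst u2 0 vs2" "s = Bag {#RLam u2#}" "t = Bag vs2"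
      show ?thesis using pair_BL[OF HYP _ a(2)[unfolded b(2)]] a b e by simp
    next
      fix m2 assume b: "s = Bag m2" "E2 = {}" "size m2 \<noteq> Suc 0"
      show ?thesis using pair_ZL[OF HYP _ b(3)[unfolded One_nat_def[symmetric]] a(2)[unfolded b(1)]] a b e by simp
    next
      fix u2 s12 assume b: "s = RApp (Bag {#RLam u2#}) s12" "E2 = {RApp (Bag {#RLam (RApp u2 (rlift 0 t))#}) s12}"
      show ?thesis using pair_1L[OF HYP _ a(2)[unfolded b(1)]] a b e by simp
    next
      fix v2 u2 s02 assume b: "E2 = {RApp (Bag {#RLam (RApp (Bag {#rlift_v 0 v2#}) u2)#}) s02}" "s = Bag {#v2#}" "t = RApp (Bag {#RLam u2#}) s02"
      show ?thesis using pair_3L[OF HYP _ a(2)[unfolded b(2)]] a b e by simp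
    next
      fix S2 assume b: "E2 = (\<lambda>s'. RApp s' t) ` S2" "rstep s S2"
      show ?thesis using NF_L[OF gs a(2), of t] NF_L[OF gs b(2), of t] a(1) b(1) hgE1 hgE2 by auto
    next
      fix T2 assume b: "E2 = RApp s ` T2" "rstep t T2"
      show ?thesis using NF_L[OF gs a(2), of t] NF_R[OF gt b(2), of s] a(1) b(1) hgE1 hgE2 by auto
    qed
  next
    fix T1 assume a: "E1 = RApp s ` T1" "rstep t T1"
    show ?thesis
    proof (rule rstep_AppE[OF E2'])
      fix u2 vs2 assume b: "E2 = lin_subst u2 0 vs2" "s = Bag {#RLam u2#}" "t = Bag vs2"
      show ?thesis using pair_BR[OF HYP _ a(2)[unfolded b(3)]] a b e by simp
    next
      fix m2 assume b: "s = Bag m2" "E2 = {}" "size m2 \<noteq> Suc 0"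
      show ?thesis using pair_ZR[OF HYP _ b(3)[unfolded One_nat_def[symmetric]] a(2)] a b e by simp
    next
      fix u2 s12 assume b: "s = RApp (Bag {#RLam u2#}) s12" "E2 = {RApp (Bag {#RLam (RApp u2 (rlift 0 t))#}) s12}"
      show ?thesis using pair_1R[OF HYP _ a(2)] a b e by simp
    next
      fix v2 u2 s02 assume b: "E2 = {RApp (Bag {#RLam (RApp (Bag {#rlift_v 0 v2#}) u2)#}) s02}" "s = Bag {#v2#}" "t = RApp (Bag {#RLam u2#}) s02"
      show ?thesis using pair_3R[OF HYP _ a(2)[unfolded b(3)]] a b e by simp
    next
      fix S2 assume b: "E2 = (\<lambda>s'. RApp s' t) ` S2" "rstep s S2"
      show ?thesis using NF_R[OF gt a(2), of s] NF_L[OF gs b(2), of t] a(1) b(1) hgE1 hgE2 by auto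
    next
      fix T2 assume b: "E2 = RApp s ` T2" "rstep t T2"
      show ?thesis using NF_R[OF gt a(2), of s] NF_R[OF gt b(2), of s] a(1) b(1) hgE1 hgE2 by auto
    qed
  qed
qed

lemma LC_bag:
  assumes HYP: "\<And>z. smaller z e \<Longrightarrow> good z"
    and e: "e = Bag m" and E1: "rstep e E1" and E2: "rstep e E2"
  shows "NF E1 = NF E2"
proof -
  have hgE1: "\<forall>x\<in>E1. hg x" using rstep_smaller(1)[OF E1] hyp_hg[OF HYP] by blast
  have hgE2: "\<forall>x\<in>E2. hg x" using rstep_smaller(1)[OF E2] hyp_hg[OF HYP] by blast
  have gw: "\<And>w. RLam w \<in># m \<Longrightarrow> good w" using HYP smaller_lamb e by simp
  have "NF E1 = Psi m" using NF_bag_step[OF E1[unfolded e] hgE1 gw] .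
  moreover have "NF E2 = Psi m" using NF_bag_step[OF E2[unfolded e] hgE2 gw] .
  ultimately show ?thesis by simp
qed

lemma LC:
  assumes HYP: "\<And>z. smaller z e \<Longrightarrow> good z"
    and E1: "rstep e E1" and E2: "rstep e E2"
  shows "NF E1 = NF E2"
proof (cases e)
  case (RApp s t)
  then show ?thesis using LC_app[OF HYP _ E1 E2] by simp
next
  case (Bag m)
  then show ?thesis using LC_bag[OF HYP _ E1 E2] by simp
qed

theorem all_good: "good e"
proof (induction e rule: wf_induct_rule[OF wf_smaller])
  case (1 e)
  have HYP: "\<And>z. smaller z e \<Longrightarrow> good z" using 1 by simp
  show ?case by (rule good_from_LC[OF HYP LC[OF HYP]])
qed

lemma all_hg: "hg e"
  unfolding hg_def using all_good by blast

lemma nf_step: "rstep e E \<Longrightarrow> nf e = NF E"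
  using good_step[OF all_good] by simp

lemma nf_rnf: "rnf e \<Longrightarrow> nf e = {e}"
  using good_rnf[OF all_good] .

lemma mset_preimage: "(\<forall>u\<in>#m. \<exists>u0. P u0 \<and> u = f u0) \<Longrightarrow> \<exists>m0. m = image_mset f m0 \<and> (\<forall>u0\<in>#m0. P u0)"
proof (induction m)
  case empty then show ?case by (intro exI[of _ "{#}"]) simp
next
  case (add u m)
  then obtain m0 where m0: "m = image_mset f m0" "\<forall>u0\<in>#m0. P u0" by auto
  from add.prems obtain u0 where "P u0" "u = f u0" by auto
  then show ?case using m0 by (intro exI[of _ "add_mset u0 m0"]) auto
qed

lemma taylor_lift: "taylor (lift k M) = rlift k ` taylor M"
proof (induction M arbitrary: k)
  case (Var i)
  show ?case
  proof (intro set_eqI iffI)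
    fix x assume "x \<in> taylor (lift k (Var i))"
    then obtain n where "x = Bag (replicate_mset n (RVar (if i < k then i else Suc i)))" by (auto split: if_splits)
    then show "x \<in> rlift k ` taylor (Var i)" by (intro image_eqI[of _ _ "Bag (replicate_mset n (RVar i))"]) auto
  next
    fix x assume "x \<in> rlift k ` taylor (Var i)"
    then show "x \<in> taylor (lift k (Var i))" by auto
  qed
next
  case (Lam N)
  show ?case
  proof
    show "taylor (lift k (Lam N)) \<subseteq> rlift k ` taylor (Lam N)"
    proof
      fix x assume "x \<in> taylor (lift k (Lam N))"
      then obtain m where m: "x = Bag m" "\<forall>u\<in>#m. \<exists>t\<in>taylor (lift (Suc k) N). u = RLam t" by auto
      have "\<forall>u\<in>#m. \<exists>u0. (\<exists>t\<in>taylor N. u0 = RLam t) \<and> u = rlift_v k u0"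
      proof
        fix u assume "u \<in># m"
        then obtain t where "t \<in> taylor N" "u = RLam (rlift (Suc k) t)" using m(2) Lam by auto
        then show "\<exists>u0. (\<exists>t\<in>taylor N. u0 = RLam t) \<and> u = rlift_v k u0" by (intro exI[of _ "RLam t"]) auto
      qed
      from mset_preimage[OF this] obtain m0 where "m = image_mset (rlift_v k) m0" "\<forall>u0\<in>#m0. \<exists>t\<in>taylor N. u0 = RLam t" by blast
      then show "x \<in> rlift k ` taylor (Lam N)" using m(1) by (auto intro!: image_eqI[of _ _ "Bag m0"])
    qed
  next
    show "rlift k ` taylor (Lam N) \<subseteq> taylor (lift k (Lam N))"
    proof
      fix x assume "x \<in> rlift k ` taylor (Lam N)"
      then obtain m where m: "x = Bag (image_mset (rlift_v k) m)" "\<forall>u\<in>#m. \<exists>t\<in>taylor N. u = RLam t" by auto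
      have "\<forall>u\<in>#image_mset (rlift_v k) m. \<exists>t\<in>taylor (lift (Suc k) N). u = RLam t"
      proof
        fix u assume "u \<in># image_mset (rlift_v k) m"
        then obtain u0 where "u0 \<in># m" "u = rlift_v k u0" by auto
        then obtain t where "t \<in> taylor N" "u = RLam (rlift (Suc k) t)" using m(2) by auto
        then show "\<exists>t\<in>taylor (lift (Suc k) N). u = RLam t" using Lam by auto
      qed
      then show "x \<in> taylor (lift k (Lam N))" using m(1) by simp
    qed
  qed
next
  case (App P Q)
  show ?case
  proof
    show "taylor (lift k (App P Q)) \<subseteq> rlift k ` taylor (App P Q)"
    proof
      fix x assume "x \<in> taylor (lift k (App P Q))"
      then obtain s t where st: "x = RApp s t" "s \<in> taylor (lift k P)" "t \<in> taylor (lift k Q)" by auto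
      then obtain s0 t0 where "s0 \<in> taylor P" "s = rlift k s0" "t0 \<in> taylor Q" "t = rlift k t0" using App by auto
      then show "x \<in> rlift k ` taylor (App P Q)" using st(1) by (intro image_eqI[of _ _ "RApp s0 t0"]) auto
    qed
  next
    show "rlift k ` taylor (App P Q) \<subseteq> taylor (lift k (App P Q))" using App by auto
  qed
qed

lemma taylor_val_bag: "is_val V \<Longrightarrow> x \<in> taylor V \<Longrightarrow> \<exists>vs. x = Bag vs"
  by (cases V) auto

lemma taylor_val_empty: "is_val V \<Longrightarrow> Bag {#} \<in> taylor V"
  by (cases V) (auto intro: exI[of _ 0])

lemma taylor_val_plus: "is_val V \<Longrightarrow> Bag a \<in> taylor V \<Longrightarrow> Bag b \<in> taylor V \<Longrightarrow> Bag (a + b) \<in> taylor V"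
proof (cases V)
  case (Var x)
  assume "Bag a \<in> taylor V" "Bag b \<in> taylor V"
  then obtain n1 n2 where "a = replicate_mset n1 (RVar x)" "b = replicate_mset n2 (RVar x)" using Var by auto
  moreover have "replicate_mset n1 y + replicate_mset n2 y = replicate_mset (n1 + n2) y" for y :: rval
    by (induction n1) auto
  ultimately have "a + b = replicate_mset (n1 + n2) (RVar x)" by simp
  then show ?thesis using Var by auto
qed auto

lemma taylor_val_sub: "is_val V \<Longrightarrow> Bag (a + b) \<in> taylor V \<Longrightarrow> Bag a \<in> taylor V"
proof (cases V)
  case (Var x)
  assume "Bag (a + b) \<in> taylor V"
  then obtain n where n: "a + b = replicate_mset n (RVar x)" using Var by auto
  have "a \<subseteq># replicate_mset n (RVar x)" using n by (metis mset_subset_eq_add_left)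
  then obtain k where "a = replicate_mset k (RVar x)" by (rule msubseteq_replicate_msetE)
  then show ?thesis using Var by auto
qed auto

lemma is_val_lift: "is_val V \<Longrightarrow> is_val (lift k V)"
  by (cases V) auto

lemma lsub_repl_dest: "lsub k vs (Bag (replicate_mset n (RVar i))) t' \<Longrightarrow>
  (if i = k then t' = Bag vs \<and> size vs = n else vs = {#} \<and> t' = Bag (replicate_mset n (RVar (if i < k then i else i - 1))))"
proof (induction n arbitrary: vs t')
  case 0
  then show ?case using lsub_empty_in by auto
next
  case (Suc n)
  from Suc.prems have "lsub k vs (Bag (add_mset (RVar i) (replicate_mset n (RVar i)))) t'" by simp
  from lsub_pick[OF this] obtain A1 A2 u' m' where h: "vs = A1 + A2" "lsub_v k A1 (RVar i) u'"
    "lsub k A2 (Bag (replicate_mset n (RVar i))) (Bag m')" "t' = Bag (add_mset u' m')" by blast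
  from Suc.IH[OF h(3)] h(2) show ?case using h(1,4) unfolding lsub_Var_iff by (auto split: if_splits)
qed

lemma lsub_repl_hit: "size vs = n \<Longrightarrow> lsub k vs (Bag (replicate_mset n (RVar k))) (Bag vs)"
proof (induction n arbitrary: vs)
  case 0
  then show ?case using ls_nil by simp
next
  case (Suc n)
  then obtain v vs0 where vs: "vs = add_mset v vs0" by (metis size_eq_Suc_imp_eq_union)
  then have "size vs0 = n" using Suc.prems by simp
  from ls_bag[OF ls_hit Suc.IH[OF this]] show ?case using vs by simp
qed

lemma lsub_repl_miss: "i \<noteq> k \<Longrightarrow> lsub k {#} (Bag (replicate_mset n (RVar i))) (Bag (replicate_mset n (RVar (if i < k then i else i - 1))))"
proof (induction n)
  case 0
  then show ?case using ls_nil by simp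
next
  case (Suc n)
  from ls_bag[OF ls_var[OF Suc.prems] Suc.IH[OF Suc.prems]] show ?case by simp
qed

lemma bagsub1: "lsub k vs (Bag m0) t' \<Longrightarrow> \<forall>u\<in>#m0. \<exists>t0\<in>A. u = RLam t0 \<Longrightarrow> Bag vs \<in> taylor V \<Longrightarrow> is_val V \<Longrightarrow>
  \<exists>m'. t' = Bag m' \<and> (\<forall>u'\<in>#m'. \<exists>t0\<in>A. \<exists>ws. Bag ws \<in> taylor V \<and> (\<exists>t1. lsub (Suc k) (image_mset (rlift_v 0) ws) t0 t1 \<and> u' = RLam t1))"
proof (induction m0 arbitrary: vs t')
  case empty
  then have "t' = Bag {#}" using lsub_empty_in by blast
  then show ?case by simp
next
  case (add u m0)
  from lsub_pick[OF add.prems(1)] obtain A1 A2 u' m' where h: "vs = A1 + A2" "lsub_v k A1 u u'"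
    "lsub k A2 (Bag m0) (Bag m')" "t' = Bag (add_mset u' m')" by blast
  obtain t0 where t0: "t0 \<in> A" "u = RLam t0" using add.prems(2) by auto
  obtain t1 where t1: "u' = RLam t1" "lsub (Suc k) (image_mset (rlift_v 0) A1) t0 t1" using h(2)[unfolded t0(2)] unfolding lsub_Lam_iff by blast
  have A1V: "Bag A1 \<in> taylor V" using taylor_val_sub[OF add.prems(4)] add.prems(3) h(1) by blast
  have A2V: "Bag A2 \<in> taylor V" using taylor_val_sub[OF add.prems(4), of A2 A1] add.prems(3) h(1) by (simp add: add.commute)
  obtain m'' where "Bag m' = Bag m''" "\<forall>u'\<in>#m''. \<exists>t0\<in>A. \<exists>ws. Bag ws \<in> taylor V \<and> (\<exists>t1. lsub (Suc k) (image_mset (rlift_v 0) ws) t0 t1 \<and> u' = RLam t1)"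
    using add.IH[OF h(3) _ A2V add.prems(4)] add.prems(2) by auto
  then show ?case using h(4) t0 t1 A1V by auto
qed

lemma bagsub2: "\<forall>u'\<in>#m'. \<exists>t0\<in>A. \<exists>ws. Bag ws \<in> taylor V \<and> (\<exists>t1. lsub (Suc k) (image_mset (rlift_v 0) ws) t0 t1 \<and> u' = RLam t1) \<Longrightarrow>
  is_val V \<Longrightarrow> \<exists>m0 vs. (\<forall>u\<in>#m0. \<exists>t0\<in>A. u = RLam t0) \<and> Bag vs \<in> taylor V \<and> lsub k vs (Bag m0) (Bag m')"
proof (induction m')
  case empty
  then show ?case using ls_nil taylor_val_empty by (intro exI[of _ "{#}"] exI[of _ "{#}"]) auto
next
  case (add u' m')
  then obtain m0 vs where IH: "\<forall>u\<in>#m0. \<exists>t0\<in>A. u = RLam t0" "Bag vs \<in> taylor V" "lsub k vs (Bag m0) (Bag m')" by auto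
  from add.prems(1) obtain t0 ws t1 where h: "t0 \<in> A" "Bag ws \<in> taylor V" "lsub (Suc k) (image_mset (rlift_v 0) ws) t0 t1" "u' = RLam t1"
    by auto
  have "lsub k (ws + vs) (Bag (add_mset (RLam t0) m0)) (Bag (add_mset u' m'))" using ls_bag[OF ls_lam[OF h(3)] IH(3)] h(4) by simp
  moreover have "Bag (ws + vs) \<in> taylor V" using taylor_val_plus[OF add.prems(2) h(2) IH(2)] .
  ultimately show ?case using IH(1) h(1) by (intro exI[of _ "add_mset (RLam t0) m0"] exI[of _ "ws + vs"]) auto
qed

lemma taylor_lift_bag: "is_val V \<Longrightarrow> Bag ws' \<in> taylor (lift 0 V) \<longleftrightarrow> (\<exists>ws. Bag ws \<in> taylor V \<and> ws' = image_mset (rlift_v 0) ws)"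
proof
  assume a: "is_val V" "Bag ws' \<in> taylor (lift 0 V)"
  then obtain x where x: "x \<in> taylor V" "Bag ws' = rlift 0 x" using taylor_lift by auto
  then obtain ws where "x = Bag ws" using taylor_val_bag a(1) by blast
  then show "\<exists>ws. Bag ws \<in> taylor V \<and> ws' = image_mset (rlift_v 0) ws" using x by auto
next
  assume "\<exists>ws. Bag ws \<in> taylor V \<and> ws' = image_mset (rlift_v 0) ws"
  then show "Bag ws' \<in> taylor (lift 0 V)" using taylor_lift by force
qed

lemma taylor_subst: "is_val V \<Longrightarrow> taylor (subst M k V) = {t'. \<exists>t\<in>taylor M. \<exists>vs. Bag vs \<in> taylor V \<and> lsub k vs t t'}"
proof (induction M arbitrary: k V)
  case (Var i)
  show ?case
  proof (cases "i = k")
    case True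
    show ?thesis
    proof (intro set_eqI iffI)
      fix x assume "x \<in> taylor (subst (Var i) k V)"
      then have x: "x \<in> taylor V" using True by simp
      then obtain vs where "x = Bag vs" using taylor_val_bag Var by blast
      then show "x \<in> {t'. \<exists>t\<in>taylor (Var i). \<exists>vs. Bag vs \<in> taylor V \<and> lsub k vs t t'}"
        using x lsub_repl_hit[of vs "size vs" k] True by auto
    next
      fix x assume "x \<in> {t'. \<exists>t\<in>taylor (Var i). \<exists>vs. Bag vs \<in> taylor V \<and> lsub k vs t t'}"
      then obtain n vs where "Bag vs \<in> taylor V" "lsub k vs (Bag (replicate_mset n (RVar i))) x" by auto
      then show "x \<in> taylor (subst (Var i) k V)" using lsub_repl_dest True by fastforce
    qed
  next
    case False
    show ?thesis
    proof (intro set_eqI iffI)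
      fix x assume "x \<in> taylor (subst (Var i) k V)"
      then obtain n where "x = Bag (replicate_mset n (RVar (if i < k then i else i - 1)))" using False by (auto split: if_splits)
      moreover have "lsub k {#} (Bag (replicate_mset n (RVar i))) (Bag (replicate_mset n (RVar (if i < k then i else i - 1))))"
        using lsub_repl_miss[OF False, of n] .
      moreover have "Bag (replicate_mset n (RVar i)) \<in> taylor (Var i)" by auto
      ultimately show "x \<in> {t'. \<exists>t\<in>taylor (Var i). \<exists>vs. Bag vs \<in> taylor V \<and> lsub k vs t t'}"
        using taylor_val_empty[OF Var] by blast
    next
      fix x assume "x \<in> {t'. \<exists>t\<in>taylor (Var i). \<exists>vs. Bag vs \<in> taylor V \<and> lsub k vs t t'}"
      then obtain n vs where "lsub k vs (Bag (replicate_mset n (RVar i))) x" by auto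
      then have "x = Bag (replicate_mset n (RVar (if i < k then i else i - 1)))" using lsub_repl_dest False by fastforce
      then show "x \<in> taylor (subst (Var i) k V)" using False by auto
    qed
  qed
next
  case (Lam N)
  have IH: "taylor (subst N (Suc k) (lift 0 V)) = {t1. \<exists>t0\<in>taylor N. \<exists>ws. Bag ws \<in> taylor V \<and> lsub (Suc k) (image_mset (rlift_v 0) ws) t0 t1}"
    using Lam.IH[OF is_val_lift[OF Lam.prems]] taylor_lift_bag[OF Lam.prems] by auto
  show ?case
  proof (intro set_eqI iffI)
    fix x assume "x \<in> taylor (subst (Lam N) k V)"
    then obtain m' where m': "x = Bag m'" "\<forall>u\<in>#m'. \<exists>t\<in>taylor (subst N (Suc k) (lift 0 V)). u = RLam t" by auto
    have "\<forall>u'\<in>#m'. \<exists>t0\<in>taylor N. \<exists>ws. Bag ws \<in> taylor V \<and> (\<exists>t1. lsub (Suc k) (image_mset (rlift_v 0) ws) t0 t1 \<and> u' = RLam t1)"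
      using m'(2) unfolding IH by fastforce
    from bagsub2[OF this Lam.prems] obtain m0 vs where "\<forall>u\<in>#m0. \<exists>t0\<in>taylor N. u = RLam t0" "Bag vs \<in> taylor V" "lsub k vs (Bag m0) (Bag m')"
      by blast
    then show "x \<in> {t'. \<exists>t\<in>taylor (Lam N). \<exists>vs. Bag vs \<in> taylor V \<and> lsub k vs t t'}" using m'(1) by auto
  next
    fix x assume "x \<in> {t'. \<exists>t\<in>taylor (Lam N). \<exists>vs. Bag vs \<in> taylor V \<and> lsub k vs t t'}"
    then obtain m0 vs where h: "\<forall>u\<in>#m0. \<exists>t0\<in>taylor N. u = RLam t0" "Bag vs \<in> taylor V" "lsub k vs (Bag m0) x" by auto
    from bagsub1[OF h(3) h(1) h(2) Lam.prems] obtain m' where m': "x = Bag m'"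
      "\<forall>u'\<in>#m'. \<exists>t0\<in>taylor N. \<exists>ws. Bag ws \<in> taylor V \<and> (\<exists>t1. lsub (Suc k) (image_mset (rlift_v 0) ws) t0 t1 \<and> u' = RLam t1)"
      by blast
    have "\<forall>u\<in>#m'. \<exists>t\<in>taylor (subst N (Suc k) (lift 0 V)). u = RLam t" using m'(2) unfolding IH by fastforce
    then show "x \<in> taylor (subst (Lam N) k V)" using m'(1) by simp
  qed
next
  case (App P Q)
  show ?case
  proof (intro set_eqI iffI)
    fix x assume "x \<in> taylor (subst (App P Q) k V)"
    then obtain s t where st: "x = RApp s t" "s \<in> taylor (subst P k V)" "t \<in> taylor (subst Q k V)" by auto
    obtain s0 A where s0: "s0 \<in> taylor P" "Bag A \<in> taylor V" "lsub k A s0 s" using st(2) App.IH(1)[OF App.prems] by auto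
    obtain t0 B where t0: "t0 \<in> taylor Q" "Bag B \<in> taylor V" "lsub k B t0 t" using st(3) App.IH(2)[OF App.prems] by auto
    have "lsub k (A + B) (RApp s0 t0) x" using ls_app[OF s0(3) t0(3)] st(1) by simp
    moreover have "Bag (A + B) \<in> taylor V" using taylor_val_plus[OF App.prems s0(2) t0(2)] .
    ultimately show "x \<in> {t'. \<exists>t\<in>taylor (App P Q). \<exists>vs. Bag vs \<in> taylor V \<and> lsub k vs t t'}" using s0(1) t0(1) by auto
  next
    fix x assume "x \<in> {t'. \<exists>t\<in>taylor (App P Q). \<exists>vs. Bag vs \<in> taylor V \<and> lsub k vs t t'}"
    then obtain s0 t0 vs where h: "s0 \<in> taylor P" "t0 \<in> taylor Q" "Bag vs \<in> taylor V" "lsub k vs (RApp s0 t0) x" by auto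
    then obtain A B s t where h2: "vs = A + B" "lsub k A s0 s" "lsub k B t0 t" "x = RApp s t" unfolding lsub_App_iff by blast
    have "Bag A \<in> taylor V" using taylor_val_sub[OF App.prems] h(3) h2(1) by blast
    moreover have "Bag B \<in> taylor V" using taylor_val_sub[OF App.prems, of B A] h(3) h2(1) by (simp add: add.commute)
    ultimately show "x \<in> taylor (subst (App P Q) k V)" using h h2 App.IH[OF App.prems] by auto
  qed
qed

lemma NF_app_global: "NF (taylor (App M N)) = (\<Union>s'\<in>NF (taylor M). \<Union>t'\<in>NF (taylor N). nf (RApp s' t'))"
proof -
  have "NF (taylor (App M N)) = (\<Union>s\<in>taylor M. \<Union>t\<in>taylor N. nf (RApp s t))" unfolding NF_def by auto
  also have "\<dots> = (\<Union>s\<in>taylor M. \<Union>t\<in>taylor N. Phi s t)" using nf_app[OF all_hg] by simp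
  also have "\<dots> = (\<Union>s'\<in>NF (taylor M). \<Union>t'\<in>NF (taylor N). nf (RApp s' t'))" unfolding Phi_def NF_def by blast
  finally show ?thesis .
qed

lemma rel_mset_right: "rel_mset R m m' \<Longrightarrow> u' \<in># m' \<Longrightarrow> \<exists>u\<in>#m. R u u'"
  by (induction rule: rel_mset_induct) auto

lemma NF_lam_global: "NF (taylor (Lam M)) = {Bag m | m. \<forall>u\<in>#m. \<exists>t\<in>NF (taylor M). u = RLam t}"
proof (intro set_eqI iffI)
  fix x assume "x \<in> NF (taylor (Lam M))"
  then obtain m where m: "\<forall>u\<in>#m. \<exists>t\<in>taylor M. u = RLam t" "x \<in> nf (Bag m)" unfolding NF_def by auto
  then obtain m' where m': "x = Bag m'" "rel_mset (\<lambda>u u'. u' \<in> nfv u) m m'" using NFBAG[OF all_hg] unfolding Psi_def by auto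
  have "\<forall>u'\<in>#m'. \<exists>t\<in>NF (taylor M). u' = RLam t"
  proof
    fix u' assume "u' \<in># m'"
    from rel_mset_right[OF m'(2) this] obtain u where "u \<in># m" "u' \<in> nfv u" by blast
    then obtain t where "t \<in> taylor M" "u = RLam t" "u' \<in> RLam ` nf t" using m(1) by auto
    then show "\<exists>t\<in>NF (taylor M). u' = RLam t" unfolding NF_def by auto
  qed
  then show "x \<in> {Bag m | m. \<forall>u\<in>#m. \<exists>t\<in>NF (taylor M). u = RLam t}" using m'(1) by auto
next
  fix x assume "x \<in> {Bag m | m. \<forall>u\<in>#m. \<exists>t\<in>NF (taylor M). u = RLam t}"
  then obtain m' where m': "x = Bag m'" "\<forall>u\<in>#m'. \<exists>t\<in>NF (taylor M). u = RLam t" by auto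
  have "\<exists>m. (\<forall>u\<in>#m. \<exists>t\<in>taylor M. u = RLam t) \<and> rel_mset (\<lambda>u u'. u' \<in> nfv u) m m'"
    using m'(2)
  proof (induction m')
    case empty
    then show ?case by (intro exI[of _ "{#}"]) (simp add: rel_mset_Zero)
  next
    case (add u' m')
    then obtain m where m: "\<forall>u\<in>#m. \<exists>t\<in>taylor M. u = RLam t" "rel_mset (\<lambda>u u'. u' \<in> nfv u) m m'" by auto
    from add.prems obtain t' where t': "t' \<in> NF (taylor M)" "u' = RLam t'" by auto
    then obtain t where t: "t \<in> taylor M" "t' \<in> nf t" unfolding NF_def by auto
    have "rel_mset (\<lambda>u u'. u' \<in> nfv u) (add_mset (RLam t) m) (add_mset u' m')"
      using rel_mset_Plus[where a="RLam t" and b=u', OF _ m(2)] t t' by simp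
    then show ?case using m(1) t(1) by (intro exI[of _ "add_mset (RLam t) m"]) auto
  qed
  then obtain m where m: "\<forall>u\<in>#m. \<exists>t\<in>taylor M. u = RLam t" "rel_mset (\<lambda>u u'. u' \<in> nfv u) m m'" by blast
  have "x \<in> nf (Bag m)" using NFBAG[OF all_hg] m(2) m'(1) unfolding Psi_def by auto
  moreover have "Bag m \<in> taylor (Lam M)" using m(1) by simp
  ultimately show "x \<in> NF (taylor (Lam M))" unfolding NF_def by blast
qed

lemma nf_zero: "size m \<noteq> 1 \<Longrightarrow> nf (RApp (Bag m) t) = {}"
  using nf_step[OF zero_r] by simp

lemma nf_zeroL: "size m \<noteq> 1 \<Longrightarrow> nf (RApp (RApp (Bag m) s) t) = {}"
proof -
  assume "size m \<noteq> 1"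
  then have "rstep (RApp (Bag m) s) {}" by (rule zero_r)
  from ctx_appL_r[OF this, of t] show ?thesis using nf_step by simp
qed

lemma nf_zeroR: "size m \<noteq> 1 \<Longrightarrow> nf (RApp u (RApp (Bag m) s)) = {}"
proof -
  assume "size m \<noteq> 1"
  then have "rstep (RApp (Bag m) s) {}" by (rule zero_r)
  from ctx_appR_r[OF this, of u] show ?thesis using nf_step by simp
qed

lemma nf_zeroLam: "size m \<noteq> 1 \<Longrightarrow> nf (RApp (Bag {#RLam (RApp (Bag m) t)#}) s) = {}"
proof -
  assume "size m \<noteq> 1"
  then have "rstep (RApp (Bag m) t) {}" by (rule zero_r)
  from rstep_lamctx[OF this, of s] show ?thesis using nf_step by simp
qed

lemma size1: "size m = 1 \<Longrightarrow> \<exists>a. m = {#a#}"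
  by (rule size_1_singleton_mset)

lemma lam_single: "\<forall>u\<in>#m. \<exists>t\<in>A. u = RLam t \<Longrightarrow> size m = 1 \<Longrightarrow> \<exists>t\<in>A. m = {#RLam t#}"
  using size_1_singleton_mset by force

lemma step_beta: "is_val V \<Longrightarrow> NF (taylor (App (Lam M) V)) = NF (taylor (subst M 0 V))"
proof (intro set_eqI iffI)
  fix z assume V: "is_val V" and "z \<in> NF (taylor (App (Lam M) V))"
  then obtain m y where h: "\<forall>u\<in>#m. \<exists>t\<in>taylor M. u = RLam t" "y \<in> taylor V" "z \<in> nf (RApp (Bag m) y)"
    unfolding NF_def by auto
  have "size m = 1" using h(3) nf_zero by (cases "size m = 1") auto
  then obtain t where t: "t \<in> taylor M" "m = {#RLam t#}" using lam_single h(1) by blast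
  obtain vs where vs: "y = Bag vs" using taylor_val_bag[OF V h(2)] by blast
  have "nf (RApp (Bag m) y) = NF (lin_subst t 0 vs)" using nf_step[OF beta_r] t(2) vs by simp
  then obtain t' where "lsub 0 vs t t'" "z \<in> nf t'" using h(3) unfolding NF_def lin_subst_def by auto
  moreover have "t' \<in> taylor (subst M 0 V)" using taylor_subst[OF V] t(1) h(2) vs \<open>lsub 0 vs t t'\<close> by auto
  ultimately show "z \<in> NF (taylor (subst M 0 V))" unfolding NF_def by auto
next
  fix z assume V: "is_val V" and "z \<in> NF (taylor (subst M 0 V))"
  then obtain t' where t': "t' \<in> taylor (subst M 0 V)" "z \<in> nf t'" unfolding NF_def by auto
  then obtain t vs where h: "t \<in> taylor M" "Bag vs \<in> taylor V" "lsub 0 vs t t'" using taylor_subst[OF V] by auto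
  have "nf (RApp (Bag {#RLam t#}) (Bag vs)) = NF (lin_subst t 0 vs)" using nf_step[OF beta_r] by simp
  then have "z \<in> nf (RApp (Bag {#RLam t#}) (Bag vs))" using h(3) t'(2) unfolding NF_def lin_subst_def by auto
  moreover have "RApp (Bag {#RLam t#}) (Bag vs) \<in> taylor (App (Lam M) V)" using h(1,2) by auto
  ultimately show "z \<in> NF (taylor (App (Lam M) V))" unfolding NF_def by blast
qed

lemma step_sigma1: "NF (taylor (App (App (Lam M) N) P)) = NF (taylor (App (Lam (App M (lift 0 P))) N))"
proof -
  let ?G = "{z. \<exists>t\<in>taylor M. \<exists>s\<in>taylor N. \<exists>p\<in>taylor P. z \<in> nf (RApp (Bag {#RLam (RApp t (rlift 0 p))#}) s)}"
  have L: "NF (taylor (App (App (Lam M) N) P)) = ?G"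
  proof (intro set_eqI iffI)
    fix z assume "z \<in> NF (taylor (App (App (Lam M) N) P))"
    then obtain m s p where h: "\<forall>u\<in>#m. \<exists>t\<in>taylor M. u = RLam t" "s \<in> taylor N" "p \<in> taylor P"
      "z \<in> nf (RApp (RApp (Bag m) s) p)" unfolding NF_def by auto
    have "size m = 1" using h(4) nf_zeroL by (cases "size m = 1") auto
    then obtain t where t: "t \<in> taylor M" "m = {#RLam t#}" using lam_single h(1) by blast
    have "nf (RApp (RApp (Bag m) s) p) = nf (RApp (Bag {#RLam (RApp t (rlift 0 p))#}) s)"
      using nf_step[OF sigma1_r] t(2) by (simp add: NF_def)
    then show "z \<in> ?G" using h t by auto
  next
    fix z assume "z \<in> ?G"
    then obtain t s p where h: "t \<in> taylor M" "s \<in> taylor N" "p \<in> taylor P" "z \<in> nf (RApp (Bag {#RLam (RApp t (rlift 0 p))#}) s)"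
      by auto
    have "nf (RApp (RApp (Bag {#RLam t#}) s) p) = nf (RApp (Bag {#RLam (RApp t (rlift 0 p))#}) s)"
      using nf_step[OF sigma1_r] by (simp add: NF_def)
    moreover have "RApp (RApp (Bag {#RLam t#}) s) p \<in> taylor (App (App (Lam M) N) P)" using h(1-3) by auto
    ultimately show "z \<in> NF (taylor (App (App (Lam M) N) P))" using h(4) unfolding NF_def by (metis UN_I)
  qed
  have R: "NF (taylor (App (Lam (App M (lift 0 P))) N)) = ?G"
  proof (intro set_eqI iffI)
    fix z assume "z \<in> NF (taylor (App (Lam (App M (lift 0 P))) N))"
    then obtain m s where h: "\<forall>u\<in>#m. \<exists>t\<in>taylor (App M (lift 0 P)). u = RLam t" "s \<in> taylor N"
      "z \<in> nf (RApp (Bag m) s)" unfolding NF_def by auto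
    have "size m = 1" using h(3) nf_zero by (cases "size m = 1") auto
    then obtain t'' where t'': "t'' \<in> taylor (App M (lift 0 P))" "m = {#RLam t''#}" using lam_single h(1) by blast
    then obtain t p where "t \<in> taylor M" "p \<in> taylor P" "t'' = RApp t (rlift 0 p)" using taylor_lift by auto
    then show "z \<in> ?G" using h t'' by auto
  next
    fix z assume "z \<in> ?G"
    then obtain t s p where h: "t \<in> taylor M" "s \<in> taylor N" "p \<in> taylor P" "z \<in> nf (RApp (Bag {#RLam (RApp t (rlift 0 p))#}) s)"
      by auto
    have "RApp t (rlift 0 p) \<in> taylor (App M (lift 0 P))" using h(1,3) taylor_lift by auto
    then have "RApp (Bag {#RLam (RApp t (rlift 0 p))#}) s \<in> taylor (App (Lam (App M (lift 0 P))) N)" using h(2) by auto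
    then show "z \<in> NF (taylor (App (Lam (App M (lift 0 P))) N))" using h(4) unfolding NF_def by (metis UN_I)
  qed
  show ?thesis using L R by simp
qed

lemma step_sigma3: "is_val V \<Longrightarrow> NF (taylor (App V (App (Lam M) N))) = NF (taylor (App (Lam (App (lift 0 V) M)) N))"
proof -
  assume V: "is_val V"
  let ?G = "{z. \<exists>v t s. Bag {#v#} \<in> taylor V \<and> t \<in> taylor M \<and> s \<in> taylor N \<and> z \<in> nf (RApp (Bag {#RLam (RApp (Bag {#rlift_v 0 v#}) t)#}) s)}"
  have L: "NF (taylor (App V (App (Lam M) N))) = ?G"
  proof (intro set_eqI iffI)
    fix z assume "z \<in> NF (taylor (App V (App (Lam M) N)))"
    then obtain y m s where h: "y \<in> taylor V" "\<forall>u\<in>#m. \<exists>t\<in>taylor M. u = RLam t" "s \<in> taylor N"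
      "z \<in> nf (RApp y (RApp (Bag m) s))" unfolding NF_def by auto
    obtain vs where vs: "y = Bag vs" using taylor_val_bag[OF V h(1)] by blast
    have "size vs = 1" using h(4) vs nf_zero by (cases "size vs = 1") auto
    then obtain v where v: "vs = {#v#}" using size_1_singleton_mset by blast
    have "size m = 1" using h(4) nf_zeroR by (cases "size m = 1") auto
    then obtain t where t: "t \<in> taylor M" "m = {#RLam t#}" using lam_single h(2) by blast
    have "nf (RApp y (RApp (Bag m) s)) = nf (RApp (Bag {#RLam (RApp (Bag {#rlift_v 0 v#}) t)#}) s)"
      using nf_step[OF sigma3_r] t(2) vs v by (simp add: NF_def)
    then show "z \<in> ?G" using h t vs v by auto
  next
    fix z assume "z \<in> ?G"
    then obtain v t s where h: "Bag {#v#} \<in> taylor V" "t \<in> taylor M" "s \<in> taylor N"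
      "z \<in> nf (RApp (Bag {#RLam (RApp (Bag {#rlift_v 0 v#}) t)#}) s)" by auto
    have "nf (RApp (Bag {#v#}) (RApp (Bag {#RLam t#}) s)) = nf (RApp (Bag {#RLam (RApp (Bag {#rlift_v 0 v#}) t)#}) s)"
      using nf_step[OF sigma3_r] by (simp add: NF_def)
    moreover have "RApp (Bag {#v#}) (RApp (Bag {#RLam t#}) s) \<in> taylor (App V (App (Lam M) N))" using h(1-3) by auto
    ultimately show "z \<in> NF (taylor (App V (App (Lam M) N)))" using h(4) unfolding NF_def by (metis UN_I)
  qed
  have R: "NF (taylor (App (Lam (App (lift 0 V) M)) N)) = ?G"
  proof (intro set_eqI iffI)
    fix z assume "z \<in> NF (taylor (App (Lam (App (lift 0 V) M)) N))"
    then obtain m s where h: "\<forall>u\<in>#m. \<exists>t\<in>taylor (App (lift 0 V) M). u = RLam t" "s \<in> taylor N"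
      "z \<in> nf (RApp (Bag m) s)" unfolding NF_def by auto
    have "size m = 1" using h(3) nf_zero by (cases "size m = 1") auto
    then obtain t'' where t'': "t'' \<in> taylor (App (lift 0 V) M)" "m = {#RLam t''#}" using lam_single h(1) by blast
    then obtain b t where bt: "b \<in> taylor (lift 0 V)" "t \<in> taylor M" "t'' = RApp b t" by auto
    obtain ws where ws: "Bag ws \<in> taylor V" "b = Bag (image_mset (rlift_v 0) ws)"
      using taylor_lift_bag[OF V] bt(1) taylor_val_bag[OF is_val_lift[OF V] bt(1)] by auto
    have "size ws = 1"
    proof (rule ccontr)
      assume "size ws \<noteq> 1"
      then have "nf (RApp (Bag m) s) = {}" using nf_zeroLam[of "image_mset (rlift_v 0) ws" t s] t'' bt(3) ws(2) by simp
      then show False using h(3) by simp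
    qed
    then obtain v where v: "ws = {#v#}" using size_1_singleton_mset by blast
    show "z \<in> ?G" using h(2,3) t'' bt ws v by auto
  next
    fix z assume "z \<in> ?G"
    then obtain v t s where h: "Bag {#v#} \<in> taylor V" "t \<in> taylor M" "s \<in> taylor N"
      "z \<in> nf (RApp (Bag {#RLam (RApp (Bag {#rlift_v 0 v#}) t)#}) s)" by auto
    have "Bag {#rlift_v 0 v#} \<in> taylor (lift 0 V)" using taylor_lift_bag[OF V, of "{#rlift_v 0 v#}"] h(1) by auto
    then have "RApp (Bag {#RLam (RApp (Bag {#rlift_v 0 v#}) t)#}) s \<in> taylor (App (Lam (App (lift 0 V) M)) N)"
      using h(2,3) by auto
    then show "z \<in> NF (taylor (App (Lam (App (lift 0 V) M)) N))" using h(4) unfolding NF_def by (metis UN_I)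
  qed
  show ?thesis using L R by simp
qed

lemma step_NF: "step_v M N \<Longrightarrow> NF (taylor M) = NF (taylor N)"
proof (induction rule: step_v.induct)
  case (beta_v V M)
  then show ?case by (rule step_beta)
next
  case (sigma1 M N P)
  then show ?case by (rule step_sigma1)
next
  case (sigma3 V M N)
  then show ?case by (rule step_sigma3)
next
  case (ctx_lam M M')
  then show ?case using NF_lam_global by simp
next
  case (ctx_appL M M' N)
  then show ?case using NF_app_global by simp
next
  case (ctx_appR N N' M)
  then show ?case using NF_app_global by simp
qed

theorem corollary4p5:
  fixes M N :: lterm
  assumes "eq_v M N"
  shows "NF (taylor M) = NF (taylor N)"
  using assms
proof (induction rule: equivclp_induct)
  case base
  then show ?case by simp
next
  case (step y z)
  then show ?case using step_NF by auto
qed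


end
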